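(* Let $G$ be a group, $\mathcal{A}$ a unital $C^\ast$-algebra, $\tau$ an action of $G$ on $\mathcal{A}$ by unital $C^\ast$-automorphisms, and for $1\le i\le n$ let $\mathcal{H}_i$ be Hilbert spaces and $\phi_i\in\mathrm{UCP}^{G_\tau}(\mathcal{A},\mathcal{B}(\mathcal{H}_i))$ be pure. If $\phi_1,\dots,\phi_n$ are disjoint, then $\phi_1\oplus\cdots\oplus\phi_n$ (the map $a\mapsto\phi_1(a)\oplus\cdots\oplus\phi_n(a)$) is a $C^\ast$-extreme point of $\mathrm{UCP}^{G_\tau}(\mathcal{A},\mathcal{B}(\mathcal{H}))$, where $\mathcal{H}=\mathcal{H}_1\oplus\cdots\oplus\mathcal{H}_n$.
   Context: $\mathrm{UCP}^{G_\tau}(\mathcal{A},\mathcal{B}(\mathcal{H}))$ is the set of unital completely positive maps $\phi:\mathcal{A}\to\mathcal{B}(\mathcal{H})$ with $\phi(\tau_g(a))=\phi(a)$ for all $g\in G,a\in\mathcal{A}$. A completely positive map $\phi$ is pure if every completely positive $\theta$ with $\phi-\theta$ completely positive is a scalar multiple of $\phi$; then the representation $\pi$ in its minimal Stinespring representation $(\pi,V,\mathcal{K})$ (i.e. $\phi=V^\ast\pi(\cdot)V$, $\pi$ a unital $*$-representation on $\mathcal{K}$, $\{\pi(a)Vh\}$ total in $\mathcal{K}$) is irreducible. Pure maps $\phi_1,\dots,\phi_n$ with minimal Stinespring representations $(\pi_i,V_i,\mathcal{K}_i)$ are disjoint if $\pi_1,\dots,\pi_n$ are mutually unitarily nonequivalent.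 A $C^\ast$-convex combination is $\sum_iT_i^\ast\phi_i(\cdot)T_i$ with $\sum_iT_i^\ast T_i=\mathrm{Id}_\mathcal{H}$, proper if all $T_i$ are invertible. $\phi$ is a $C^\ast$-extreme point of $\mathrm{UCP}^{G_\tau}(\mathcal{A},\mathcal{B}(\mathcal{H}))$ if whenever $\phi$ is a proper $C^\ast$-convex combination of elements $\phi_i$ of this set, there exist unitaries $U_i$ on $\mathcal{H}$ with $\phi_i=U_i^\ast\phi(\cdot)U_i$ for all $i$. *)

theory Defs
  imports "HOL-Analysis.Analysis" "HOL-Algebra.Group"
begin

section \<open>Complex normed spaces, complex Hilbert spaces, unital C*-algebras\<close>

class complex_vector = real_vector +
  fixes scaleC :: "complex \<Rightarrow> 'a \<Rightarrow> 'a" (infixr "*\<^sub>C" 75)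
  assumes scaleC_add_right: "c *\<^sub>C (x + y) = c *\<^sub>C x + c *\<^sub>C y"
    and scaleC_add_left: "(c + d) *\<^sub>C x = c *\<^sub>C x + d *\<^sub>C x"
    and scaleC_scaleC: "c *\<^sub>C (d *\<^sub>C x) = (c * d) *\<^sub>C x"
    and scaleC_one: "1 *\<^sub>C x = x"
    and scaleR_scaleC: "scaleR r x = complex_of_real r *\<^sub>C x"

class complex_normed_vector = complex_vector + real_normed_vector +
  assumes norm_scaleC: "norm (c *\<^sub>C x) = cmod c * norm x"

text \<open>Complex Hilbert space: inner product linear in the second argument,
  conjugate linear in the first; the norm is induced by it; complete.\<close>
class chilbert = complex_normed_vector + complete_space +
  fixes cinner :: "'a \<Rightarrow> 'a \<Rightarrow> complex"
  assumes cinner_add_right: "cinner x (y + z) = cinner x y + cinner x z"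
    and cinner_scaleC_right: "cinner x (c *\<^sub>C y) = c * cinner x y"
    and cinner_commute: "cinner y x = cnj (cinner x y)"
    and cinner_nonneg: "0 \<le> Re (cinner x x)"
    and norm_cinner: "norm x = sqrt (Re (cinner x x))"

text \<open>Unital C*-algebra: complex Banach algebra with unit, involution and C*-identity.\<close>
class cstar_algebra = complex_normed_vector + real_normed_algebra_1 + complete_space +
  fixes invol :: "'a \<Rightarrow> 'a"
  assumes invol_invol: "invol (invol x) = x"
    and invol_add: "invol (x + y) = invol x + invol y"
    and invol_scaleC: "invol (c *\<^sub>C x) = cnj c *\<^sub>C invol x"
    and invol_mult: "invol (x * y) = invol y * invol x"
    and cstar_identity: "norm (invol x * x) = norm x ^ 2"
    and scaleC_mult_left: "(c *\<^sub>C x) * y = c *\<^sub>C (x * y)"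
    and scaleC_mult_right: "x * (c *\<^sub>C y) = c *\<^sub>C (x * y)"

section \<open>Subspaces, projections, operators\<close>

definition csubspace :: "'h::chilbert set \<Rightarrow> bool" where
  "csubspace S \<longleftrightarrow> 0 \<in> S \<and> (\<forall>x\<in>S. \<forall>y\<in>S. x + y \<in> S) \<and>
     (\<forall>c. \<forall>x\<in>S. c *\<^sub>C x \<in> S) \<and> closed S"

text \<open>Orthogonal projection onto a closed subspace.\<close>
definition proj :: "'h::chilbert set \<Rightarrow> 'h \<Rightarrow> 'h" where
  "proj S x = (THE y. y \<in> S \<and> (\<forall>z\<in>S. cinner z (x - y) = 0))"

definition bclinear :: "('a::complex_normed_vector \<Rightarrow> 'b::complex_normed_vector) \<Rightarrow> bool" where
  "bclinear T \<longleftrightarrow> (\<forall>x y. T (x + y) = T x + T y) \<and> (\<forall>c x. T (c *\<^sub>C x) = c *\<^sub>C T x) \<and>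
     (\<exists>K. \<forall>x. norm (T x) \<le> norm x * K)"

text \<open>A bounded operator from the subspace S to the subspace K, represented by a map on the
  ambient spaces which vanishes on the orthogonal complement of S and has range in K.\<close>
definition is_op :: "'h::chilbert set \<Rightarrow> 'k::chilbert set \<Rightarrow> ('h \<Rightarrow> 'k) \<Rightarrow> bool" where
  "is_op S K T \<longleftrightarrow> bclinear T \<and> T = proj K \<circ> T \<circ> proj S"

definition adj :: "('h::chilbert \<Rightarrow> 'k::chilbert) \<Rightarrow> 'k \<Rightarrow> 'h" where
  "adj T y = (THE x. \<forall>z. cinner x z = cinner y (T z))"

definition unitary_op :: "'h::chilbert set \<Rightarrow> ('h \<Rightarrow> 'h) \<Rightarrow> bool" where
  "unitary_op S U \<longleftrightarrow> is_op S S U \<and> adj U \<circ> U = proj S \<and> U \<circ> adj U = proj S"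

definition invertible_op :: "'h::chilbert set \<Rightarrow> ('h \<Rightarrow> 'h) \<Rightarrow> bool" where
  "invertible_op S T \<longleftrightarrow> is_op S S T \<and> (\<exists>R. is_op S S R \<and> R \<circ> T = proj S \<and> T \<circ> R = proj S)"

section \<open>Completely positive maps\<close>

text \<open>Positivity in M_n(A): of the form X* X.\<close>
definition positive_mat :: "nat \<Rightarrow> (nat \<Rightarrow> nat \<Rightarrow> 'a::cstar_algebra) \<Rightarrow> bool" where
  "positive_mat n M \<longleftrightarrow> (\<exists>X. \<forall>i<n. \<forall>j<n. M i j = (\<Sum>k<n. invol (X k i) * X k j))"

text \<open>Positivity of an n x n block operator matrix acting on H^n.\<close>
definition positive_block :: "nat \<Rightarrow> (nat \<Rightarrow> nat \<Rightarrow> 'h::chilbert \<Rightarrow> 'h) \<Rightarrow> bool" where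
  "positive_block n T \<longleftrightarrow> (\<forall>\<xi>. Im (\<Sum>i<n. \<Sum>j<n. cinner (\<xi> i) (T i j (\<xi> j))) = 0 \<and>
                                0 \<le> Re (\<Sum>i<n. \<Sum>j<n. cinner (\<xi> i) (T i j (\<xi> j))))"

definition cp_map :: "'h::chilbert set \<Rightarrow> ('a::cstar_algebra \<Rightarrow> 'h \<Rightarrow> 'h) \<Rightarrow> bool" where
  "cp_map S \<phi> \<longleftrightarrow> (\<forall>a. is_op S S (\<phi> a)) \<and>
     (\<forall>a b. \<phi> (a + b) = (\<lambda>x. \<phi> a x + \<phi> b x)) \<and> (\<forall>c a. \<phi> (c *\<^sub>C a) = (\<lambda>x. c *\<^sub>C \<phi> a x)) \<and>
     (\<forall>n M. positive_mat n M \<longrightarrow> positive_block n (\<lambda>i j. \<phi> (M i j)))"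

definition ucp_map :: "'h::chilbert set \<Rightarrow> ('a::cstar_algebra \<Rightarrow> 'h \<Rightarrow> 'h) \<Rightarrow> bool" where
  "ucp_map S \<phi> \<longleftrightarrow> cp_map S \<phi> \<and> \<phi> 1 = proj S"

definition pure_cp :: "'h::chilbert set \<Rightarrow> ('a::cstar_algebra \<Rightarrow> 'h \<Rightarrow> 'h) \<Rightarrow> bool" where
  "pure_cp S \<phi> \<longleftrightarrow> cp_map S \<phi> \<and>
     (\<forall>\<theta>. cp_map S \<theta> \<and> cp_map S (\<lambda>a x. \<phi> a x - \<theta> a x) \<longrightarrow>
        (\<exists>c::complex. \<forall>a. \<theta> a = (\<lambda>x. c *\<^sub>C \<phi> a x)))"

section \<open>Group actions by unital C*-automorphisms and invariant UCP maps\<close>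

definition cstar_aut :: "('a::cstar_algebra \<Rightarrow> 'a) \<Rightarrow> bool" where
  "cstar_aut f \<longleftrightarrow> bij f \<and> (\<forall>x y. f (x + y) = f x + f y) \<and> (\<forall>c x. f (c *\<^sub>C x) = c *\<^sub>C f x) \<and>
     (\<forall>x y. f (x * y) = f x * f y) \<and> (\<forall>x. f (invol x) = invol (f x)) \<and> f 1 = 1"

definition cstar_action :: "('g, 'b) monoid_scheme \<Rightarrow> ('g \<Rightarrow> 'a::cstar_algebra \<Rightarrow> 'a) \<Rightarrow> bool" where
  "cstar_action G \<tau> \<longleftrightarrow> (\<forall>g\<in>carrier G. cstar_aut (\<tau> g)) \<and>
     (\<forall>g\<in>carrier G. \<forall>h\<in>carrier G. \<tau> (g \<otimes>\<^bsub>G\<^esub> h) = \<tau> g \<circ> \<tau> h) \<and> \<tau> \<one>\<^bsub>G\<^esub> = id"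

text \<open>Membership in UCP^{G_tau}(A, B(S)).\<close>
definition ucp_inv :: "('g, 'b) monoid_scheme \<Rightarrow> ('g \<Rightarrow> 'a::cstar_algebra \<Rightarrow> 'a) \<Rightarrow>
    'h::chilbert set \<Rightarrow> ('a \<Rightarrow> 'h \<Rightarrow> 'h) \<Rightarrow> bool" where
  "ucp_inv G \<tau> S \<phi> \<longleftrightarrow> ucp_map S \<phi> \<and> (\<forall>g\<in>carrier G. \<forall>a. \<phi> (\<tau> g a) = \<phi> a)"

section \<open>Stinespring representations\<close>

definition star_rep :: "'k::chilbert set \<Rightarrow> ('a::cstar_algebra \<Rightarrow> 'k \<Rightarrow> 'k) \<Rightarrow> bool" where
  "star_rep K \<pi> \<longleftrightarrow> (\<forall>a. is_op K K (\<pi> a)) \<and>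
     (\<forall>a b. \<pi> (a + b) = (\<lambda>x. \<pi> a x + \<pi> b x)) \<and> (\<forall>c a. \<pi> (c *\<^sub>C a) = (\<lambda>x. c *\<^sub>C \<pi> a x)) \<and>
     (\<forall>a b. \<pi> (a * b) = \<pi> a \<circ> \<pi> b) \<and> (\<forall>a. \<pi> (invol a) = adj (\<pi> a)) \<and> \<pi> 1 = proj K"

text \<open>(pi, V, K) is a minimal Stinespring representation of phi : A -> B(S).
  The set of vectors pi(a)Vh is invariant under complex scalars, so its real span has
  the same closure as its complex span.\<close>
definition min_stinespring :: "'h::chilbert set \<Rightarrow> ('a::cstar_algebra \<Rightarrow> 'h \<Rightarrow> 'h) \<Rightarrow>
    'k::chilbert set \<Rightarrow> ('a \<Rightarrow> 'k \<Rightarrow> 'k) \<Rightarrow> ('h \<Rightarrow> 'k) \<Rightarrow> bool" where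
  "min_stinespring S \<phi> K \<pi> V \<longleftrightarrow> csubspace K \<and> star_rep K \<pi> \<and> is_op S K V \<and>
     (\<forall>a. \<phi> a = adj V \<circ> \<pi> a \<circ> V) \<and>
     closure (span (\<Union>a. (\<lambda>h. \<pi> a (V h)) ` S)) = K"

definition unitarily_equiv :: "'k::chilbert set \<Rightarrow> ('a::cstar_algebra \<Rightarrow> 'k \<Rightarrow> 'k) \<Rightarrow>
    'k set \<Rightarrow> ('a \<Rightarrow> 'k \<Rightarrow> 'k) \<Rightarrow> bool" where
  "unitarily_equiv K1 \<pi>1 K2 \<pi>2 \<longleftrightarrow> (\<exists>W. is_op K1 K2 W \<and> adj W \<circ> W = proj K1 \<and>
     W \<circ> adj W = proj K2 \<and> (\<forall>a. W \<circ> \<pi>1 a = \<pi>2 a \<circ> W))"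

section \<open>C*-extreme points\<close>

definition cstar_extreme :: "('g, 'b) monoid_scheme \<Rightarrow> ('g \<Rightarrow> 'a::cstar_algebra \<Rightarrow> 'a) \<Rightarrow>
    'h::chilbert set \<Rightarrow> ('a \<Rightarrow> 'h \<Rightarrow> 'h) \<Rightarrow> bool" where
  "cstar_extreme G \<tau> S \<phi> \<longleftrightarrow> ucp_inv G \<tau> S \<phi> \<and>
     (\<forall>(m::nat) (T::nat \<Rightarrow> 'h \<Rightarrow> 'h) (\<psi>::nat \<Rightarrow> 'a \<Rightarrow> 'h \<Rightarrow> 'h). (\<forall>j<m. ucp_inv G \<tau> S (\<psi> j) \<and> invertible_op S (T j)) \<and>
        (\<lambda>x. \<Sum>j<m. adj (T j) (T j x)) = proj S \<and>
        (\<forall>a. \<phi> a = (\<lambda>x. \<Sum>j<m. adj (T j) (\<psi> j a (T j x))))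
      \<longrightarrow> (\<exists>U::nat \<Rightarrow> 'h \<Rightarrow> 'h. \<forall>j<m. unitary_op S (U j) \<and> (\<forall>a. \<psi> j a = adj (U j) \<circ> \<phi> a \<circ> U j)))"

end

theory Submission
  imports Defs
begin

(* ---- part 1 ---- *)


subsection \<open>complex vector basics\<close>

lemma scaleC_zero_left[simp]: "(0::complex) *\<^sub>C (x::'v::complex_vector) = 0"
proof -
  have "(0::complex) *\<^sub>C x = (0 + 0) *\<^sub>C x" by simp
  also have "\<dots> = 0 *\<^sub>C x + 0 *\<^sub>C x" by (rule scaleC_add_left)
  finally show ?thesis by simp
qed

lemma scaleC_zero_right[simp]: "c *\<^sub>C (0::'v::complex_vector) = 0"
proof -
  have "c *\<^sub>C (0::'v) = c *\<^sub>C (0 + 0)" by simp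
  also have "\<dots> = c *\<^sub>C 0 + c *\<^sub>C 0" by (rule scaleC_add_right)
  finally show ?thesis by simp
qed

lemma scaleC_minus_right: "c *\<^sub>C (- (x::'v::complex_vector)) = - (c *\<^sub>C x)"
  by (metis add_eq_0_iff2 neg_eq_iff_add_eq_0 scaleC_add_right scaleC_zero_right)

lemma scaleC_minus_left: "(- c) *\<^sub>C (x::'v::complex_vector) = - (c *\<^sub>C x)"
  by (metis add.right_inverse eq_neg_iff_add_eq_0 scaleC_add_left scaleC_zero_left)

lemma scaleC_diff_right: "c *\<^sub>C ((x::'v::complex_vector) - y) = c *\<^sub>C x - c *\<^sub>C y"
  by (simp only: diff_conv_add_uminus scaleC_add_right scaleC_minus_right)

lemma scaleC_diff_left: "(c - d) *\<^sub>C (x::'v::complex_vector) = c *\<^sub>C x - d *\<^sub>C x"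
  by (simp only: diff_conv_add_uminus scaleC_add_left scaleC_minus_left)

lemma scaleC_sum_right: "c *\<^sub>C (\<Sum>i\<in>A. f i) = (\<Sum>i\<in>A. c *\<^sub>C (f i::'v::complex_vector))"
  by (induction A rule: infinite_finite_induct) (auto simp: scaleC_add_right)

lemma scaleC_sum_left: "(\<Sum>i\<in>A. f i) *\<^sub>C (x::'v::complex_vector) = (\<Sum>i\<in>A. f i *\<^sub>C x)"
  by (induction A rule: infinite_finite_induct) (auto simp: scaleC_add_left)

lemma scaleC_one'[simp]: "1 *\<^sub>C (x::'v::complex_vector) = x" by (rule scaleC_one)

lemma scaleC_scaleC'[simp]: "c *\<^sub>C (d *\<^sub>C (x::'v::complex_vector)) = (c * d) *\<^sub>C x" by (rule scaleC_scaleC)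

lemma scaleC_eq_0_iff: "(c *\<^sub>C (x::'v::complex_vector) = 0) = (c = 0 \<or> x = 0)"
proof
  assume h: "c *\<^sub>C x = 0"
  show "c = 0 \<or> x = 0"
  proof (cases "c = 0")
    case False
    have "x = (inverse c * c) *\<^sub>C x" using False by simp
    also have "\<dots> = inverse c *\<^sub>C (c *\<^sub>C x)" by simp
    also have "\<dots> = 0" using h by simp
    finally show ?thesis by simp
  qed simp
qed auto

lemma norm_scaleC': "norm (c *\<^sub>C (x::'v::complex_normed_vector)) = cmod c * norm x"
  by (rule norm_scaleC)

subsection \<open>inner product basics\<close>

lemma cinner_cnj: "cnj (cinner x (y::'h::chilbert)) = cinner y x"
  using cinner_commute[of y x] by simp

lemma cinner_add_left: "cinner (x + y) (z::'h::chilbert) = cinner x z + cinner y z"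
proof -
  have "cinner (x+y) z = cnj (cinner z (x+y))" by (rule cinner_commute)
  also have "\<dots> = cnj (cinner z x) + cnj (cinner z y)" by (simp add: cinner_add_right)
  also have "\<dots> = cinner x z + cinner y z" by (simp add: cinner_cnj)
  finally show ?thesis .
qed

lemma cinner_scaleC_left: "cinner (c *\<^sub>C x) (y::'h::chilbert) = cnj c * cinner x y"
proof -
  have "cinner (c *\<^sub>C x) y = cnj (cinner y (c *\<^sub>C x))" by (rule cinner_commute)
  also have "\<dots> = cnj c * cnj (cinner y x)" by (simp add: cinner_scaleC_right)
  also have "\<dots> = cnj c * cinner x y" by (simp add: cinner_cnj)
  finally show ?thesis .
qed

lemma cinner_zero_left[simp]: "cinner 0 (y::'h::chilbert) = 0"
proof -
  have "cinner (0 + 0) y = cinner 0 y + cinner 0 y" by (rule cinner_add_left)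
  then show ?thesis by simp
qed

lemma cinner_zero_right[simp]: "cinner y (0::'h::chilbert) = 0"
proof -
  have "cinner y (0 + 0) = cinner y 0 + cinner y 0" by (rule cinner_add_right)
  then show ?thesis by simp
qed

lemma cinner_minus_left: "cinner (- x) (y::'h::chilbert) = - cinner x y"
  by (metis add.right_inverse add_eq_0_iff2 cinner_add_left cinner_zero_left)

lemma cinner_minus_right: "cinner y (- x::'h::chilbert) = - cinner y x"
  by (metis add.right_inverse add_eq_0_iff2 cinner_add_right cinner_zero_right)

lemma cinner_diff_left: "cinner (x - y) (z::'h::chilbert) = cinner x z - cinner y z"
  by (simp only: diff_conv_add_uminus cinner_add_left cinner_minus_left)

lemma cinner_diff_right: "cinner z (x - y::'h::chilbert) = cinner z x - cinner z y"
  by (simp only: diff_conv_add_uminus cinner_add_right cinner_minus_right)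

lemma cinner_sum_left: "cinner (\<Sum>i\<in>A. f i) (y::'h::chilbert) = (\<Sum>i\<in>A. cinner (f i) y)"
  by (induction A rule: infinite_finite_induct) (auto simp: cinner_add_left)

lemma cinner_sum_right: "cinner y (\<Sum>i\<in>A. f i::'h::chilbert) = (\<Sum>i\<in>A. cinner y (f i))"
  by (induction A rule: infinite_finite_induct) (auto simp: cinner_add_right)

lemmas cinner_simps = cinner_add_left cinner_add_right cinner_scaleC_left cinner_scaleC_right
  cinner_diff_left cinner_diff_right cinner_minus_left cinner_minus_right cinner_sum_left cinner_sum_right

lemma cinner_self_real: "cinner x (x::'h::chilbert) = complex_of_real (Re (cinner x x))"
proof -
  have "Im (cinner x x) = Im (cnj (cinner x x))" using cinner_commute[of x x] by simp
  then have "Im (cinner x x) = 0" by simp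
  then show ?thesis by (simp add: complex_eqI)
qed

lemma cinner_self_norm: "cinner x (x::'h::chilbert) = complex_of_real ((norm x)\<^sup>2)"
proof -
  have "(norm x)\<^sup>2 = Re (cinner x x)" using norm_cinner[of x] cinner_nonneg[of x] by simp
  then show ?thesis by (subst cinner_self_real) simp
qed

lemma Re_cinner_self: "Re (cinner x (x::'h::chilbert)) = (norm x)\<^sup>2"
  by (simp add: cinner_self_norm)

lemma Im_cinner_self[simp]: "Im (cinner x (x::'h::chilbert)) = 0"
  by (simp add: cinner_self_norm)

lemma cinner_self_eq_0[simp]: "(cinner x x = 0) = (x = (0::'h::chilbert))"
  by (simp add: cinner_self_norm)


lemma proj_line:
  assumes "z \<noteq> 0"
  shows "(norm (w - (cinner z w / cinner z z) *\<^sub>C z))\<^sup>2 = (norm w)\<^sup>2 - (cmod (cinner z w))\<^sup>2 / (norm (z::'h::chilbert))\<^sup>2"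
proof -
  define t where "t = cinner z w / cinner z z"
  have zz: "cinner z z = complex_of_real ((norm z)\<^sup>2)" by (rule cinner_self_norm)
  have nz: "norm z > 0" using assms by simp
  have "cinner (w - t *\<^sub>C z) (w - t *\<^sub>C z) = cinner w w - t * cinner w z - cnj t * cinner z w + cnj t * t * cinner z z"
    by (simp only: cinner_diff_left cinner_diff_right cinner_scaleC_left cinner_scaleC_right) (simp add: algebra_simps)
  also have "cnj t * t * cinner z z = cnj t * cinner z w"
    using assms by (simp add: t_def)
  also have "t * cinner w z = complex_of_real ((cmod (cinner z w))\<^sup>2 / (norm z)\<^sup>2)"
  proof -
    have "cinner z w * cinner w z = cinner z w * cnj (cinner z w)"
      by (simp add: cinner_commute[of w z])
    also have "\<dots> = complex_of_real ((cmod (cinner z w))\<^sup>2)" by (rule complex_norm_square[symmetric])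
    finally have "cinner z w * cinner w z = complex_of_real ((cmod (cinner z w))\<^sup>2)" .
    then show ?thesis unfolding t_def zz by simp
  qed
  finally have "cinner (w - t *\<^sub>C z) (w - t *\<^sub>C z) = cinner w w - complex_of_real ((cmod (cinner z w))\<^sup>2 / (norm z)\<^sup>2)"
    by simp
  then have "Re (cinner (w - t *\<^sub>C z) (w - t *\<^sub>C z)) = (norm w)\<^sup>2 - (cmod (cinner z w))\<^sup>2 / (norm z)\<^sup>2"
    by (simp add: Re_cinner_self)
  then have "(norm (w - t *\<^sub>C z))\<^sup>2 = (norm w)\<^sup>2 - (cmod (cinner z w))\<^sup>2 / (norm z)\<^sup>2"
    by (simp only: Re_cinner_self)
  then show ?thesis by (simp only: t_def)
qed

lemma Cauchy_Schwarz: "cmod (cinner x y) \<le> norm x * norm (y::'h::chilbert)"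
proof (cases "y = 0")
  case True then show ?thesis by simp
next
  case False
  have ny: "norm y > 0" using False by simp
  have "0 \<le> (norm (x - (cinner y x / cinner y y) *\<^sub>C y))\<^sup>2" by simp
  then have "(cmod (cinner y x))\<^sup>2 / (norm y)\<^sup>2 \<le> (norm x)\<^sup>2" using proj_line[OF False, of x] by simp
  then have "(cmod (cinner y x))\<^sup>2 \<le> (norm x * norm y)\<^sup>2" using ny by (simp add: field_simps power_mult_distrib)
  moreover have "cmod (cinner y x) = cmod (cinner x y)" by (simp add: cinner_commute[of y x])
  ultimately show ?thesis by (metis norm_ge_zero mult_nonneg_nonneg power2_le_imp_le)
qed

lemma norm_sq_add: "(norm (x + y::'h::chilbert))\<^sup>2 = (norm x)\<^sup>2 + (norm y)\<^sup>2 + 2 * Re (cinner x y)"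
proof -
  have "(norm (x + y))\<^sup>2 = Re (cinner (x+y) (x+y))" by (simp add: Re_cinner_self)
  also have "\<dots> = Re (cinner x x) + Re (cinner y y) + Re (cinner x y) + Re (cinner y x)"
    by (simp add: cinner_simps)
  also have "Re (cinner y x) = Re (cinner x y)" using cinner_commute[of y x] by simp
  finally show ?thesis by (simp add: Re_cinner_self)
qed

lemma norm_sq_diff: "(norm (x - y::'h::chilbert))\<^sup>2 = (norm x)\<^sup>2 + (norm y)\<^sup>2 - 2 * Re (cinner x y)"
  using norm_sq_add[of x "-y"] by (simp add: cinner_minus_right)

lemma parallelogram: "(norm (x + y::'h::chilbert))\<^sup>2 + (norm (x - y))\<^sup>2 = 2 * (norm x)\<^sup>2 + 2 * (norm y)\<^sup>2"
  by (simp add: norm_sq_add norm_sq_diff)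

lemma orth_eq_zero: "(\<And>z. cinner z x = 0) \<Longrightarrow> x = (0::'h::chilbert)"
  using cinner_self_eq_0 by blast

lemma cinner_ext: "(\<And>z. cinner z x = cinner z y) \<Longrightarrow> x = (y::'h::chilbert)"
  using orth_eq_zero[of "x - y"] by (simp add: cinner_diff_right)


(* ---- part 2 ---- *)


subsection \<open>subspaces\<close>

lemma csubspace_0: "csubspace M \<Longrightarrow> 0 \<in> M" unfolding csubspace_def by blast
lemma csubspace_add: "csubspace M \<Longrightarrow> x \<in> M \<Longrightarrow> y \<in> M \<Longrightarrow> x + y \<in> M" unfolding csubspace_def by blast
lemma csubspace_scaleC: "csubspace M \<Longrightarrow> x \<in> M \<Longrightarrow> c *\<^sub>C x \<in> M" unfolding csubspace_def by blast
lemma csubspace_closed: "csubspace M \<Longrightarrow> closed M" unfolding csubspace_def by blast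
lemma csubspace_minus: "csubspace M \<Longrightarrow> x \<in> M \<Longrightarrow> - x \<in> M"
  using csubspace_scaleC[of M x "-1"] by (simp add: scaleC_minus_left)
lemma csubspace_diff: "csubspace M \<Longrightarrow> x \<in> M \<Longrightarrow> y \<in> M \<Longrightarrow> x - y \<in> M"
  using csubspace_add[of M x "-y"] csubspace_minus[of M y] by simp
lemma csubspace_scaleR: "csubspace M \<Longrightarrow> x \<in> M \<Longrightarrow> r *\<^sub>R x \<in> M"
  by (simp add: scaleR_scaleC csubspace_scaleC)
lemma csubspace_sum: "csubspace M \<Longrightarrow> (\<And>i. i \<in> A \<Longrightarrow> f i \<in> M) \<Longrightarrow> sum f A \<in> M"
  by (induction A rule: infinite_finite_induct) (auto simp: csubspace_0 csubspace_add)

subsection \<open>bounded complex-linear maps\<close>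

lemma bclinear_add: "bclinear T \<Longrightarrow> T (x + y) = T x + T y" unfolding bclinear_def by blast
lemma bclinear_scaleC: "bclinear T \<Longrightarrow> T (c *\<^sub>C x) = c *\<^sub>C T x" unfolding bclinear_def by blast

lemma bclinear_bounded: "bclinear T \<Longrightarrow> \<exists>K>0. \<forall>x. norm (T x) \<le> norm x * K"
proof -
  assume "bclinear T"
  then obtain K where K: "\<forall>x. norm (T x) \<le> norm x * K" unfolding bclinear_def by blast
  have "norm (T x) \<le> norm x * max K 1" for x
    using K[rule_format, of x] by (meson max.cobounded1 mult_left_mono norm_ge_zero order_trans)
  then show ?thesis by (intro exI[of _ "max K 1"]) auto
qed

lemma bclinear_bounded_linear: "bclinear T \<Longrightarrow> bounded_linear T"
proof -
  assume T: "bclinear T"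
  then obtain K where K: "\<forall>x. norm (T x) \<le> norm x * K" unfolding bclinear_def by blast
  show ?thesis
  proof (rule bounded_linear_intro[of _ K])
    show "T (x + y) = T x + T y" for x y using T by (rule bclinear_add)
    show "T (r *\<^sub>R x) = r *\<^sub>R T x" for r x using bclinear_scaleC[OF T] by (simp add: scaleR_scaleC)
    show "norm (T x) \<le> norm x * K" for x using K by blast
  qed
qed

lemma bclinear_zero: "bclinear T \<Longrightarrow> T 0 = 0"
  using bclinear_bounded_linear[THEN bounded_linear.linear] linear_0 by blast
lemma bclinear_minus: "bclinear T \<Longrightarrow> T (- x) = - T x"
  using bclinear_bounded_linear[THEN bounded_linear.linear] linear_neg by blast
lemma bclinear_diff: "bclinear T \<Longrightarrow> T (x - y) = T x - T y"
  using bclinear_bounded_linear[THEN bounded_linear.linear] linear_diff by blast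
lemma bclinear_sum: "bclinear T \<Longrightarrow> T (sum f A) = (\<Sum>i\<in>A. T (f i))"
  using bclinear_bounded_linear[THEN bounded_linear.linear] linear_sum by blast
lemma bclinear_continuous: "bclinear T \<Longrightarrow> continuous_on A T"
  using bclinear_bounded_linear linear_continuous_on by blast

lemma bclinear_intro:
  assumes "\<And>x y. T (x + y) = T x + T y" "\<And>c x. T (c *\<^sub>C x) = c *\<^sub>C T x" "\<And>x. norm (T x) \<le> norm x * K"
  shows "bclinear T"
  unfolding bclinear_def using assms by blast

lemma bclinear_comp: "bclinear A \<Longrightarrow> bclinear B \<Longrightarrow> bclinear (A \<circ> B)"
proof -
  assume A: "bclinear A" and B: "bclinear B"
  obtain KA where KA: "KA > 0" "\<forall>x. norm (A x) \<le> norm x * KA" using bclinear_bounded[OF A] by blast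
  obtain KB where KB: "KB > 0" "\<forall>x. norm (B x) \<le> norm x * KB" using bclinear_bounded[OF B] by blast
  show ?thesis
  proof (rule bclinear_intro[of _ "KB * KA"])
    show "(A \<circ> B) (x + y) = (A \<circ> B) x + (A \<circ> B) y" for x y by (simp add: bclinear_add A B)
    show "(A \<circ> B) (c *\<^sub>C x) = c *\<^sub>C (A \<circ> B) x" for c x by (simp add: bclinear_scaleC A B)
    show "norm ((A \<circ> B) x) \<le> norm x * (KB * KA)" for x
    proof -
      have "norm (A (B x)) \<le> norm (B x) * KA" using KA by blast
      also have "\<dots> \<le> (norm x * KB) * KA" using KB KA(1) by (intro mult_right_mono) auto
      finally show ?thesis by (simp add: mult.assoc)
    qed
  qed
qed

lemma bclinear_comp': "bclinear A \<Longrightarrow> bclinear B \<Longrightarrow> bclinear (\<lambda>x. A (B x))"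
  using bclinear_comp[of A B] by (simp add: comp_def)

lemma bclinear_id: "bclinear (\<lambda>x. x)"
  by (rule bclinear_intro[of _ 1]) auto

lemma bclinear_zero_fun: "bclinear (\<lambda>x. 0)"
  by (rule bclinear_intro[of _ 1]) auto

lemma bclinear_add_fun: "bclinear A \<Longrightarrow> bclinear B \<Longrightarrow> bclinear (\<lambda>x. A x + B x)"
proof -
  assume A: "bclinear A" and B: "bclinear B"
  obtain KA where KA: "KA > 0" "\<forall>x. norm (A x) \<le> norm x * KA" using bclinear_bounded[OF A] by blast
  obtain KB where KB: "KB > 0" "\<forall>x. norm (B x) \<le> norm x * KB" using bclinear_bounded[OF B] by blast
  show ?thesis
  proof (rule bclinear_intro[of _ "KA + KB"])
    show "A (x + y) + B (x + y) = A x + B x + (A y + B y)" for x y by (simp add: bclinear_add A B algebra_simps)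
    show "A (c *\<^sub>C x) + B (c *\<^sub>C x) = c *\<^sub>C (A x + B x)" for c x by (simp add: bclinear_scaleC A B scaleC_add_right)
    show "norm (A x + B x) \<le> norm x * (KA + KB)" for x
    proof -
      have "norm (A x + B x) \<le> norm (A x) + norm (B x)" by (rule norm_triangle_ineq)
      also have "\<dots> \<le> norm x * KA + norm x * KB" using KA KB by (intro add_mono) auto
      finally show ?thesis by (simp add: algebra_simps)
    qed
  qed
qed

lemma bclinear_scaleC_fun: "bclinear A \<Longrightarrow> bclinear (\<lambda>x. c *\<^sub>C A x)"
proof -
  assume A: "bclinear A"
  obtain KA where KA: "KA > 0" "\<forall>x. norm (A x) \<le> norm x * KA" using bclinear_bounded[OF A] by blast
  show ?thesis
  proof (rule bclinear_intro[of _ "cmod c * KA"])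
    show "c *\<^sub>C A (x + y) = c *\<^sub>C A x + c *\<^sub>C A y" for x y by (simp add: bclinear_add A scaleC_add_right)
    show "c *\<^sub>C A (d *\<^sub>C x) = d *\<^sub>C (c *\<^sub>C A x)" for d x by (simp add: bclinear_scaleC A mult.commute)
    show "norm (c *\<^sub>C A x) \<le> norm x * (cmod c * KA)" for x
      using KA(2)[rule_format, of x] by (simp add: norm_scaleC) (metis mult.left_commute mult_left_mono norm_ge_zero)
  qed
qed

lemma bclinear_diff_fun: "bclinear A \<Longrightarrow> bclinear B \<Longrightarrow> bclinear (\<lambda>x. A x - B x)"
proof -
  assume A: "bclinear A" and B: "bclinear B"
  have "bclinear (\<lambda>x. A x + (-1) *\<^sub>C B x)" by (intro bclinear_add_fun bclinear_scaleC_fun A B)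
  then show ?thesis by (simp add: scaleC_minus_left)
qed

lemma bclinear_sum_fun: "(\<And>i. i \<in> I \<Longrightarrow> bclinear (T i)) \<Longrightarrow> bclinear (\<lambda>x. \<Sum>i\<in>I. T i x)"
proof (induction I rule: infinite_finite_induct)
  case (infinite A) then show ?case by (simp add: bclinear_zero_fun)
next
  case empty then show ?case by (simp add: bclinear_zero_fun)
next
  case (insert i F)
  then show ?case by (simp add: bclinear_add_fun)
qed

subsection \<open>projection theorem\<close>

lemma infdist_approx:
  assumes "A \<noteq> {}" "e > 0" shows "\<exists>a\<in>A. dist x a < infdist x A + e"
proof (rule ccontr)
  assume "\<not> ?thesis"
  then have "\<forall>a\<in>A. infdist x A + e \<le> dist x a" by (auto simp: not_less)
  then have "infdist x A + e \<le> infdist x A" unfolding infdist_notempty[OF assms(1)]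
    by (intro cINF_greatest assms(1)) auto
  then show False using assms(2) by simp
qed

lemma proj_exists:
  fixes x :: "'h::chilbert"
  assumes M: "csubspace M"
  shows "\<exists>y\<in>M. \<forall>z\<in>M. cinner z (x - y) = 0"
proof -
  have ne: "M \<noteq> {}" using csubspace_0[OF M] by blast
  define d where "d = infdist x M"
  have d0: "0 \<le> d" unfolding d_def by (rule infdist_nonneg)
  have dle: "d \<le> norm (x - a)" if "a \<in> M" for a
    using infdist_le[OF that, of x] by (simp add: d_def dist_norm)
  have "\<forall>n. \<exists>a\<in>M. dist x a < d + 1 / real (Suc n)"
    using infdist_approx[OF ne] by (simp add: d_def)
  then have "\<exists>y. \<forall>n. y n \<in> M \<and> dist x (y n) < d + 1 / real (Suc n)" by (intro choice) blast
  then obtain y where y: "\<forall>n. y n \<in> M \<and> norm (x - y n) < d + 1 / real (Suc n)"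
    by (auto simp: dist_norm)
  have key: "(norm (y n - y m))\<^sup>2 \<le> 4*(d+1)*(1/real (Suc n) + 1/real (Suc m))" for n m
  proof -
    define en where "en = 1/real (Suc n)"
    define em where "em = 1/real (Suc m)"
    have en: "0 < en" "en \<le> 1" and em: "0 < em" "em \<le> 1" by (auto simp: en_def em_def field_simps)
    define u where "u = x - y n"
    define v where "v = x - y m"
    have mid: "(1/2::real) *\<^sub>R (y n + y m) \<in> M" using M y by (simp add: csubspace_add csubspace_scaleR)
    have "u + v = (x + x) - (y n + y m)" unfolding u_def v_def by (simp add: algebra_simps)
    then have eq: "x - (1/2::real) *\<^sub>R (y n + y m) = (1/2::real) *\<^sub>R (u + v)" by (simp add: scaleR_diff_right)
    have "d \<le> norm ((1/2::real) *\<^sub>R (u + v))" using dle[OF mid] eq by simp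
    then have dl: "2*d \<le> norm (u + v)" by simp
    have par: "(norm (u + v))\<^sup>2 + (norm (u - v))\<^sup>2 = 2*(norm u)\<^sup>2 + 2*(norm v)\<^sup>2" by (rule parallelogram)
    have uv: "norm (u - v) = norm (y n - y m)" unfolding u_def v_def by (simp add: norm_minus_commute)
    have uv2: "(norm (u - v))\<^sup>2 = (norm (y n - y m))\<^sup>2" using uv by simp
    have nu: "(norm u)\<^sup>2 \<le> (d + en)\<^sup>2" using y unfolding u_def en_def
      by (intro power_mono) (auto intro: less_imp_le)
    have nv: "(norm v)\<^sup>2 \<le> (d + em)\<^sup>2" using y unfolding v_def em_def
      by (intro power_mono) (auto intro: less_imp_le)
    have d2: "(2*d)\<^sup>2 \<le> (norm (u+v))\<^sup>2" using dl d0 by (intro power_mono) auto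
    have e1: "en * en \<le> en" using en by (simp add: mult_le_one mult_right_le_one_le)
    have e2: "em * em \<le> em" using em by (simp add: mult_le_one mult_right_le_one_le)
    have e3: "0 \<le> d * en" "0 \<le> d * em" using d0 en em by auto
    have "(norm (y n - y m))\<^sup>2 \<le> 2*(d + en)\<^sup>2 + 2*(d + em)\<^sup>2 - (2*d)\<^sup>2"
      using par uv2 nu nv d2 by linarith
    also have "\<dots> = 4*d*en + 4*d*em + 2*(en*en) + 2*(em*em)" by (simp add: power2_eq_square algebra_simps)
    also have "\<dots> \<le> 4*d*en + 4*d*em + 4*en + 4*em" using e1 e2 en em by linarith
    also have "\<dots> = 4*(d+1)*(en + em)" by (simp add: algebra_simps)
    finally show ?thesis by (simp add: en_def em_def)
  qed
  have "Cauchy y"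
  proof (rule metric_CauchyI)
    fix e :: real assume e: "0 < e"
    obtain N :: nat where N: "8*(d+1) / e\<^sup>2 < real N" using reals_Archimedean2 by blast
    have "dist (y m) (y n) < e" if "m \<ge> N" "n \<ge> N" for m n
    proof -
      have a: "1/real (Suc m) \<le> 1/real (Suc N)" "1/real (Suc n) \<le> 1/real (Suc N)"
        using that by (auto simp: field_simps)
      have "(norm (y m - y n))\<^sup>2 \<le> 4*(d+1)*(1/real (Suc m) + 1/real (Suc n))" by (rule key)
      also have "\<dots> \<le> 4*(d+1)*(2/real (Suc N))" using a d0 by (intro mult_left_mono) auto
      also have "\<dots> < e\<^sup>2"
      proof -
        have "8*(d+1) < e\<^sup>2 * real N" using N e by (simp add: field_simps)
        also have "\<dots> \<le> e\<^sup>2 * real (Suc N)" using e by (intro mult_left_mono) auto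
        finally show ?thesis by (simp add: field_simps)
      qed
      finally have "(norm (y m - y n))\<^sup>2 < e\<^sup>2" .
      then show ?thesis using e by (simp add: dist_norm power_less_imp_less_base)
    qed
    then show "\<exists>N. \<forall>m\<ge>N. \<forall>n\<ge>N. dist (y m) (y n) < e" by blast
  qed
  then obtain l where l: "y \<longlonglongrightarrow> l" using Cauchy_convergent_iff convergent_def by blast
  have lM: "l \<in> M" using closed_sequentially[OF csubspace_closed[OF M]] y l by blast
  have lmin: "norm (x - l) \<le> d"
  proof -
    have "(\<lambda>n. norm (x - y n)) \<longlonglongrightarrow> norm (x - l)" using l by (intro tendsto_intros)
    moreover have "(\<lambda>n. 1/real (Suc n)) \<longlonglongrightarrow> 0" using LIMSEQ_inverse_real_of_nat by (simp add: inverse_eq_divide)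
    then have "(\<lambda>n. d + 1/real (Suc n)) \<longlonglongrightarrow> d + 0" by (intro tendsto_intros)
    ultimately show ?thesis using y by (intro LIMSEQ_le) (auto intro: less_imp_le)
  qed
  have "cinner z (x - l) = 0" if zM: "z \<in> M" for z
  proof (cases "z = 0")
    case True then show ?thesis by simp
  next
    case False
    define w where "w = x - l"
    define t where "t = cinner z w / cinner z z"
    have "l + t *\<^sub>C z \<in> M" using M lM zM by (simp add: csubspace_add csubspace_scaleC)
    then have "d \<le> norm (x - (l + t *\<^sub>C z))" by (rule dle)
    also have "x - (l + t *\<^sub>C z) = w - t *\<^sub>C z" by (simp add: w_def)
    finally have "norm w \<le> norm (w - t *\<^sub>C z)" using lmin w_def by simp
    then have "(norm w)\<^sup>2 \<le> (norm (w - t *\<^sub>C z))\<^sup>2" by (simp add: power_mono)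
    also have "\<dots> = (norm w)\<^sup>2 - (cmod (cinner z w))\<^sup>2 / (norm z)\<^sup>2" unfolding t_def by (rule proj_line[OF False])
    finally have "(cmod (cinner z w))\<^sup>2 / (norm z)\<^sup>2 \<le> 0" by simp
    then have "(cmod (cinner z w))\<^sup>2 \<le> 0" using False by (simp add: divide_le_0_iff)
    then show ?thesis unfolding w_def by simp
  qed
  then show ?thesis using lM by blast
qed

lemma proj_unique:
  fixes x :: "'h::chilbert"
  assumes "y \<in> M" "y' \<in> M" "\<forall>z\<in>M. cinner z (x - y) = 0" "\<forall>z\<in>M. cinner z (x - y') = 0"
  shows "y = y'"
proof -
  have "cinner y (y' - y) = 0" "cinner y' (y' - y) = 0"
  proof -
    have "y' - y = (x - y) - (x - y')" by simp
    then show "cinner y (y' - y) = 0" "cinner y' (y' - y) = 0"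
      using assms by (simp_all add: cinner_diff_right)
  qed
  then have "cinner (y' - y) (y' - y) = 0" by (simp add: cinner_diff_left)
  then show ?thesis by simp
qed

lemma proj_eqI:
  fixes x :: "'h::chilbert"
  assumes "y \<in> M" "\<forall>z\<in>M. cinner z (x - y) = 0"
  shows "proj M x = y"
  unfolding proj_def
proof (rule the_equality)
  show "y \<in> M \<and> (\<forall>z\<in>M. cinner z (x - y) = 0)" using assms by simp
  fix y' assume "y' \<in> M \<and> (\<forall>z\<in>M. cinner z (x - y') = 0)"
  then show "y' = y" using proj_unique[of y' M y x] assms by simp
qed

lemma proj_char: "csubspace M \<Longrightarrow> proj M x \<in> M \<and> (\<forall>z\<in>M. cinner z (x - proj M x) = 0)"
proof -
  assume M: "csubspace M"
  obtain y where y: "y \<in> M" "\<forall>z\<in>M. cinner z (x - y) = 0" using proj_exists[OF M, of x] by blast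
  have "proj M x = y" using y by (rule proj_eqI)
  then show ?thesis using y by simp
qed

lemma proj_in: "csubspace M \<Longrightarrow> proj M x \<in> M"
  using proj_char by blast

lemma proj_orth: "csubspace M \<Longrightarrow> z \<in> M \<Longrightarrow> cinner z (x - proj M x) = 0"
  using proj_char by blast

lemma proj_orth': "csubspace M \<Longrightarrow> z \<in> M \<Longrightarrow> cinner z x = cinner z (proj M x)"
  using proj_orth[of M z x] by (simp add: cinner_diff_right)

lemma proj_id: "x \<in> M \<Longrightarrow> proj M x = x"
  by (rule proj_eqI) auto

lemma proj_orth_zero: "0 \<in> M \<Longrightarrow> (\<forall>z\<in>M. cinner z x = 0) \<Longrightarrow> proj M x = 0"
  by (rule proj_eqI) auto

lemma proj_add: "csubspace M \<Longrightarrow> proj M (x + y) = proj M x + proj M y"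
  by (rule proj_eqI) (auto simp: csubspace_add proj_in cinner_diff_right cinner_add_right proj_orth'[of M _ x] proj_orth'[of M _ y])

lemma proj_scaleC: "csubspace M \<Longrightarrow> proj M (c *\<^sub>C x) = c *\<^sub>C proj M x"
proof (rule proj_eqI)
  assume M: "csubspace M"
  show "c *\<^sub>C proj M x \<in> M" using M by (simp add: csubspace_scaleC proj_in)
  show "\<forall>z\<in>M. cinner z (c *\<^sub>C x - c *\<^sub>C proj M x) = 0"
    using proj_orth[OF M] by (simp add: scaleC_diff_right[symmetric] cinner_scaleC_right)
qed

lemma proj_idem: "csubspace M \<Longrightarrow> proj M (proj M x) = proj M x"
  by (simp add: proj_id proj_in)

lemma proj_cinner_left: "csubspace M \<Longrightarrow> cinner (proj M x) y = cinner (proj M x) (proj M y)"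
proof -
  assume M: "csubspace M"
  have "cinner (proj M x) (y - proj M y) = 0" using proj_orth[OF M proj_in[OF M]] .
  then show ?thesis by (simp add: cinner_diff_right)
qed

lemma proj_selfadj: "csubspace M \<Longrightarrow> cinner (proj M x) y = cinner x (proj M y)"
proof -
  assume M: "csubspace M"
  have "cinner x (proj M y) = cnj (cinner (proj M y) x)" by (rule cinner_commute)
  also have "\<dots> = cnj (cinner (proj M y) (proj M x))" using proj_cinner_left[OF M, of y x] by simp
  also have "\<dots> = cinner (proj M x) (proj M y)" by (simp add: cinner_cnj)
  also have "\<dots> = cinner (proj M x) y" using proj_cinner_left[OF M, of x y] by simp
  finally show ?thesis by simp
qed

lemma proj_norm: "csubspace M \<Longrightarrow> norm (proj M x) \<le> norm x"
proof -
  assume M: "csubspace M"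
  have "(norm x)\<^sup>2 = (norm (proj M x + (x - proj M x)))\<^sup>2" by simp
  also have "\<dots> = (norm (proj M x))\<^sup>2 + (norm (x - proj M x))\<^sup>2 + 2 * Re (cinner (proj M x) (x - proj M x))"
    by (rule norm_sq_add)
  finally have e: "(norm x)\<^sup>2 = (norm (proj M x))\<^sup>2 + (norm (x - proj M x))\<^sup>2 + 2 * Re (cinner (proj M x) (x - proj M x))" .
  have "cinner (proj M x) (x - proj M x) = 0" using proj_orth[OF M proj_in[OF M]] .
  then have "(norm (proj M x))\<^sup>2 \<le> (norm x)\<^sup>2" using e by simp
  then show ?thesis by (rule power2_le_imp_le) simp
qed

lemma bclinear_proj: "csubspace M \<Longrightarrow> bclinear (proj M)"
proof -
  assume M: "csubspace M"
  show ?thesis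
  proof (rule bclinear_intro[of _ 1])
    show "proj M (x + y) = proj M x + proj M y" for x y by (rule proj_add[OF M])
    show "proj M (c *\<^sub>C x) = c *\<^sub>C proj M x" for c x by (rule proj_scaleC[OF M])
    show "norm (proj M x) \<le> norm x * 1" for x using proj_norm[OF M] by simp
  qed
qed

lemma is_op_proj: "csubspace M \<Longrightarrow> is_op M M (proj M)"
proof -
  assume M: "csubspace M"
  have "proj M = proj M \<circ> proj M \<circ> proj M"
    by (rule ext) (simp only: comp_apply proj_idem[OF M])
  then show ?thesis unfolding is_op_def using bclinear_proj[OF M] by blast
qed


(* ---- part 3 ---- *)


subsection \<open>continuity of inner product, density\<close>

lemma bounded_linear_cinner_right: "bounded_linear (cinner (w::'h::chilbert))"
proof (rule bounded_linear_intro[of _ "norm w"])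
  show "cinner w (x + y) = cinner w x + cinner w y" for x y by (rule cinner_add_right)
  show "cinner w (r *\<^sub>R x) = r *\<^sub>R cinner w x" for r x
    by (simp add: scaleR_scaleC cinner_scaleC_right scaleR_conv_of_real)
  show "norm (cinner w x) \<le> norm x * norm w" for x using Cauchy_Schwarz[of w x] by (simp add: mult.commute)
qed

lemma continuous_cinner_right: "continuous_on A (cinner (w::'h::chilbert))"
  using bounded_linear_cinner_right linear_continuous_on by blast

lemma continuous_cinner_left: "continuous_on A (\<lambda>x. cinner x (w::'h::chilbert))"
proof -
  have "continuous_on A (\<lambda>x. cnj (cinner w x))"
    by (intro continuous_on_cnj continuous_cinner_right)
  then show ?thesis by (simp add: cinner_cnj)
qed

lemma dense_eq:
  fixes f g :: "'a::topological_space \<Rightarrow> 'b::t2_space"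
  assumes "continuous_on UNIV f" "continuous_on UNIV g" "\<And>y. y \<in> D \<Longrightarrow> f y = g y" "x \<in> closure D"
  shows "f x = g x"
proof -
  have "closure D \<subseteq> {x. f x = g x}"
    by (rule closure_minimal) (use assms closed_Collect_eq[OF assms(1,2)] in auto)
  then show ?thesis using assms(4) by blast
qed

lemma dense_orth:
  fixes w :: "'h::chilbert"
  assumes "\<And>y. y \<in> D \<Longrightarrow> cinner w y = 0" "w \<in> closure D"
  shows "w = 0"
proof -
  have "cinner w w = 0"
    using dense_eq[of "cinner w" "\<lambda>_. 0" D w] assms continuous_cinner_right by auto
  then show ?thesis by simp
qed

lemma closure_csubspace:
  fixes D :: "'h::chilbert set"
  assumes D0: "0 \<in> D" and Dadd: "\<And>x y. x\<in>D \<Longrightarrow> y\<in>D \<Longrightarrow> x+y \<in> D" and Dsc: "\<And>c x. x\<in>D \<Longrightarrow> c *\<^sub>C x \<in> D"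
  shows "csubspace (closure D)"
proof -
  have cl: "closed (closure D)" by simp
  have add1: "x + y \<in> closure D" if "x \<in> closure D" "y \<in> D" for x y
  proof -
    have "(\<lambda>x. x + y) ` closure D \<subseteq> closure D"
      by (rule image_closure_subset) (auto intro!: continuous_intros Dadd that closure_subset[THEN subsetD])
    then show ?thesis using that by blast
  qed
  have add2: "x + y \<in> closure D" if "x \<in> closure D" "y \<in> closure D" for x y
  proof -
    have "(\<lambda>y. x + y) ` closure D \<subseteq> closure D"
      by (rule image_closure_subset) (auto intro!: continuous_intros add1[OF that(1)])
    then show ?thesis using that by blast
  qed
  have sc: "c *\<^sub>C x \<in> closure D" if "x \<in> closure D" for c x
  proof -
    have "(\<lambda>x. c *\<^sub>C x) ` closure D \<subseteq> closure D"
    proof (rule image_closure_subset)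
      show "continuous_on (closure D) (\<lambda>x. c *\<^sub>C x)"
        using bclinear_continuous bclinear_scaleC_fun[OF bclinear_id] by blast
    qed (auto intro: Dsc closure_subset[THEN subsetD])
    then show ?thesis using that by blast
  qed
  show ?thesis unfolding csubspace_def using D0 closure_subset add2 sc by blast
qed

subsection \<open>Riesz representation for densely defined bounded functionals\<close>

lemma riesz_dense:
  fixes D :: "'h::chilbert set" and f :: "'h \<Rightarrow> complex"
  assumes D0: "0 \<in> D" and Dadd: "\<And>x y. x\<in>D \<Longrightarrow> y\<in>D \<Longrightarrow> x+y \<in> D" and Dsc: "\<And>c x. x\<in>D \<Longrightarrow> c *\<^sub>C x \<in> D"
    and fadd: "\<And>x y. x\<in>D \<Longrightarrow> y\<in>D \<Longrightarrow> f (x+y) = f x + f y"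
    and fsc: "\<And>c x. x\<in>D \<Longrightarrow> f (c *\<^sub>C x) = c * f x"
    and fb: "\<And>x. x\<in>D \<Longrightarrow> cmod (f x) \<le> C * norm x"
  shows "\<exists>z\<in>closure D. \<forall>y\<in>D. f y = cinner z y"
proof (cases "\<forall>y\<in>D. f y = 0")
  case True then show ?thesis using D0 closure_subset by (intro bexI[of _ 0]) auto
next
  case False
  then obtain y0 where y0: "y0 \<in> D" "f y0 \<noteq> 0" by blast
  define y1 where "y1 = (1 / f y0) *\<^sub>C y0"
  have y1D: "y1 \<in> D" unfolding y1_def using y0 Dsc by blast
  have fy1: "f y1 = 1" unfolding y1_def using y0 fsc by simp
  have f0: "f 0 = 0" using fsc[OF D0, of 0] by simp
  have fminus: "f (x + (-1) *\<^sub>C y) = f x - f y" if "x \<in> D" "y \<in> D" for x y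
    using fadd[OF that(1) Dsc[OF that(2)]] fsc[OF that(2)] by simp
  define N where "N = {y\<in>D. f y = 0}"
  have cN: "csubspace (closure N)"
    by (rule closure_csubspace) (auto simp: N_def D0 f0 Dadd fadd Dsc fsc)
  have cD: "csubspace (closure D)" by (rule closure_csubspace) (auto simp: D0 Dadd Dsc)
  define p where "p = proj (closure N) y1"
  define u where "u = y1 - p"
  have pN: "p \<in> closure N" unfolding p_def using proj_in[OF cN] .
  have uorth: "cinner m u = 0" if "m \<in> closure N" for m
    unfolding u_def p_def using proj_orth[OF cN that] .
  have u0: "u \<noteq> 0"
  proof
    assume "u = 0"
    then have "y1 \<in> closure N" using pN by (simp add: u_def)
    moreover have e: "1 / (\<bar>C\<bar> + 1) > 0" by simp
    ultimately obtain n where n: "n \<in> N" "dist n y1 < 1 / (\<bar>C\<bar> + 1)" unfolding closure_approachable by blast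
    have nD: "n \<in> D" and fn: "f n = 0" using n by (auto simp: N_def)
    have "f (y1 + (-1) *\<^sub>C n) = 1" using fminus[OF y1D nD] fy1 fn by simp
    moreover have "cmod (f (y1 + (-1) *\<^sub>C n)) \<le> C * norm (y1 + (-1) *\<^sub>C n)"
      by (rule fb) (use y1D nD Dadd Dsc in blast)
    moreover have "y1 + (-1) *\<^sub>C n = y1 - n" by (simp add: scaleC_minus_left)
    moreover have "C * norm (y1 - n) \<le> \<bar>C\<bar> * norm (y1 - n)" by (simp add: mult_right_mono)
    moreover have "\<bar>C\<bar> * norm (y1 - n) < 1"
    proof -
      have "norm (y1 - n) < 1 / (\<bar>C\<bar> + 1)" using n(2) by (simp add: dist_norm norm_minus_commute)
      then have "(\<bar>C\<bar> + 1) * norm (y1 - n) < 1" by (simp add: field_simps)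
      moreover have "\<bar>C\<bar> * norm (y1 - n) \<le> (\<bar>C\<bar> + 1) * norm (y1 - n)" by (simp add: mult_right_mono)
      ultimately show ?thesis by linarith
    qed
    ultimately show False by simp
  qed
  have key: "cinner u y = f y * cinner u y1" if yD: "y \<in> D" for y
  proof -
    have "y + (- f y) *\<^sub>C y1 \<in> N"
    proof -
      have m: "y + (- f y) *\<^sub>C y1 \<in> D" using yD y1D Dadd Dsc by blast
      have "f (y + (- f y) *\<^sub>C y1) = f y + (- f y) * f y1" using fadd[OF yD Dsc[OF y1D]] fsc[OF y1D] by simp
      then show ?thesis using m fy1 by (simp add: N_def)
    qed
    then have "cinner (y + (- f y) *\<^sub>C y1) u = 0" using uorth closure_subset by blast
    then have "cinner u (y + (- f y) *\<^sub>C y1) = 0" using cinner_cnj[of "y + (- f y) *\<^sub>C y1" u] by simp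
    then show ?thesis by (simp add: cinner_add_right cinner_scaleC_right)
  qed
  have uy1: "cinner u y1 = cinner u u"
  proof -
    have "cinner p u = 0" using uorth[OF pN] .
    then have "cinner u p = 0" using cinner_cnj[of p u] by simp
    moreover have "y1 = u + p" by (simp add: u_def)
    ultimately show ?thesis by (simp add: cinner_add_right)
  qed
  have uu: "cinner u u = complex_of_real ((norm u)\<^sup>2)" by (rule cinner_self_norm)
  have uu0: "cinner u u \<noteq> 0" using u0 by simp
  define z where "z = (1 / cinner u u) *\<^sub>C u"
  have zD: "z \<in> closure D"
  proof -
    have "y1 \<in> closure D" using y1D closure_subset by blast
    moreover have "p \<in> closure D" using pN closure_mono[of N D] by (auto simp: N_def)
    ultimately have "u \<in> closure D" unfolding u_def using cD csubspace_diff by blast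
    then show ?thesis unfolding z_def using cD csubspace_scaleC by blast
  qed
  have "f y = cinner z y" if "y \<in> D" for y
  proof -
    have "cnj (1 / cinner u u) = 1 / cinner u u" unfolding uu by simp
    then have "cinner z y = (1 / cinner u u) * cinner u y" unfolding z_def by (simp add: cinner_scaleC_left)
    also have "\<dots> = f y" using key[OF that] uy1 uu0 by simp
    finally show ?thesis by simp
  qed
  then show ?thesis using zD by blast
qed

lemma cinner_ext_left: "(\<And>z. cinner x z = cinner y z) \<Longrightarrow> x = (y::'h::chilbert)"
  using orth_eq_zero[of "x - y"] by (metis cinner_cnj cinner_diff_right cinner_diff_left right_minus_eq)

subsection \<open>adjoints\<close>

lemma adj_exists:
  fixes T :: "'h::chilbert \<Rightarrow> 'k::chilbert"
  assumes T: "bclinear T"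
  shows "\<exists>x. \<forall>z. cinner x z = cinner y (T z)"
proof -
  obtain K where K: "K > 0" "\<forall>x. norm (T x) \<le> norm x * K" using bclinear_bounded[OF T] by blast
  have "\<exists>x\<in>closure UNIV. \<forall>z\<in>UNIV. cinner y (T z) = cinner x z"
  proof (rule riesz_dense[where C = "norm y * K"])
    show "cinner y (T (x + z)) = cinner y (T x) + cinner y (T z)" for x z by (simp add: bclinear_add[OF T] cinner_add_right)
    show "cinner y (T (c *\<^sub>C x)) = c * cinner y (T x)" for c x by (simp add: bclinear_scaleC[OF T] cinner_scaleC_right)
    show "cmod (cinner y (T x)) \<le> norm y * K * norm x" for x
    proof -
      have "cmod (cinner y (T x)) \<le> norm y * norm (T x)" by (rule Cauchy_Schwarz)
      also have "\<dots> \<le> norm y * (norm x * K)" using K by (intro mult_left_mono) auto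
      finally show ?thesis by (simp add: algebra_simps)
    qed
  qed auto
  then show ?thesis by auto
qed

lemma adj_cinner: "bclinear T \<Longrightarrow> cinner (adj T y) z = cinner y (T z)"
proof -
  assume T: "bclinear T"
  obtain x where x: "\<forall>z. cinner x z = cinner y (T z)" using adj_exists[OF T] by blast
  have "adj T y = x" unfolding adj_def
  proof (rule the_equality)
    show "\<forall>z. cinner x z = cinner y (T z)" by (rule x)
    fix x' assume "\<forall>z. cinner x' z = cinner y (T z)"
    then show "x' = x" using x by (intro cinner_ext_left) simp
  qed
  then show ?thesis using x by simp
qed

lemma adj_cinner_right: "bclinear T \<Longrightarrow> cinner z (adj T y) = cinner (T z) y"
proof -
  assume T: "bclinear T"
  have "cinner z (adj T y) = cnj (cinner (adj T y) z)" by (rule cinner_commute)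
  also have "\<dots> = cnj (cinner y (T z))" by (simp add: adj_cinner[OF T])
  also have "\<dots> = cinner (T z) y" by (rule cinner_cnj)
  finally show ?thesis .
qed

lemma adj_eqI: "(\<And>y z. cinner (A y) z = cinner y (T z)) \<Longrightarrow> adj T = A"
proof (rule ext)
  fix y assume h: "\<And>y z. cinner (A y) z = cinner y (T z)"
  show "adj T y = A y" unfolding adj_def
  proof (rule the_equality)
    show "\<forall>z. cinner (A y) z = cinner y (T z)" using h by blast
    fix x' assume "\<forall>z. cinner x' z = cinner y (T z)"
    then show "x' = A y" using h by (intro cinner_ext_left) simp
  qed
qed

lemma bclinear_adj: "bclinear T \<Longrightarrow> bclinear (adj T)"
proof -
  assume T: "bclinear T"
  obtain K where K: "K > 0" "\<forall>x. norm (T x) \<le> norm x * K" using bclinear_bounded[OF T] by blast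
  show ?thesis
  proof (rule bclinear_intro[of _ K])
    show "adj T (x + y) = adj T x + adj T y" for x y
      by (rule cinner_ext_left) (simp add: adj_cinner[OF T] cinner_add_left)
    show "adj T (c *\<^sub>C x) = c *\<^sub>C adj T x" for c x
      by (rule cinner_ext_left) (simp add: adj_cinner[OF T] cinner_scaleC_left)
    show "norm (adj T y) \<le> norm y * K" for y
    proof -
      have "(norm (adj T y))\<^sup>2 = Re (cinner (adj T y) (adj T y))" by (simp add: Re_cinner_self)
      also have "\<dots> = Re (cinner y (T (adj T y)))" by (simp add: adj_cinner[OF T])
      also have "\<dots> \<le> cmod (cinner y (T (adj T y)))" by (rule complex_Re_le_cmod)
      also have "\<dots> \<le> norm y * norm (T (adj T y))" by (rule Cauchy_Schwarz)
      also have "\<dots> \<le> norm y * (norm (adj T y) * K)" using K by (intro mult_left_mono) auto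
      finally have *: "(norm (adj T y))\<^sup>2 \<le> (norm y * K) * norm (adj T y)" by (simp add: algebra_simps)
      show ?thesis
      proof (cases "norm (adj T y) = 0")
        case True then show ?thesis using K by simp
      next
        case False
        then have "norm (adj T y) > 0" by simp
        then show ?thesis using * by (simp add: power2_eq_square)
      qed
    qed
  qed
qed

lemma adj_adj: "bclinear T \<Longrightarrow> adj (adj T) = T"
  by (rule adj_eqI) (simp add: adj_cinner_right)

lemma adj_comp: "bclinear A \<Longrightarrow> bclinear B \<Longrightarrow> adj (A \<circ> B) = adj B \<circ> adj A"
  by (rule adj_eqI) (simp add: adj_cinner)

lemma adj_comp': "bclinear A \<Longrightarrow> bclinear B \<Longrightarrow> adj (\<lambda>x. A (B x)) = (\<lambda>y. adj B (adj A y))"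
  by (rule adj_eqI) (simp add: adj_cinner)

lemma adj_proj: "csubspace M \<Longrightarrow> adj (proj M) = proj M"
  by (rule adj_eqI) (simp add: proj_selfadj)

lemma adj_add_fun: "bclinear A \<Longrightarrow> bclinear B \<Longrightarrow> adj (\<lambda>x. A x + B x) = (\<lambda>y. adj A y + adj B y)"
  by (rule adj_eqI) (simp add: adj_cinner cinner_add_left cinner_add_right)

lemma adj_scaleC_fun: "bclinear A \<Longrightarrow> adj (\<lambda>x. c *\<^sub>C A x) = (\<lambda>y. cnj c *\<^sub>C adj A y)"
  by (rule adj_eqI) (simp add: adj_cinner cinner_scaleC_left cinner_scaleC_right)

lemma adj_sum_fun: "(\<And>i. i \<in> I \<Longrightarrow> bclinear (T i)) \<Longrightarrow> adj (\<lambda>x. \<Sum>i\<in>I. T i x) = (\<lambda>y. \<Sum>i\<in>I. adj (T i) y)"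
  by (rule adj_eqI) (simp add: adj_cinner cinner_sum_left cinner_sum_right)

subsection \<open>operators between subspaces\<close>

lemma is_op_bclinear: "is_op S K T \<Longrightarrow> bclinear T" unfolding is_op_def by blast

lemma is_op_range: "is_op S K T \<Longrightarrow> csubspace K \<Longrightarrow> T x \<in> K"
  unfolding is_op_def by (metis comp_apply proj_in)

lemma is_op_left: "is_op S K T \<Longrightarrow> csubspace K \<Longrightarrow> proj K (T x) = T x"
  by (simp add: is_op_range proj_id)

lemma is_op_right: "is_op S K T \<Longrightarrow> csubspace S \<Longrightarrow> T (proj S x) = T x"
proof -
  assume T: "is_op S K T" and S: "csubspace S"
  have "T = proj K \<circ> T \<circ> proj S" using T unfolding is_op_def by blast
  then have "T (proj S x) = proj K (T (proj S (proj S x)))" "T x = proj K (T (proj S x))"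
    by (metis comp_apply)+
  then show ?thesis by (simp add: proj_idem[OF S])
qed

lemma is_opI:
  assumes "bclinear T" "csubspace K" "\<And>x. T x \<in> K" "\<And>x. T (proj S x) = T x"
  shows "is_op S K T"
  unfolding is_op_def using assms by (auto simp: fun_eq_iff proj_id)

lemma is_op_adj:
  assumes T: "is_op S K T" and S: "csubspace S" and K: "csubspace K"
  shows "is_op K S (adj T)"
proof -
  have Tb: "bclinear T" using T by (rule is_op_bclinear)
  have "T = proj K \<circ> T \<circ> proj S" using T unfolding is_op_def by blast
  then have "adj T = adj (proj K \<circ> T \<circ> proj S)" by simp
  also have "\<dots> = proj S \<circ> adj T \<circ> proj K"
    by (simp add: adj_comp bclinear_comp bclinear_proj S K Tb adj_proj comp_assoc)
  finally show ?thesis unfolding is_op_def using bclinear_adj[OF Tb] by blast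
qed

lemma is_op_comp:
  assumes A: "is_op K L A" and B: "is_op S K B" and S: "csubspace S" and L: "csubspace L"
  shows "is_op S L (A \<circ> B)"
  by (rule is_opI) (auto simp: bclinear_comp is_op_bclinear[OF A] is_op_bclinear[OF B] L is_op_range[OF A L] is_op_right[OF B S])

lemma is_op_comp':
  assumes A: "is_op K L A" and B: "is_op S K B" and S: "csubspace S" and L: "csubspace L"
  shows "is_op S L (\<lambda>x. A (B x))"
  using is_op_comp[OF assms] by (simp add: comp_def)


(* ---- part 4 ---- *)


section \<open>algebra and representations\<close>

lemma invol_zero[simp]: "invol (0::'a::cstar_algebra) = 0"
  using invol_scaleC[of 0 "0::'a"] by simp

lemma invol_one[simp]: "invol (1::'a::cstar_algebra) = 1"
proof -
  have "invol (1::'a) = invol 1 * 1" by simp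
  also have "\<dots> = invol 1 * invol (invol 1)" by (simp add: invol_invol)
  also have "\<dots> = invol (invol 1 * 1)" by (rule invol_mult[symmetric])
  also have "\<dots> = 1" by (simp add: invol_invol)
  finally show ?thesis .
qed

context
  fixes K :: "'k::chilbert set" and \<pi> :: "'a::cstar_algebra \<Rightarrow> 'k \<Rightarrow> 'k"
  assumes rep: "star_rep K \<pi>" and K: "csubspace K"
begin

lemma rep_op: "is_op K K (\<pi> a)" using rep unfolding star_rep_def by blast
lemma rep_bcl: "bclinear (\<pi> a)" using rep_op is_op_bclinear by blast
lemma rep_add: "\<pi> (a + b) x = \<pi> a x + \<pi> b x" using rep unfolding star_rep_def by metis
lemma rep_scaleC: "\<pi> (c *\<^sub>C a) x = c *\<^sub>C \<pi> a x" using rep unfolding star_rep_def by metis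
lemma rep_mult: "\<pi> (a * b) x = \<pi> a (\<pi> b x)" using rep unfolding star_rep_def by (metis comp_apply)
lemma rep_invol: "\<pi> (invol a) = adj (\<pi> a)" using rep unfolding star_rep_def by blast
lemma rep_one: "\<pi> 1 = proj K" using rep unfolding star_rep_def by blast
lemma rep_zero: "\<pi> 0 x = 0"
proof -
  have "\<pi> (0 + 0) x = \<pi> 0 x + \<pi> 0 x" by (rule rep_add)
  then show ?thesis by simp
qed
lemma rep_sum: "\<pi> (\<Sum>i\<in>A. f i) x = (\<Sum>i\<in>A. \<pi> (f i) x)"
  by (induct A rule: infinite_finite_induct) (auto simp: rep_zero rep_add)
lemma rep_range: "\<pi> a x \<in> K" using is_op_range[OF rep_op K] .
lemma rep_right: "\<pi> a (proj K x) = \<pi> a x" using is_op_right[OF rep_op K] .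
lemma rep_cinner: "cinner (\<pi> a x) y = cinner x (\<pi> (invol a) y)"
  by (simp add: rep_invol adj_cinner_right[OF rep_bcl])
lemma rep_cinner': "cinner x (\<pi> a y) = cinner (\<pi> (invol a) x) y"
  using rep_cinner[of "invol a" x y] by (simp add: invol_invol)

end

lemma ms_K: "min_stinespring H \<phi> K \<pi> V \<Longrightarrow> csubspace K" unfolding min_stinespring_def by blast
lemma ms_rep: "min_stinespring H \<phi> K \<pi> V \<Longrightarrow> star_rep K \<pi>" unfolding min_stinespring_def by blast
lemma ms_V: "min_stinespring H \<phi> K \<pi> V \<Longrightarrow> is_op H K V" unfolding min_stinespring_def by blast
lemma ms_phi: "min_stinespring H \<phi> K \<pi> V \<Longrightarrow> \<phi> a x = adj V (\<pi> a (V x))" unfolding min_stinespring_def by (metis comp_apply)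
lemma ms_dense: "min_stinespring H \<phi> K \<pi> V \<Longrightarrow> closure (span (\<Union>a. (\<lambda>h. \<pi> a (V h)) ` H)) = K"
  unfolding min_stinespring_def by blast

section \<open>completely positive maps: basics\<close>

lemma cp_op: "cp_map S T \<Longrightarrow> is_op S S (T a)" unfolding cp_map_def by blast
lemma cp_bcl: "cp_map S T \<Longrightarrow> bclinear (T a)" using cp_op is_op_bclinear by blast
lemma cp_add: "cp_map S T \<Longrightarrow> T (a + b) x = T a x + T b x" unfolding cp_map_def by metis
lemma cp_scaleC: "cp_map S T \<Longrightarrow> T (c *\<^sub>C a) x = c *\<^sub>C T a x" unfolding cp_map_def by metis
lemma cp_block: "cp_map S T \<Longrightarrow> positive_mat n M \<Longrightarrow> positive_block n (\<lambda>i j. T (M i j))"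
  unfolding cp_map_def by blast

lemma cp_mapI:
  assumes "\<And>a. is_op S S (T a)" "\<And>a b x. T (a + b) x = T a x + T b x" "\<And>c a x. T (c *\<^sub>C a) x = c *\<^sub>C T a x"
    "\<And>n M. positive_mat n M \<Longrightarrow> positive_block n (\<lambda>i j. T (M i j))"
  shows "cp_map S T"
  unfolding cp_map_def using assms by (auto simp: fun_eq_iff)

definition sf :: "('a::cstar_algebra \<Rightarrow> 'h::chilbert \<Rightarrow> 'h) \<Rightarrow> nat \<Rightarrow> (nat \<Rightarrow> 'a) \<Rightarrow> (nat \<Rightarrow> 'h) \<Rightarrow> nat \<Rightarrow> (nat \<Rightarrow> 'a) \<Rightarrow> (nat \<Rightarrow> 'h) \<Rightarrow> complex" where
  "sf T p b g q a f = (\<Sum>r<p. \<Sum>s<q. cinner (g r) (T (invol (b r) * a s) (f s)))"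

lemma positive_mat_rank1: "positive_mat p (\<lambda>r s. invol (b r) * (b s :: 'a::cstar_algebra))"
  unfolding positive_mat_def
proof (intro exI[of _ "\<lambda>k i. if k = 0 then b i else 0"] allI impI)
  fix i j assume "i < p" "j < p"
  then have "0 \<in> {..<p}" by simp
  then show "invol (b i) * b j = (\<Sum>k<p. invol (if k = 0 then b i else 0) * (if k = 0 then b j else 0))"
    by (simp add: if_distrib sum.delta' cong: if_cong)
qed

lemma cp_pos: "cp_map S T \<Longrightarrow> Im (sf T p b g p b g) = 0 \<and> 0 \<le> Re (sf T p b g p b g)"
  using cp_block[of S T p "\<lambda>r s. invol (b r) * b s", OF _ positive_mat_rank1]
  unfolding positive_block_def sf_def by blast

lemma sum_split_add: "(\<Sum>r<(p::nat)+q. h r) = (\<Sum>r<p. h r) + (\<Sum>s<q. h (p + s))"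
  by (induction q) (auto simp: add.assoc)

lemma sum_split_zero2: "(\<And>s. s < q \<Longrightarrow> h (p + s) = 0) \<Longrightarrow> (\<Sum>r<(p::nat)+q. h r) = (\<Sum>r<p. h r)"
  by (simp add: sum_split_add)

lemma sum_split_zero1: "(\<And>r. r < p \<Longrightarrow> h r = 0) \<Longrightarrow> (\<Sum>r<(p::nat)+q. h r) = (\<Sum>s<q. h (p + s))"
  by (simp add: sum_split_add)

lemma quad_CS:
  fixes A B C :: real
  assumes "B \<ge> 0" "C \<ge> 0" "\<And>r. 0 \<le> A - 2 * r * B + r\<^sup>2 * B * C"
  shows "B \<le> A * C"
proof (cases "B = 0")
  case True
  have "0 \<le> A" using assms(3)[of 0] by simp
  then show ?thesis using True assms(2) by simp
next
  case False
  then have Bp: "B > 0" using assms(1) by simp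
  show ?thesis
  proof (cases "C = 0")
    case True
    have "0 \<le> A - 2 * ((A + 1) / (2 * B)) * B" using assms(3)[of "(A + 1) / (2 * B)"] True by simp
    also have "\<dots> = -1" using Bp by (simp add: field_simps)
    finally show ?thesis by simp
  next
    case False
    then have Cp: "C > 0" using assms(2) by simp
    have "0 \<le> A - 2 * (1 / C) * B + (1 / C)\<^sup>2 * B * C" by (rule assms(3))
    also have "\<dots> = A - B / C" using Cp by (simp add: field_simps power2_eq_square)
    finally show ?thesis using Cp by (simp add: field_simps)
  qed
qed

lemma cp_CS:
  fixes T :: "'a::cstar_algebra \<Rightarrow> 'h::chilbert \<Rightarrow> 'h"
  assumes cp: "cp_map S T"
  shows "(cmod (sf T p b g q a f))\<^sup>2 \<le> Re (sf T p b g p b g) * Re (sf T q a f q a f)"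
proof -
  define L where "L = p + q"
  define c where "c r = (if r < p then b r else a (r - p))" for r
  define \<xi> where "\<xi> r = (if r < p then g r else 0)" for r
  define \<eta> where "\<eta> r = (if r < p then 0 else f (r - p))" for r
  define Sf where "Sf u v = (\<Sum>r<L. \<Sum>s<L. cinner (u r) (T (invol (c r) * c s) (v s)))" for u v
  have bcl: "bclinear (T x)" for x using cp_bcl[OF cp] .
  have pos: "Im (Sf u u) = 0 \<and> 0 \<le> Re (Sf u u)" for u
    using cp_pos[OF cp, of L c u] unfolding Sf_def sf_def .
  have expand: "Sf (\<lambda>r. u r + t *\<^sub>C v r) (\<lambda>r. u r + t *\<^sub>C v r) = Sf u u + t * Sf u v + cnj t * Sf v u + cnj t * t * Sf v v" for u v t
  proof -
    have "cinner (u r + t *\<^sub>C v r) (T x (u s + t *\<^sub>C v s)) = cinner (u r) (T x (u s)) + t * cinner (u r) (T x (v s)) + cnj t * cinner (v r) (T x (u s)) + cnj t * t * cinner (v r) (T x (v s))" for r s x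
      by (simp add: bclinear_add[OF bcl] bclinear_scaleC[OF bcl] cinner_add_left cinner_add_right cinner_scaleC_left cinner_scaleC_right algebra_simps)
    then show ?thesis unfolding Sf_def by (simp add: sum.distrib sum_distrib_left)
  qed
  have herm: "Sf v u = cnj (Sf u v)" for u v
  proof -
    have h1: "Im (Sf u u + 1 * Sf u v + cnj 1 * Sf v u + cnj 1 * 1 * Sf v v) = 0"
      using pos[of "\<lambda>r. u r + 1 *\<^sub>C v r"] unfolding expand[of u 1 v] by blast
    have h2: "Im (Sf u u + \<i> * Sf u v + cnj \<i> * Sf v u + cnj \<i> * \<i> * Sf v v) = 0"
      using pos[of "\<lambda>r. u r + \<i> *\<^sub>C v r"] unfolding expand[of u \<i> v] by blast
    from h1 pos[of u] pos[of v] have "Im (Sf u v) + Im (Sf v u) = 0" by simp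
    moreover from h2 pos[of u] pos[of v] have "Re (Sf u v) - Re (Sf v u) = 0" by simp
    ultimately show ?thesis by (simp add: complex_eq_iff)
  qed
  define \<beta> where "\<beta> = Sf \<xi> \<eta>"
  have quad: "0 \<le> Re (Sf \<xi> \<xi>) - 2 * r * (cmod \<beta>)\<^sup>2 + r\<^sup>2 * (cmod \<beta>)\<^sup>2 * Re (Sf \<eta> \<eta>)" for r :: real
  proof -
    define t where "t = - (complex_of_real r) * cnj \<beta>"
    have nb: "cnj \<beta> * \<beta> = complex_of_real ((cmod \<beta>)\<^sup>2)" using complex_norm_square[of \<beta>] by (simp add: mult.commute)
    have e1: "t * \<beta> = - complex_of_real (r * (cmod \<beta>)\<^sup>2)"
    proof -
      have "t * \<beta> = - (complex_of_real r * (cnj \<beta> * \<beta>))" unfolding t_def by (simp add: mult.assoc)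
      then show ?thesis by (simp add: nb)
    qed
    have e2: "cnj t * cnj \<beta> = - complex_of_real (r * (cmod \<beta>)\<^sup>2)"
    proof -
      have "cnj t * cnj \<beta> = cnj (t * \<beta>)" by simp
      then show ?thesis by (simp add: e1)
    qed
    have e3: "cnj t * t = complex_of_real (r\<^sup>2 * (cmod \<beta>)\<^sup>2)"
    proof -
      have "cnj t * t = complex_of_real (r * r) * (cnj \<beta> * \<beta>)" unfolding t_def by (simp add: algebra_simps)
      then show ?thesis by (simp add: nb power2_eq_square)
    qed
    have h: "Sf \<eta> \<xi> = cnj \<beta>" unfolding \<beta>_def by (rule herm)
    have "0 \<le> Re (Sf (\<lambda>r. \<xi> r + t *\<^sub>C \<eta> r) (\<lambda>r. \<xi> r + t *\<^sub>C \<eta> r))" using pos by blast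
    also have "Sf (\<lambda>r. \<xi> r + t *\<^sub>C \<eta> r) (\<lambda>r. \<xi> r + t *\<^sub>C \<eta> r) = Sf \<xi> \<xi> + t * \<beta> + cnj t * cnj \<beta> + cnj t * t * Sf \<eta> \<eta>"
      unfolding expand h \<beta>_def ..
    finally have "0 \<le> Re (Sf \<xi> \<xi> + t * \<beta> + cnj t * cnj \<beta> + cnj t * t * Sf \<eta> \<eta>)" .
    then show ?thesis unfolding e1 e2 e3 by (simp add: algebra_simps)
  qed
  have "(cmod \<beta>)\<^sup>2 \<le> Re (Sf \<xi> \<xi>) * Re (Sf \<eta> \<eta>)"
    by (rule quad_CS) (use quad pos in auto)
  moreover have "\<beta> = sf T p b g q a f"
  proof -
    have "\<beta> = (\<Sum>r<p. \<Sum>s<L. cinner (\<xi> r) (T (invol (c r) * c s) (\<eta> s)))"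
      unfolding \<beta>_def Sf_def L_def by (rule sum_split_zero2) (simp add: \<xi>_def)
    also have "\<dots> = (\<Sum>r<p. \<Sum>s<q. cinner (\<xi> r) (T (invol (c r) * c (p + s)) (\<eta> (p + s))))"
      unfolding L_def by (intro sum.cong refl sum_split_zero1) (simp add: \<eta>_def bclinear_zero[OF bcl])
    also have "\<dots> = sf T p b g q a f" unfolding sf_def by (intro sum.cong refl) (simp add: \<xi>_def \<eta>_def c_def)
    finally show ?thesis .
  qed
  moreover have "Sf \<xi> \<xi> = sf T p b g p b g"
  proof -
    have "Sf \<xi> \<xi> = (\<Sum>r<p. \<Sum>s<L. cinner (\<xi> r) (T (invol (c r) * c s) (\<xi> s)))"
      unfolding Sf_def L_def by (rule sum_split_zero2) (simp add: \<xi>_def)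
    also have "\<dots> = (\<Sum>r<p. \<Sum>s<p. cinner (\<xi> r) (T (invol (c r) * c s) (\<xi> s)))"
      unfolding L_def by (intro sum.cong refl sum_split_zero2) (simp add: \<xi>_def bclinear_zero[OF bcl])
    also have "\<dots> = sf T p b g p b g" unfolding sf_def by (intro sum.cong refl) (simp add: \<xi>_def c_def)
    finally show ?thesis .
  qed
  moreover have "Sf \<eta> \<eta> = sf T q a f q a f"
  proof -
    have "Sf \<eta> \<eta> = (\<Sum>r<q. \<Sum>s<L. cinner (\<eta> (p + r)) (T (invol (c (p + r)) * c s) (\<eta> s)))"
      unfolding Sf_def L_def by (rule sum_split_zero1) (simp add: \<eta>_def)
    also have "\<dots> = (\<Sum>r<q. \<Sum>s<q. cinner (\<eta> (p + r)) (T (invol (c (p + r)) * c (p + s)) (\<eta> (p + s))))"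
      unfolding L_def by (intro sum.cong refl sum_split_zero1) (simp add: \<eta>_def bclinear_zero[OF bcl])
    also have "\<dots> = sf T q a f q a f" unfolding sf_def by (intro sum.cong refl) (simp add: \<eta>_def c_def)
    finally show ?thesis .
  qed
  ultimately show ?thesis by simp
qed


(* ---- part 5 ---- *)


lemma sum_swap3: "(\<Sum>i\<in>A. \<Sum>j\<in>B. \<Sum>l\<in>C. F i j l) = (\<Sum>l\<in>C. \<Sum>i\<in>A. \<Sum>j\<in>B. F i j l)"
proof -
  have "(\<Sum>i\<in>A. \<Sum>j\<in>B. \<Sum>l\<in>C. F i j l) = (\<Sum>i\<in>A. \<Sum>l\<in>C. \<Sum>j\<in>B. F i j l)"
    by (rule sum.cong[OF refl], rule sum.swap)
  also have "\<dots> = (\<Sum>l\<in>C. \<Sum>i\<in>A. \<Sum>j\<in>B. F i j l)" by (rule sum.swap)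
  finally show ?thesis .
qed

lemma cp_sum_maps:
  fixes \<theta> :: "'l \<Rightarrow> 'a::cstar_algebra \<Rightarrow> 'h::chilbert \<Rightarrow> 'h"
  assumes S: "csubspace S" and cp: "\<And>l. l \<in> I \<Longrightarrow> cp_map S (\<theta> l)"
  shows "cp_map S (\<lambda>a x. \<Sum>l\<in>I. \<theta> l a x)"
proof (rule cp_mapI)
  fix a
  show "is_op S S (\<lambda>x. \<Sum>l\<in>I. \<theta> l a x)"
  proof (rule is_opI)
    show "bclinear (\<lambda>x. \<Sum>l\<in>I. \<theta> l a x)" by (rule bclinear_sum_fun) (rule cp_bcl[OF cp])
    show "csubspace S" by (rule S)
    show "(\<Sum>l\<in>I. \<theta> l a x) \<in> S" for x by (rule csubspace_sum[OF S]) (rule is_op_range[OF cp_op[OF cp] S])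
    show "(\<Sum>l\<in>I. \<theta> l a (proj S x)) = (\<Sum>l\<in>I. \<theta> l a x)" for x
      by (rule sum.cong[OF refl]) (rule is_op_right[OF cp_op[OF cp] S])
  qed
next
  fix a b x
  have "(\<Sum>l\<in>I. \<theta> l (a + b) x) = (\<Sum>l\<in>I. \<theta> l a x + \<theta> l b x)"
    by (rule sum.cong[OF refl]) (rule cp_add[OF cp])
  then show "(\<Sum>l\<in>I. \<theta> l (a + b) x) = (\<Sum>l\<in>I. \<theta> l a x) + (\<Sum>l\<in>I. \<theta> l b x)"
    by (simp add: sum.distrib)
next
  fix c a x
  have "(\<Sum>l\<in>I. \<theta> l (c *\<^sub>C a) x) = (\<Sum>l\<in>I. c *\<^sub>C \<theta> l a x)"
    by (rule sum.cong[OF refl]) (rule cp_scaleC[OF cp])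
  then show "(\<Sum>l\<in>I. \<theta> l (c *\<^sub>C a) x) = c *\<^sub>C (\<Sum>l\<in>I. \<theta> l a x)"
    by (simp add: scaleC_sum_right)
next
  fix n and M :: "nat \<Rightarrow> nat \<Rightarrow> 'a" assume M: "positive_mat n M"
  show "positive_block n (\<lambda>i j x. \<Sum>l\<in>I. \<theta> l (M i j) x)"
    unfolding positive_block_def
  proof
    fix \<xi> :: "nat \<Rightarrow> 'h"
    have eq: "(\<Sum>i<n. \<Sum>j<n. cinner (\<xi> i) (\<Sum>l\<in>I. \<theta> l (M i j) (\<xi> j))) = (\<Sum>l\<in>I. \<Sum>i<n. \<Sum>j<n. cinner (\<xi> i) (\<theta> l (M i j) (\<xi> j)))"
      unfolding cinner_sum_right by (rule sum_swap3)
    have pl: "Im (\<Sum>i<n. \<Sum>j<n. cinner (\<xi> i) (\<theta> l (M i j) (\<xi> j))) = 0 \<and> 0 \<le> Re (\<Sum>i<n. \<Sum>j<n. cinner (\<xi> i) (\<theta> l (M i j) (\<xi> j)))"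
      if "l \<in> I" for l
      using cp_block[OF cp[OF that] M] unfolding positive_block_def by blast
    show "Im (\<Sum>i<n. \<Sum>j<n. cinner (\<xi> i) (\<Sum>l\<in>I. \<theta> l (M i j) (\<xi> j))) = 0 \<and> 0 \<le> Re (\<Sum>i<n. \<Sum>j<n. cinner (\<xi> i) (\<Sum>l\<in>I. \<theta> l (M i j) (\<xi> j)))"
      unfolding eq Im_sum Re_sum using pl by (auto intro: sum_nonneg)
  qed
qed

lemma cp_conj:
  fixes \<psi> :: "'a::cstar_algebra \<Rightarrow> 'h::chilbert \<Rightarrow> 'h"
  assumes S: "csubspace S" and cp: "cp_map S \<psi>" and T: "is_op S S T"
  shows "cp_map S (\<lambda>a x. adj T (\<psi> a (T x)))"
proof (rule cp_mapI)
  have Tb: "bclinear T" using T by (rule is_op_bclinear)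
  have adjb: "bclinear (adj T)" using Tb by (rule bclinear_adj)
  have adjop: "is_op S S (adj T)" using T S S by (rule is_op_adj)
  fix a
  show "is_op S S (\<lambda>x. adj T (\<psi> a (T x)))"
    by (rule is_op_comp'[OF adjop is_op_comp'[OF cp_op[OF cp] T S S] S S])
next
  have Tb: "bclinear T" using T by (rule is_op_bclinear)
  have adjb: "bclinear (adj T)" using Tb by (rule bclinear_adj)
  fix a b x
  show "adj T (\<psi> (a + b) (T x)) = adj T (\<psi> a (T x)) + adj T (\<psi> b (T x))"
    by (simp add: cp_add[OF cp] bclinear_add[OF adjb])
next
  have Tb: "bclinear T" using T by (rule is_op_bclinear)
  have adjb: "bclinear (adj T)" using Tb by (rule bclinear_adj)
  fix c a x
  show "adj T (\<psi> (c *\<^sub>C a) (T x)) = c *\<^sub>C adj T (\<psi> a (T x))"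
    by (simp add: cp_scaleC[OF cp] bclinear_scaleC[OF adjb])
next
  have Tb: "bclinear T" using T by (rule is_op_bclinear)
  fix n and M :: "nat \<Rightarrow> nat \<Rightarrow> 'a" assume M: "positive_mat n M"
  show "positive_block n (\<lambda>i j x. adj T (\<psi> (M i j) (T x)))"
    unfolding positive_block_def
  proof
    fix \<xi> :: "nat \<Rightarrow> 'h"
    have eq: "(\<Sum>i<n. \<Sum>j<n. cinner (\<xi> i) (adj T (\<psi> (M i j) (T (\<xi> j))))) = (\<Sum>i<n. \<Sum>j<n. cinner (T (\<xi> i)) (\<psi> (M i j) (T (\<xi> j))))"
      by (simp add: adj_cinner_right[OF Tb])
    show "Im (\<Sum>i<n. \<Sum>j<n. cinner (\<xi> i) (adj T (\<psi> (M i j) (T (\<xi> j))))) = 0 \<and> 0 \<le> Re (\<Sum>i<n. \<Sum>j<n. cinner (\<xi> i) (adj T (\<psi> (M i j) (T (\<xi> j)))))"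
      unfolding eq using spec[OF cp_block[OF cp M, unfolded positive_block_def], of "\<lambda>i. T (\<xi> i)"] by simp
  qed
qed

lemma cp_compress:
  fixes \<theta> :: "'a::cstar_algebra \<Rightarrow> 'h::chilbert \<Rightarrow> 'h"
  assumes cp: "cp_map S \<theta>" and M: "csubspace M"
  shows "cp_map M (\<lambda>a x. proj M (\<theta> a (proj M x)))"
proof (rule cp_mapI)
  fix a
  show "is_op M M (\<lambda>x. proj M (\<theta> a (proj M x)))"
  proof (rule is_opI)
    show "bclinear (\<lambda>x. proj M (\<theta> a (proj M x)))"
      by (rule bclinear_comp'[OF bclinear_proj[OF M] bclinear_comp'[OF cp_bcl[OF cp] bclinear_proj[OF M]]])
    show "csubspace M" by (rule M)
    show "proj M (\<theta> a (proj M x)) \<in> M" for x by (rule proj_in[OF M])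
    show "proj M (\<theta> a (proj M (proj M x))) = proj M (\<theta> a (proj M x))" for x by (simp add: proj_idem[OF M])
  qed
next
  fix a b x
  show "proj M (\<theta> (a + b) (proj M x)) = proj M (\<theta> a (proj M x)) + proj M (\<theta> b (proj M x))"
    by (simp add: cp_add[OF cp] proj_add[OF M])
next
  fix c a x
  show "proj M (\<theta> (c *\<^sub>C a) (proj M x)) = c *\<^sub>C proj M (\<theta> a (proj M x))"
    by (simp add: cp_scaleC[OF cp] proj_scaleC[OF M])
next
  fix n and Mt :: "nat \<Rightarrow> nat \<Rightarrow> 'a" assume Mt: "positive_mat n Mt"
  show "positive_block n (\<lambda>i j x. proj M (\<theta> (Mt i j) (proj M x)))"
    unfolding positive_block_def
  proof
    fix \<xi> :: "nat \<Rightarrow> 'h"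
    have eq: "(\<Sum>i<n. \<Sum>j<n. cinner (\<xi> i) (proj M (\<theta> (Mt i j) (proj M (\<xi> j))))) = (\<Sum>i<n. \<Sum>j<n. cinner (proj M (\<xi> i)) (\<theta> (Mt i j) (proj M (\<xi> j))))"
      by (simp add: proj_selfadj[OF M])
    show "Im (\<Sum>i<n. \<Sum>j<n. cinner (\<xi> i) (proj M (\<theta> (Mt i j) (proj M (\<xi> j))))) = 0 \<and> 0 \<le> Re (\<Sum>i<n. \<Sum>j<n. cinner (\<xi> i) (proj M (\<theta> (Mt i j) (proj M (\<xi> j)))))"
      unfolding eq using spec[OF cp_block[OF cp Mt, unfolded positive_block_def], of "\<lambda>i. proj M (\<xi> i)"] by simp
  qed
qed

lemma stine_cp:
  fixes \<pi> :: "'a::cstar_algebra \<Rightarrow> 'k::chilbert \<Rightarrow> 'k" and V :: "'h::chilbert \<Rightarrow> 'k"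
  assumes H: "csubspace H" and K: "csubspace K" and rep: "star_rep K \<pi>" and V: "is_op H K V"
    and E: "is_op K K E" and comm: "\<And>a x. E (\<pi> a x) = \<pi> a (E x)"
    and Epos: "\<And>\<eta>. \<eta> \<in> K \<Longrightarrow> Im (cinner \<eta> (E \<eta>)) = 0 \<and> 0 \<le> Re (cinner \<eta> (E \<eta>))"
  shows "cp_map H (\<lambda>a x. adj V (\<pi> a (E (V x))))"
proof (rule cp_mapI)
  have Vb: "bclinear V" using V by (rule is_op_bclinear)
  have adjb: "bclinear (adj V)" using Vb by (rule bclinear_adj)
  have adjop: "is_op K H (adj V)" using V H K by (rule is_op_adj)
  have Eb: "bclinear E" using E by (rule is_op_bclinear)
  {
    fix a
    show "is_op H H (\<lambda>x. adj V (\<pi> a (E (V x))))"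
      by (rule is_op_comp'[OF adjop is_op_comp'[OF rep_op[OF rep K] is_op_comp'[OF E V H K] H K] H H])
  }
  {
    fix a b x
    show "adj V (\<pi> (a + b) (E (V x))) = adj V (\<pi> a (E (V x))) + adj V (\<pi> b (E (V x)))"
      by (simp add: rep_add[OF rep K] bclinear_add[OF adjb])
  }
  {
    fix c a x
    show "adj V (\<pi> (c *\<^sub>C a) (E (V x))) = c *\<^sub>C adj V (\<pi> a (E (V x)))"
      by (simp add: rep_scaleC[OF rep K] bclinear_scaleC[OF adjb])
  }
  {
    fix n and M :: "nat \<Rightarrow> nat \<Rightarrow> 'a" assume M: "positive_mat n M"
    then obtain X where X: "\<forall>i<n. \<forall>j<n. M i j = (\<Sum>k<n. invol (X k i) * X k j)" unfolding positive_mat_def by blast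
    show "positive_block n (\<lambda>i j x. adj V (\<pi> (M i j) (E (V x))))"
      unfolding positive_block_def
    proof
      fix \<xi> :: "nat \<Rightarrow> 'h"
      define \<eta> where "\<eta> k = (\<Sum>j<n. \<pi> (X k j) (V (\<xi> j)))" for k
      have trm: "cinner (\<xi> i) (adj V (\<pi> (M i j) (E (V (\<xi> j))))) = (\<Sum>k<n. cinner (\<pi> (X k i) (V (\<xi> i))) (E (\<pi> (X k j) (V (\<xi> j)))))"
        if "i < n" "j < n" for i j
      proof -
        have "cinner (\<xi> i) (adj V (\<pi> (M i j) (E (V (\<xi> j))))) = cinner (V (\<xi> i)) (\<pi> (M i j) (E (V (\<xi> j))))"
          by (rule adj_cinner_right[OF Vb])
        also have "\<dots> = (\<Sum>k<n. cinner (V (\<xi> i)) (\<pi> (invol (X k i)) (\<pi> (X k j) (E (V (\<xi> j))))))"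
          using X that by (simp add: rep_sum[OF rep K] rep_mult[OF rep K] cinner_sum_right)
        also have "\<dots> = (\<Sum>k<n. cinner (\<pi> (X k i) (V (\<xi> i))) (E (\<pi> (X k j) (V (\<xi> j)))))"
          by (rule sum.cong[OF refl]) (simp add: rep_cinner[OF rep K] comm)
        finally show ?thesis .
      qed
      have "(\<Sum>i<n. \<Sum>j<n. cinner (\<xi> i) (adj V (\<pi> (M i j) (E (V (\<xi> j)))))) = (\<Sum>i<n. \<Sum>j<n. \<Sum>k<n. cinner (\<pi> (X k i) (V (\<xi> i))) (E (\<pi> (X k j) (V (\<xi> j)))))"
        using trm by simp
      also have "\<dots> = (\<Sum>k<n. \<Sum>i<n. \<Sum>j<n. cinner (\<pi> (X k i) (V (\<xi> i))) (E (\<pi> (X k j) (V (\<xi> j)))))"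
        by (rule sum_swap3)
      also have "\<dots> = (\<Sum>k<n. cinner (\<eta> k) (E (\<eta> k)))"
      proof (rule sum.cong[OF refl])
        fix k
        have "cinner (\<eta> k) (E (\<eta> k)) = (\<Sum>i<n. cinner (\<pi> (X k i) (V (\<xi> i))) (E (\<eta> k)))"
          unfolding \<eta>_def[of k] by (rule cinner_sum_left)
        also have "\<dots> = (\<Sum>i<n. \<Sum>j<n. cinner (\<pi> (X k i) (V (\<xi> i))) (E (\<pi> (X k j) (V (\<xi> j)))))"
          unfolding \<eta>_def[of k] by (simp add: bclinear_sum[OF Eb] cinner_sum_right)
        finally show "(\<Sum>i<n. \<Sum>j<n. cinner (\<pi> (X k i) (V (\<xi> i))) (E (\<pi> (X k j) (V (\<xi> j))))) = cinner (\<eta> k) (E (\<eta> k))" by simp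
      qed
      finally have eq: "(\<Sum>i<n. \<Sum>j<n. cinner (\<xi> i) (adj V (\<pi> (M i j) (E (V (\<xi> j)))))) = (\<Sum>k<n. cinner (\<eta> k) (E (\<eta> k)))" .
      have \<eta>K: "\<eta> k \<in> K" for k unfolding \<eta>_def by (rule csubspace_sum[OF K]) (rule rep_range[OF rep K])
      show "Im (\<Sum>i<n. \<Sum>j<n. cinner (\<xi> i) (adj V (\<pi> (M i j) (E (V (\<xi> j)))))) = 0 \<and> 0 \<le> Re (\<Sum>i<n. \<Sum>j<n. cinner (\<xi> i) (adj V (\<pi> (M i j) (E (V (\<xi> j))))))"
        unfolding eq Im_sum Re_sum using Epos[OF \<eta>K] by (auto intro: sum_nonneg)
    qed
  }
qed

lemma span_dense_prop:
  assumes "closure (span G) = K" "\<And>g. g \<in> G \<Longrightarrow> P g" "closed {x. P x}" "subspace {x. P x}" "x \<in> K"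
  shows "P x"
proof -
  have "span G \<subseteq> {x. P x}" using assms(2,4) by (intro span_minimal) auto
  then have "closure (span G) \<subseteq> {x. P x}" using assms(3) by (rule closure_minimal)
  then show ?thesis using assms(1,5) by blast
qed


(* ---- part 6 ---- *)


lemma subspace_cinner_left0: "subspace {y. cinner y (w::'h::chilbert) = 0}"
  by (rule subspaceI) (auto simp: cinner_add_left scaleR_scaleC cinner_scaleC_left)

lemma closed_cinner_left0: "closed {y. cinner y (w::'h::chilbert) = 0}"
  using closed_Collect_eq[OF continuous_cinner_left[of UNIV w] continuous_on_const] by simp

lemma subspace_kernel_bcl: "bclinear G \<Longrightarrow> subspace {x. G x = 0}"
  by (rule subspaceI) (auto simp: bclinear_zero bclinear_add scaleR_scaleC bclinear_scaleC)

lemma closed_kernel_bcl: "bclinear G \<Longrightarrow> closed {x. G x = 0}"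
proof -
  assume "bclinear G"
  then have "continuous_on UNIV G" by (rule bclinear_continuous)
  then show ?thesis using closed_Collect_eq[of G "\<lambda>_. 0"] by auto
qed

lemma adj_range:
  assumes B: "bclinear B" and BK: "\<And>x. B (proj K x) = B x" and K: "csubspace K"
  shows "adj B y \<in> K"
proof -
  have "B = B \<circ> proj K" using BK by (simp add: fun_eq_iff)
  then have "adj B = adj (B \<circ> proj K)" by simp
  also have "\<dots> = proj K \<circ> adj B" by (simp add: adj_comp B bclinear_proj K adj_proj)
  finally have "adj B y = proj K (adj B y)" by (metis comp_apply)
  then show ?thesis by (metis proj_in K)
qed

lemma schur:
  fixes \<phi> :: "'a::cstar_algebra \<Rightarrow> 'h::chilbert \<Rightarrow> 'h" and \<pi> :: "'a \<Rightarrow> 'k::chilbert \<Rightarrow> 'k"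
    and V :: "'h \<Rightarrow> 'k" and B :: "'k \<Rightarrow> 'l::chilbert"
  assumes H: "csubspace H" and pure: "pure_cp H \<phi>" and ms: "min_stinespring H \<phi> K \<pi> V"
    and B: "bclinear B" and BK: "\<And>x. B (proj K x) = B x"
    and comm: "\<And>a x. adj B (B (\<pi> a x)) = \<pi> a (adj B (B x))"
  shows "\<exists>c. \<forall>x. adj B (B x) = c *\<^sub>C proj K x"
proof -
  have K: "csubspace K" using ms_K[OF ms] .
  have rep: "star_rep K \<pi>" using ms_rep[OF ms] .
  have V: "is_op H K V" using ms_V[OF ms] .
  have Vb: "bclinear V" using is_op_bclinear[OF V] .
  have pib: "bclinear (\<pi> a)" for a using rep_bcl[OF rep K] .
  obtain KB where KB: "KB > 0" "\<forall>x. norm (B x) \<le> norm x * KB" using bclinear_bounded[OF B] by blast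
  define lam where "lam = KB\<^sup>2 + 1"
  have "0 \<le> KB\<^sup>2" by simp
  then have lam: "lam > 0" unfolding lam_def by linarith
  define E where "E x = complex_of_real (1/lam) *\<^sub>C adj B (B x)" for x
  have adjBb: "bclinear (adj B)" using bclinear_adj[OF B] .
  have adjBK: "adj B y \<in> K" for y by (rule adj_range[OF B _ K]) (rule BK)
  have Eb: "bclinear E" unfolding E_def by (rule bclinear_scaleC_fun[OF bclinear_comp'[OF adjBb B]])
  have Eop: "is_op K K E"
    by (rule is_opI[OF Eb K]) (auto simp: E_def csubspace_scaleC[OF K adjBK] BK)
  have Ecomm: "E (\<pi> a x) = \<pi> a (E x)" for a x
    unfolding E_def by (simp add: comm bclinear_scaleC[OF pib])
  have EBinner: "cinner \<eta> (E \<eta>) = complex_of_real ((1/lam) * (norm (B \<eta>))\<^sup>2)" for \<eta>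
  proof -
    have "cinner \<eta> (E \<eta>) = complex_of_real (1/lam) * cinner \<eta> (adj B (B \<eta>))"
      unfolding E_def by (rule cinner_scaleC_right)
    also have "cinner \<eta> (adj B (B \<eta>)) = cinner (B \<eta>) (B \<eta>)" by (rule adj_cinner_right[OF B])
    finally show ?thesis by (simp add: cinner_self_norm)
  qed
  have Bbound: "(norm (B \<eta>))\<^sup>2 \<le> KB\<^sup>2 * (norm \<eta>)\<^sup>2" for \<eta>
  proof -
    have "norm (B \<eta>) \<le> norm \<eta> * KB" using KB by blast
    then have "(norm (B \<eta>))\<^sup>2 \<le> (norm \<eta> * KB)\<^sup>2" by (rule power_mono) simp
    then show ?thesis by (simp add: power_mult_distrib mult.commute)
  qed
  define \<theta> where "\<theta> a x = adj V (\<pi> a (E (V x)))" for a x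
  have cp\<theta>: "cp_map H \<theta>" unfolding \<theta>_def
    apply (rule stine_cp[OF H K rep V Eop])
     apply (rule Ecomm)
    apply (simp add: EBinner lam less_imp_le)
    done
  define F where "F x = proj K x - E x" for x
  have Fb: "bclinear F" unfolding F_def by (rule bclinear_diff_fun[OF bclinear_proj[OF K] Eb])
  have Fop: "is_op K K F"
  proof (rule is_opI[OF Fb K])
    show "F x \<in> K" for x unfolding F_def
      by (rule csubspace_diff[OF K proj_in[OF K] is_op_range[OF Eop K]])
    show "F (proj K x) = F x" for x unfolding F_def by (simp add: proj_idem[OF K] is_op_right[OF Eop K])
  qed
  have Fcomm: "F (\<pi> a x) = \<pi> a (F x)" for a x
    unfolding F_def by (simp add: Ecomm bclinear_diff[OF pib] proj_id rep_range[OF rep K] rep_right[OF rep K])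
  have Fpos: "Im (cinner \<eta> (F \<eta>)) = 0 \<and> 0 \<le> Re (cinner \<eta> (F \<eta>))" if "\<eta> \<in> K" for \<eta>
  proof -
    have "cinner \<eta> (F \<eta>) = cinner \<eta> \<eta> - cinner \<eta> (E \<eta>)" unfolding F_def using that
      by (simp add: proj_id cinner_diff_right)
    also have "\<dots> = complex_of_real ((norm \<eta>)\<^sup>2 - (1/lam) * (norm (B \<eta>))\<^sup>2)" by (simp add: EBinner cinner_self_norm)
    finally have e: "cinner \<eta> (F \<eta>) = complex_of_real ((norm \<eta>)\<^sup>2 - (1/lam) * (norm (B \<eta>))\<^sup>2)" .
    have "(norm (B \<eta>))\<^sup>2 \<le> lam * (norm \<eta>)\<^sup>2"
    proof -
      have "KB\<^sup>2 * (norm \<eta>)\<^sup>2 \<le> lam * (norm \<eta>)\<^sup>2" unfolding lam_def by (intro mult_right_mono) auto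
      then show ?thesis using Bbound[of \<eta>] by linarith
    qed
    then have "(1/lam) * (norm (B \<eta>))\<^sup>2 \<le> (norm \<eta>)\<^sup>2" using lam by (simp add: field_simps)
    then show ?thesis unfolding e by simp
  qed
  have cpF: "cp_map H (\<lambda>a x. adj V (\<pi> a (F (V x))))" 
    apply (rule stine_cp[OF H K rep V Fop])
     apply (rule Fcomm)
    apply (erule Fpos)
    done
  have diff_eq: "(\<lambda>a x. \<phi> a x - \<theta> a x) = (\<lambda>a x. adj V (\<pi> a (F (V x))))"
  proof (intro ext)
    fix a x
    have "\<phi> a x - \<theta> a x = adj V (\<pi> a (V x)) - adj V (\<pi> a (E (V x)))" by (simp add: ms_phi[OF ms] \<theta>_def)
    also have "\<dots> = adj V (\<pi> a (V x - E (V x)))" by (simp add: bclinear_diff[OF bclinear_adj[OF Vb]] bclinear_diff[OF pib])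
    also have "V x - E (V x) = F (V x)" unfolding F_def by (simp add: is_op_left[OF V K])
    finally show "\<phi> a x - \<theta> a x = adj V (\<pi> a (F (V x)))" .
  qed
  have cpdiff: "cp_map H (\<lambda>a x. \<phi> a x - \<theta> a x)" using cpF diff_eq by simp
  obtain c where c: "\<forall>a. \<theta> a = (\<lambda>x. c *\<^sub>C \<phi> a x)"
    using pure cp\<theta> cpdiff unfolding pure_cp_def by blast
  define G where "G x = E x - c *\<^sub>C proj K x" for x
  have Gb: "bclinear G" unfolding G_def by (rule bclinear_diff_fun[OF Eb bclinear_scaleC_fun[OF bclinear_proj[OF K]]])
  have Gop: "is_op K K G"
  proof (rule is_opI[OF Gb K])
    show "G x \<in> K" for x unfolding G_def
      by (rule csubspace_diff[OF K is_op_range[OF Eop K] csubspace_scaleC[OF K proj_in[OF K]]])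
    show "G (proj K x) = G x" for x unfolding G_def by (simp add: proj_idem[OF K] is_op_right[OF Eop K])
  qed
  have Gcomm: "G (\<pi> a x) = \<pi> a (G x)" for a x
    unfolding G_def by (simp add: Ecomm bclinear_diff[OF pib] bclinear_scaleC[OF pib] proj_id rep_range[OF rep K] rep_right[OF rep K])
  have G0: "adj V (\<pi> a (G (V h))) = 0" for a h
  proof -
    have "adj V (\<pi> a (G (V h))) = adj V (\<pi> a (E (V h))) - c *\<^sub>C adj V (\<pi> a (V h))"
      unfolding G_def by (simp add: bclinear_diff[OF bclinear_adj[OF Vb]] bclinear_diff[OF pib]
          bclinear_scaleC[OF pib] bclinear_scaleC[OF bclinear_adj[OF Vb]] is_op_left[OF V K])
    also have "\<dots> = \<theta> a h - c *\<^sub>C \<phi> a h" by (simp add: \<theta>_def ms_phi[OF ms])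
    also have "\<dots> = 0" using c by simp
    finally show ?thesis .
  qed
  define gens where "gens = (\<Union>a. (\<lambda>h. \<pi> a (V h)) ` H)"
  have dense: "closure (span gens) = K" using ms_dense[OF ms] unfolding gens_def .
  have orth: "cinner g' (G g) = 0" if g1: "g \<in> gens" and g2: "g' \<in> gens" for g g'
  proof -
    obtain a h where g: "g = \<pi> a (V h)" using g1 unfolding gens_def by blast
    obtain b h' where g': "g' = \<pi> b (V h')" using g2 unfolding gens_def by blast
    have "cinner g' (G g) = cinner (\<pi> b (V h')) (\<pi> a (G (V h)))" using Gcomm g g' by simp
    also have "\<dots> = cinner (V h') (\<pi> (invol b) (\<pi> a (G (V h))))" by (rule rep_cinner[OF rep K])
    also have "\<dots> = cinner (V h') (\<pi> (invol b * a) (G (V h)))" by (simp add: rep_mult[OF rep K])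
    also have "\<dots> = cinner h' (adj V (\<pi> (invol b * a) (G (V h))))" by (simp add: adj_cinner_right[OF Vb])
    also have "\<dots> = 0" using G0 by simp
    finally show ?thesis .
  qed
  have Ggen: "G g = 0" if gg: "g \<in> gens" for g
  proof -
    have "cinner y (G g) = 0" if "y \<in> K" for y
      by (rule span_dense_prop[OF dense, where P = "\<lambda>y. cinner y (G g) = 0"])
         (use orth[OF gg] subspace_cinner_left0 closed_cinner_left0 that in auto)
    then have "cinner (G g) (G g) = 0" using is_op_range[OF Gop K] by blast
    then show ?thesis by simp
  qed
  have GK: "G x = 0" if "x \<in> K" for x
    by (rule span_dense_prop[OF dense, where P = "\<lambda>x. G x = 0"])
       (use Ggen subspace_kernel_bcl[OF Gb] closed_kernel_bcl[OF Gb] that in auto)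
  have Gall: "G x = 0" for x
    using GK[OF proj_in[OF K]] is_op_right[OF Gop K] by simp
  have "adj B (B x) = (complex_of_real lam * c) *\<^sub>C proj K x" for x
  proof -
    have "E x = c *\<^sub>C proj K x" using Gall[of x] unfolding G_def by simp
    then have "complex_of_real lam *\<^sub>C E x = complex_of_real lam *\<^sub>C (c *\<^sub>C proj K x)" by simp
    moreover have "complex_of_real lam *\<^sub>C E x = adj B (B x)" unfolding E_def using lam by (simp add: of_real_divide[symmetric] of_real_mult[symmetric])
    ultimately show ?thesis by simp
  qed
  then show ?thesis by blast
qed


(* ---- part 7 ---- *)


section \<open>dense-domain helpers\<close>

lemma bound_closure:
  fixes z :: "'h::chilbert"
  assumes "\<And>x. x \<in> D \<Longrightarrow> cmod (cinner z x) \<le> C * norm x" "x \<in> closure D"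
  shows "cmod (cinner z x) \<le> C * norm x"
proof -
  have c1: "continuous_on UNIV (\<lambda>x. cmod (cinner z x))" by (rule continuous_on_norm[OF continuous_cinner_right])
  have c2: "continuous_on UNIV (\<lambda>x. C * norm x)" by (intro continuous_on_mult continuous_on_const continuous_on_norm continuous_on_id)
  have cl: "closed {x. cmod (cinner z x) \<le> C * norm x}" by (rule closed_Collect_le[OF c1 c2])
  have "closure D \<subseteq> {x. cmod (cinner z x) \<le> C * norm x}"
    by (rule closure_minimal[OF _ cl]) (use assms(1) in auto)
  then show ?thesis using assms(2) by blast
qed

lemma norm_from_inner_bound:
  fixes z :: "'h::chilbert"
  assumes "z \<in> closure D" "\<And>x. x \<in> D \<Longrightarrow> cmod (cinner z x) \<le> C * norm x" "C \<ge> 0"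
  shows "norm z \<le> C"
proof -
  have "cmod (cinner z z) \<le> C * norm z" by (rule bound_closure[OF assms(2) assms(1)])
  then have "(norm z)\<^sup>2 \<le> C * norm z" by (simp add: cinner_self_norm norm_power)
  then show ?thesis using assms(3)
    by (cases "norm z = 0") (auto simp: power2_eq_square)
qed

lemma dense_unique:
  fixes z z' :: "'h::chilbert"
  assumes D0: "0 \<in> D" and Dadd: "\<And>x y. x\<in>D \<Longrightarrow> y\<in>D \<Longrightarrow> x+y \<in> D" and Dsc: "\<And>c x. x\<in>D \<Longrightarrow> c *\<^sub>C x \<in> D"
    and z: "z \<in> closure D" and z': "z' \<in> closure D" and eq: "\<And>x. x \<in> D \<Longrightarrow> cinner z x = cinner z' x"
  shows "z = z'"
proof -
  have cD: "csubspace (closure D)" by (rule closure_csubspace[OF D0 Dadd Dsc])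
  have "z - z' = 0"
  proof (rule dense_orth)
    show "z - z' \<in> closure D" using cD z z' by (rule csubspace_diff)
    show "cinner (z - z') x = 0" if "x \<in> D" for x using eq[OF that] by (simp add: cinner_diff_left)
  qed
  then show ?thesis by simp
qed

lemma form_op:
  fixes Bv :: "'k::chilbert \<Rightarrow> 'h::chilbert \<Rightarrow> complex"
  assumes D0: "0 \<in> D" and Dadd: "\<And>x y. x\<in>D \<Longrightarrow> y\<in>D \<Longrightarrow> x+y \<in> D" and Dsc: "\<And>c x. x\<in>D \<Longrightarrow> c *\<^sub>C x \<in> D"
    and DK: "closure D = Kk"
    and E0: "0 \<in> E" and Eadd: "\<And>x y. x\<in>E \<Longrightarrow> y\<in>E \<Longrightarrow> x+y \<in> E" and Esc: "\<And>c x. x\<in>E \<Longrightarrow> c *\<^sub>C x \<in> E"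
    and EK: "closure E = Ki"
    and B1add: "\<And>y y' x. y\<in>D \<Longrightarrow> y'\<in>D \<Longrightarrow> x\<in>E \<Longrightarrow> Bv (y + y') x = Bv y x + Bv y' x"
    and B1sc: "\<And>c y x. y\<in>D \<Longrightarrow> x\<in>E \<Longrightarrow> Bv (c *\<^sub>C y) x = cnj c * Bv y x"
    and B2add: "\<And>y x x'. y\<in>D \<Longrightarrow> x\<in>E \<Longrightarrow> x'\<in>E \<Longrightarrow> Bv y (x + x') = Bv y x + Bv y x'"
    and B2sc: "\<And>c y x. y\<in>D \<Longrightarrow> x\<in>E \<Longrightarrow> Bv y (c *\<^sub>C x) = c * Bv y x"
    and Bb: "\<And>y x. y\<in>D \<Longrightarrow> x\<in>E \<Longrightarrow> cmod (Bv y x) \<le> norm y * norm x"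
  shows "\<exists>W. is_op Ki Kk W \<and> (\<forall>y\<in>D. \<forall>x\<in>E. cinner y (W x) = Bv y x)"
proof -
  have cKk: "csubspace Kk" unfolding DK[symmetric] by (rule closure_csubspace[OF D0 Dadd Dsc])
  have cKi: "csubspace Ki" unfolding EK[symmetric] by (rule closure_csubspace[OF E0 Eadd Esc])
  have ex_u: "\<exists>z\<in>closure E. \<forall>x\<in>E. Bv y x = cinner z x" if y: "y \<in> D" for y
    by (rule riesz_dense[OF E0 Eadd Esc, where C = "norm y"]) (auto simp: B2add[OF y] B2sc[OF y] Bb[OF y])
  define u where "u y = (SOME z. z \<in> closure E \<and> (\<forall>x\<in>E. Bv y x = cinner z x))" for y
  have u: "u y \<in> Ki \<and> (\<forall>x\<in>E. Bv y x = cinner (u y) x)" if "y \<in> D" for y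
    using someI_ex[OF ex_u[OF that, unfolded Bex_def]] unfolding u_def EK by blast
  have uniqE: "z = z'" if "z \<in> Ki" "z' \<in> Ki" "\<And>x. x \<in> E \<Longrightarrow> cinner z x = cinner z' x" for z z'
    by (rule dense_unique[OF E0 Eadd Esc]) (use that EK in auto)
  have uniqD: "z = z'" if "z \<in> Kk" "z' \<in> Kk" "\<And>x. x \<in> D \<Longrightarrow> cinner z x = cinner z' x" for z z'
    by (rule dense_unique[OF D0 Dadd Dsc]) (use that DK in auto)
  have u_add: "u (y + y') = u y + u y'" if yy: "y \<in> D" "y' \<in> D" for y y'
  proof (rule uniqE)
    show "u (y+y') \<in> Ki" using u[OF Dadd[OF yy]] by blast
    show "u y + u y' \<in> Ki" using u[OF yy(1)] u[OF yy(2)] csubspace_add[OF cKi] by blast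
    fix x assume x: "x \<in> E"
    show "cinner (u (y+y')) x = cinner (u y + u y') x"
      using u[OF Dadd[OF yy]] u[OF yy(1)] u[OF yy(2)] B1add[OF yy x] x by (simp add: cinner_add_left)
  qed
  have u_sc: "u (c *\<^sub>C y) = c *\<^sub>C u y" if yy: "y \<in> D" for c y
  proof (rule uniqE)
    show "u (c *\<^sub>C y) \<in> Ki" using u[OF Dsc[OF yy]] by blast
    show "c *\<^sub>C u y \<in> Ki" using u[OF yy] csubspace_scaleC[OF cKi] by blast
    fix x assume x: "x \<in> E"
    show "cinner (u (c *\<^sub>C y)) x = cinner (c *\<^sub>C u y) x"
      using u[OF Dsc[OF yy]] u[OF yy] B1sc[OF yy x] x by (simp add: cinner_scaleC_left)
  qed
  have u_bd: "norm (u y) \<le> norm y" if y: "y \<in> D" for y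
  proof (rule norm_from_inner_bound[where D = E])
    show "u y \<in> closure E" using u[OF y] EK by simp
    show "cmod (cinner (u y) x) \<le> norm y * norm x" if "x \<in> E" for x using u[OF y] Bb[OF y that] that by auto
  qed simp
  have ex_W: "\<exists>z\<in>closure D. \<forall>y\<in>D. cinner x (u y) = cinner z y" for x
  proof (rule riesz_dense[OF D0 Dadd Dsc, where C = "norm x"])
    show "cinner x (u (y + y')) = cinner x (u y) + cinner x (u y')" if "y \<in> D" "y' \<in> D" for y y'
      by (simp add: u_add[OF that] cinner_add_right)
    show "cinner x (u (c *\<^sub>C y)) = c * cinner x (u y)" if "y \<in> D" for c y
      by (simp add: u_sc[OF that] cinner_scaleC_right)
    show "cmod (cinner x (u y)) \<le> norm x * norm y" if "y \<in> D" for y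
    proof -
      have "cmod (cinner x (u y)) \<le> norm x * norm (u y)" by (rule Cauchy_Schwarz)
      also have "\<dots> \<le> norm x * norm y" using u_bd[OF that] by (simp add: mult_left_mono)
      finally show ?thesis .
    qed
  qed
  define W where "W x = (SOME z. z \<in> closure D \<and> (\<forall>y\<in>D. cinner x (u y) = cinner z y))" for x
  have W: "W x \<in> Kk \<and> (\<forall>y\<in>D. cinner x (u y) = cinner (W x) y)" for x
    using someI_ex[OF ex_W[of x, unfolded Bex_def]] unfolding W_def DK by blast
  have W_add: "W (x + x') = W x + W x'" for x x'
  proof (rule uniqD)
    show "W (x + x') \<in> Kk" using W by blast
    show "W x + W x' \<in> Kk" using W csubspace_add[OF cKk] by blast
    fix y assume y: "y \<in> D"
    show "cinner (W (x + x')) y = cinner (W x + W x') y"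
      using W[of "x + x'"] W[of x] W[of x'] y by (simp add: cinner_add_left)
  qed
  have W_sc: "W (c *\<^sub>C x) = c *\<^sub>C W x" for c x
  proof (rule uniqD)
    show "W (c *\<^sub>C x) \<in> Kk" using W by blast
    show "c *\<^sub>C W x \<in> Kk" using W csubspace_scaleC[OF cKk] by blast
    fix y assume y: "y \<in> D"
    show "cinner (W (c *\<^sub>C x)) y = cinner (c *\<^sub>C W x) y"
      using W[of "c *\<^sub>C x"] W[of x] y by (simp add: cinner_scaleC_left)
  qed
  have W_bd: "norm (W x) \<le> norm x * 1" for x
  proof -
    have "norm (W x) \<le> norm x"
    proof (rule norm_from_inner_bound[where D = D])
      show "W x \<in> closure D" using W[of x] DK by simp
      show "cmod (cinner (W x) y) \<le> norm x * norm y" if "y \<in> D" for y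
      proof -
        have "cinner (W x) y = cinner x (u y)" using W[of x] that by simp
        moreover have "cmod (cinner x (u y)) \<le> norm x * norm (u y)" by (rule Cauchy_Schwarz)
        moreover have "norm x * norm (u y) \<le> norm x * norm y" using u_bd[OF that] by (simp add: mult_left_mono)
        ultimately show ?thesis by simp
      qed
    qed simp
    then show ?thesis by simp
  qed
  have Wb: "bclinear W" by (rule bclinear_intro[OF W_add W_sc W_bd])
  have W_proj: "W (proj Ki x) = W x" for x
  proof (rule uniqD)
    show "W (proj Ki x) \<in> Kk" "W x \<in> Kk" using W by auto
    fix y assume y: "y \<in> D"
    have "cinner (W (proj Ki x)) y = cinner (proj Ki x) (u y)" using W y by simp
    also have "\<dots> = cinner x (proj Ki (u y))" by (rule proj_selfadj[OF cKi])
    also have "\<dots> = cinner x (u y)" using u[OF y] by (simp add: proj_id)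
    also have "\<dots> = cinner (W x) y" using W y by simp
    finally show "cinner (W (proj Ki x)) y = cinner (W x) y" .
  qed
  have Wop: "is_op Ki Kk W" by (rule is_opI[OF Wb cKk]) (use W W_proj in auto)
  have "cinner y (W x) = Bv y x" if "y \<in> D" "x \<in> E" for y x
  proof -
    have "cinner y (W x) = cnj (cinner (W x) y)" by (simp add: cinner_cnj)
    also have "\<dots> = cnj (cinner x (u y))" using W that by simp
    also have "\<dots> = cinner (u y) x" by (simp add: cinner_cnj)
    also have "\<dots> = Bv y x" using u that by simp
    finally show ?thesis .
  qed
  then show ?thesis using Wop by blast
qed


(* ---- part 8 ---- *)


lemma intertwiner_zero:
  fixes \<phi>i \<phi>k :: "'a::cstar_algebra \<Rightarrow> 'h::chilbert \<Rightarrow> 'h" and \<pi>i \<pi>k :: "'a \<Rightarrow> 'k::chilbert \<Rightarrow> 'k"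
  assumes Hi: "csubspace Hi" and Hk: "csubspace Hk" and pi: "pure_cp Hi \<phi>i" and pk: "pure_cp Hk \<phi>k"
    and msi: "min_stinespring Hi \<phi>i Ki \<pi>i Vi" and msk: "min_stinespring Hk \<phi>k Kk \<pi>k Vk"
    and neq: "\<not> unitarily_equiv Ki \<pi>i Kk \<pi>k"
    and W: "is_op Ki Kk W" and comm: "\<And>a x. W (\<pi>i a x) = \<pi>k a (W x)"
  shows "W x = 0"
proof (rule ccontr)
  assume nz: "W x \<noteq> 0"
  have Ki: "csubspace Ki" using ms_K[OF msi] .
  have Kk: "csubspace Kk" using ms_K[OF msk] .
  have repi: "star_rep Ki \<pi>i" using ms_rep[OF msi] .
  have repk: "star_rep Kk \<pi>k" using ms_rep[OF msk] .
  have Wb: "bclinear W" using is_op_bclinear[OF W] .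
  have pib: "bclinear (\<pi>i a)" for a using rep_bcl[OF repi Ki] .
  have pkb: "bclinear (\<pi>k a)" for a using rep_bcl[OF repk Kk] .
  have commadj: "adj W (\<pi>k a y) = \<pi>i a (adj W y)" for a y
  proof -
    have "W \<circ> \<pi>i (invol a) = \<pi>k (invol a) \<circ> W" by (rule ext) (simp add: comm)
    then have "adj (W \<circ> \<pi>i (invol a)) = adj (\<pi>k (invol a) \<circ> W)" by simp
    then have "adj (\<pi>i (invol a)) \<circ> adj W = adj W \<circ> adj (\<pi>k (invol a))"
      by (simp add: adj_comp Wb pib pkb)
    moreover have "adj (\<pi>i (invol a)) = \<pi>i a" by (simp add: rep_invol[OF repi Ki] adj_adj pib)
    moreover have "adj (\<pi>k (invol a)) = \<pi>k a" by (simp add: rep_invol[OF repk Kk] adj_adj pkb)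
    ultimately have "\<pi>i a \<circ> adj W = adj W \<circ> \<pi>k a" by simp
    then show ?thesis by (metis comp_apply)
  qed
  have WK: "\<And>x. W (proj Ki x) = W x" using is_op_right[OF W Ki] .
  have WWc: "\<And>a x. adj W (W (\<pi>i a x)) = \<pi>i a (adj W (W x))" by (simp add: comm commadj)
  obtain c where c: "\<forall>x. adj W (W x) = c *\<^sub>C proj Ki x"
    using schur[OF Hi pi msi Wb WK WWc] by blast
  define x1 where "x1 = proj Ki x"
  have x1K: "x1 \<in> Ki" unfolding x1_def by (rule proj_in[OF Ki])
  have Wx1: "W x1 = W x" unfolding x1_def by (rule is_op_right[OF W Ki])
  have x1nz: "x1 \<noteq> 0" using nz Wx1 bclinear_zero[OF Wb] by auto
  have "cinner (W x1) (W x1) = cinner x1 (adj W (W x1))" by (simp add: adj_cinner_right[OF Wb])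
  also have "\<dots> = c * cinner x1 x1" using c x1K by (simp add: proj_id cinner_scaleC_right)
  finally have ceq: "complex_of_real ((norm (W x1))\<^sup>2) = c * complex_of_real ((norm x1)\<^sup>2)"
    by (simp add: cinner_self_norm)
  define cr where "cr = (norm (W x1))\<^sup>2 / (norm x1)\<^sup>2"
  have cr: "c = complex_of_real cr" using ceq x1nz unfolding cr_def by (simp add: field_simps)
  have crpos: "cr > 0" unfolding cr_def using nz Wx1 x1nz by simp
  define s where "s = 1 / sqrt cr"
  have s2: "s * s * cr = 1" unfolding s_def using crpos by (simp add: field_simps)
  have snz: "s \<noteq> 0" unfolding s_def using crpos by simp
  define U where "U y = complex_of_real s *\<^sub>C W y" for y
  have Ub: "bclinear U" unfolding U_def by (rule bclinear_scaleC_fun[OF Wb])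
  have Uop: "is_op Ki Kk U"
  proof (rule is_opI[OF Ub Kk])
    show "U y \<in> Kk" for y unfolding U_def by (rule csubspace_scaleC[OF Kk is_op_range[OF W Kk]])
    show "U (proj Ki y) = U y" for y unfolding U_def by (simp add: is_op_right[OF W Ki])
  qed
  have adjU: "adj U = (\<lambda>y. complex_of_real s *\<^sub>C adj W y)"
    unfolding U_def by (simp add: adj_scaleC_fun[OF Wb])
  have UU: "adj U (U y) = proj Ki y" for y
  proof -
    have "adj U (U y) = (complex_of_real s * complex_of_real s * c) *\<^sub>C proj Ki y"
      unfolding adjU U_def by (simp add: bclinear_scaleC[OF bclinear_adj[OF Wb]] c mult.assoc)
    also have "complex_of_real s * complex_of_real s * c = 1" unfolding cr using s2
      by (metis of_real_1 of_real_mult)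
    finally show ?thesis by simp
  qed
  have Ucomm: "U (\<pi>i a y) = \<pi>k a (U y)" for a y
    unfolding U_def by (simp add: comm bclinear_scaleC[OF pkb])
  have Uadjcomm: "adj U (\<pi>k a y) = \<pi>i a (adj U y)" for a y
    unfolding adjU by (simp add: commadj bclinear_scaleC[OF pib])
  have adjUb: "bclinear (adj U)" by (rule bclinear_adj[OF Ub])
  have adjUop: "is_op Kk Ki (adj U)" by (rule is_op_adj[OF Uop Ki Kk])
  obtain d where d: "\<forall>y. adj (adj U) (adj U y) = d *\<^sub>C proj Kk y"
  proof -
    have "\<exists>d. \<forall>y. adj (adj U) (adj U y) = d *\<^sub>C proj Kk y"
    proof -
      have UK: "\<And>y. adj U (proj Kk y) = adj U y" using is_op_right[OF adjUop Kk] .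
      have cc: "\<And>a y. adj (adj U) (adj U (\<pi>k a y)) = \<pi>k a (adj (adj U) (adj U y))"
        by (simp add: adj_adj[OF Ub] Uadjcomm Ucomm)
      show ?thesis by (rule schur[OF Hk pk msk adjUb UK cc])
    qed
    then show ?thesis using that by blast
  qed
  then have d': "U (adj U y) = d *\<^sub>C proj Kk y" for y by (simp add: adj_adj[OF Ub])
  have Ux1: "U x1 \<noteq> 0" unfolding U_def using snz nz Wx1 by (simp add: scaleC_eq_0_iff)
  have "U x1 = d *\<^sub>C U x1"
  proof -
    have "U x1 = U (proj Ki x1)" using x1K by (simp add: proj_id)
    also have "\<dots> = U (adj U (U x1))" by (simp add: UU)
    also have "\<dots> = d *\<^sub>C proj Kk (U x1)" by (rule d')
    also have "\<dots> = d *\<^sub>C U x1" using is_op_range[OF Uop Kk] by (simp add: proj_id)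
    finally show ?thesis .
  qed
  then have "(d - 1) *\<^sub>C U x1 = 0" by (simp add: scaleC_diff_left)
  then have d1: "d = 1" using Ux1 by (simp add: scaleC_eq_0_iff)
  have "unitarily_equiv Ki \<pi>i Kk \<pi>k"
    unfolding unitarily_equiv_def
  proof (intro exI[of _ U] conjI allI)
    show "is_op Ki Kk U" by (rule Uop)
    show "adj U \<circ> U = proj Ki" by (rule ext) (simp add: UU)
    show "U \<circ> adj U = proj Kk" by (rule ext) (simp add: d' d1)
    show "U \<circ> \<pi>i a = \<pi>k a \<circ> U" for a by (rule ext) (simp add: Ucomm)
  qed
  then show False using neq by blast
qed


(* ---- part 9 ---- *)


section \<open>formal sums\<close>

definition vecT :: "('a::cstar_algebra \<Rightarrow> 'k::chilbert \<Rightarrow> 'k) \<Rightarrow> ('h::chilbert \<Rightarrow> 'k) \<Rightarrow> nat \<times> (nat \<Rightarrow> 'a) \<times> (nat \<Rightarrow> 'h) \<Rightarrow> 'k" where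
  "vecT \<pi> V t = (\<Sum>r<fst t. \<pi> (fst (snd t) r) (V (snd (snd t) r)))"

definition catT :: "nat \<times> (nat \<Rightarrow> 'a) \<times> (nat \<Rightarrow> 'h) \<Rightarrow> nat \<times> (nat \<Rightarrow> 'a) \<times> (nat \<Rightarrow> 'h) \<Rightarrow> nat \<times> (nat \<Rightarrow> 'a) \<times> (nat \<Rightarrow> 'h)" where
  "catT t u = (fst t + fst u, \<lambda>r. if r < fst t then fst (snd t) r else fst (snd u) (r - fst t),
                             \<lambda>r. if r < fst t then snd (snd t) r else snd (snd u) (r - fst t))"

definition sclT :: "complex \<Rightarrow> nat \<times> (nat \<Rightarrow> 'a) \<times> (nat \<Rightarrow> 'h::complex_vector) \<Rightarrow> nat \<times> (nat \<Rightarrow> 'a) \<times> (nat \<Rightarrow> 'h)" where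
  "sclT c t = (fst t, fst (snd t), \<lambda>r. c *\<^sub>C snd (snd t) r)"

definition mulT :: "'a::cstar_algebra \<Rightarrow> nat \<times> (nat \<Rightarrow> 'a) \<times> (nat \<Rightarrow> 'h) \<Rightarrow> nat \<times> (nat \<Rightarrow> 'a) \<times> (nat \<Rightarrow> 'h)" where
  "mulT a t = (fst t, \<lambda>r. a * fst (snd t) r, snd (snd t))"

definition BfT :: "('a::cstar_algebra \<Rightarrow> 'h::chilbert \<Rightarrow> 'h) \<Rightarrow> ('h \<Rightarrow> 'h) \<Rightarrow> ('h \<Rightarrow> 'h) \<Rightarrow>
     nat \<times> (nat \<Rightarrow> 'a) \<times> (nat \<Rightarrow> 'h) \<Rightarrow> nat \<times> (nat \<Rightarrow> 'a) \<times> (nat \<Rightarrow> 'h) \<Rightarrow> complex" where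
  "BfT \<theta> Qk Qi t u = sf \<theta> (fst t) (fst (snd t)) (\<lambda>r. Qk (snd (snd t) r)) (fst u) (fst (snd u)) (\<lambda>s. Qi (snd (snd u) s))"

lemma vecT_cat: "vecT \<pi> V (catT t u) = vecT \<pi> V t + vecT \<pi> V u"
  unfolding vecT_def catT_def by (simp add: sum_split_add)

lemma vecT_zero: "vecT \<pi> V (0, b, g) = 0"
  unfolding vecT_def by simp

lemma vecT_one: "vecT \<pi> V (1, \<lambda>_. a, \<lambda>_. h) = \<pi> a (V h)"
  unfolding vecT_def by simp

lemma vecT_scl:
  assumes rep: "star_rep K \<pi>" and K: "csubspace K" and V: "bclinear V"
  shows "vecT \<pi> V (sclT c t) = c *\<^sub>C vecT \<pi> V t"
  unfolding vecT_def sclT_def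
  by (simp add: scaleC_sum_right bclinear_scaleC[OF V] bclinear_scaleC[OF rep_bcl[OF rep K]])

lemma vecT_mul:
  assumes rep: "star_rep K \<pi>" and K: "csubspace K"
  shows "vecT \<pi> V (mulT a t) = \<pi> a (vecT \<pi> V t)"
  unfolding vecT_def mulT_def
  by (simp add: rep_mult[OF rep K] bclinear_sum[OF rep_bcl[OF rep K]])

lemma vecT_proj:
  assumes V: "is_op H K V" and H: "csubspace H"
  shows "vecT \<pi> V (p, b, \<lambda>r. proj H (g r)) = vecT \<pi> V (p, b, g)"
  unfolding vecT_def by (simp add: is_op_right[OF V H])

lemma BfT_cat1: "BfT \<theta> Qk Qi (catT t t') u = BfT \<theta> Qk Qi t u + BfT \<theta> Qk Qi t' u"
  unfolding BfT_def catT_def sf_def by (simp add: sum_split_add)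

lemma BfT_cat2: "BfT \<theta> Qk Qi t (catT u u') = BfT \<theta> Qk Qi t u + BfT \<theta> Qk Qi t u'"
  unfolding BfT_def catT_def sf_def by (simp add: sum_split_add sum.distrib)

lemma BfT_scl1: "bclinear Qk \<Longrightarrow> BfT \<theta> Qk Qi (sclT c t) u = cnj c * BfT \<theta> Qk Qi t u"
  unfolding BfT_def sclT_def sf_def by (simp add: bclinear_scaleC cinner_scaleC_left sum_distrib_left)

lemma BfT_scl2: "bclinear Qi \<Longrightarrow> (\<And>x. bclinear (\<theta> x)) \<Longrightarrow> BfT \<theta> Qk Qi t (sclT c u) = c * BfT \<theta> Qk Qi t u"
  unfolding BfT_def sclT_def sf_def by (simp add: bclinear_scaleC cinner_scaleC_right sum_distrib_left)

lemma BfT_mul: "BfT \<theta> Qk Qi t (mulT a u) = BfT \<theta> Qk Qi (mulT (invol a) t) u"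
  unfolding BfT_def mulT_def sf_def by (simp add: invol_mult invol_invol mult.assoc)

lemma sf_diff: "sf (\<lambda>a x. T1 a x - T2 a x) p b g q a' f = sf T1 p b g q a' f - sf T2 p b g q a' f"
  unfolding sf_def by (simp add: cinner_diff_right sum_subtractf)

lemma sf_phi:
  assumes ms: "min_stinespring H \<phi> K \<pi> V"
  shows "sf \<phi> p b g p b g = cinner (vecT \<pi> V (p, b, g)) (vecT \<pi> V (p, b, g))"
proof -
  have K: "csubspace K" using ms_K[OF ms] .
  have rep: "star_rep K \<pi>" using ms_rep[OF ms] .
  have Vb: "bclinear V" using is_op_bclinear[OF ms_V[OF ms]] .
  have "cinner (g r) (\<phi> (invol (b r) * b s) (g s)) = cinner (\<pi> (b r) (V (g r))) (\<pi> (b s) (V (g s)))" for r s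
  proof -
    have "cinner (g r) (\<phi> (invol (b r) * b s) (g s)) = cinner (g r) (adj V (\<pi> (invol (b r)) (\<pi> (b s) (V (g s)))))"
      by (simp add: ms_phi[OF ms] rep_mult[OF rep K])
    also have "\<dots> = cinner (V (g r)) (\<pi> (invol (b r)) (\<pi> (b s) (V (g s))))" by (rule adj_cinner_right[OF Vb])
    also have "\<dots> = cinner (\<pi> (b r) (V (g r))) (\<pi> (b s) (V (g s)))" by (rule rep_cinner[OF rep K, symmetric])
    finally show ?thesis .
  qed
  moreover have "cinner (vecT \<pi> V (p, b, g)) (vecT \<pi> V (p, b, g)) = (\<Sum>r<p. \<Sum>s<p. cinner (\<pi> (b r) (V (g r))) (\<pi> (b s) (V (g s))))"
    unfolding vecT_def fst_conv snd_conv cinner_sum_left by (simp add: cinner_sum_right)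
  ultimately show ?thesis unfolding sf_def by simp
qed

lemma Dset_span:
  assumes ms: "min_stinespring H \<phi> K \<pi> V" and H: "csubspace H"
  shows "range (vecT \<pi> V) = span (\<Union>a. (\<lambda>h. \<pi> a (V h)) ` H)"
proof
  have K: "csubspace K" using ms_K[OF ms] .
  have rep: "star_rep K \<pi>" using ms_rep[OF ms] .
  have V: "is_op H K V" using ms_V[OF ms] .
  show "range (vecT \<pi> V) \<subseteq> span (\<Union>a. (\<lambda>h. \<pi> a (V h)) ` H)"
  proof
    fix y assume "y \<in> range (vecT \<pi> V)"
    then obtain t where y: "y = vecT \<pi> V t" by blast
    have "\<pi> (fst (snd t) r) (V (snd (snd t) r)) \<in> span (\<Union>a. (\<lambda>h. \<pi> a (V h)) ` H)" for r
    proof -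
      have "\<pi> (fst (snd t) r) (V (snd (snd t) r)) = \<pi> (fst (snd t) r) (V (proj H (snd (snd t) r)))"
        by (simp add: is_op_right[OF V H])
      moreover have "proj H (snd (snd t) r) \<in> H" by (rule proj_in[OF H])
      ultimately show ?thesis by (intro span_base) blast
    qed
    then show "y \<in> span (\<Union>a. (\<lambda>h. \<pi> a (V h)) ` H)" unfolding y vecT_def by (intro span_sum)
  qed
  show "span (\<Union>a. (\<lambda>h. \<pi> a (V h)) ` H) \<subseteq> range (vecT \<pi> V)"
  proof (rule span_minimal)
    show "(\<Union>a. (\<lambda>h. \<pi> a (V h)) ` H) \<subseteq> range (vecT \<pi> V)"
    proof
      fix y assume "y \<in> (\<Union>a. (\<lambda>h. \<pi> a (V h)) ` H)"
      then obtain a h where "y = \<pi> a (V h)" by blast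
      then have "y = vecT \<pi> V (1, \<lambda>_. a, \<lambda>_. h)" using vecT_one[of \<pi> V a h] by simp
      then show "y \<in> range (vecT \<pi> V)" by blast
    qed
    show "subspace (range (vecT \<pi> V))"
    proof (rule subspaceI)
      show "0 \<in> range (vecT \<pi> V)" using vecT_zero[of \<pi> V] by (metis rangeI)
      show "x + y \<in> range (vecT \<pi> V)" if xr: "x \<in> range (vecT \<pi> V)" and yr: "y \<in> range (vecT \<pi> V)" for x y
      proof -
        obtain t where t: "x = vecT \<pi> V t" using xr by blast
        obtain u where u: "y = vecT \<pi> V u" using yr by blast
        have "x + y = vecT \<pi> V (catT t u)" by (simp add: t u vecT_cat)
        then show ?thesis by blast
      qed
      show "c *\<^sub>R x \<in> range (vecT \<pi> V)" if xr: "x \<in> range (vecT \<pi> V)" for c x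
      proof -
        obtain t where t: "x = vecT \<pi> V t" using xr by blast
        have "c *\<^sub>R x = vecT \<pi> V (sclT (complex_of_real c) t)"
          by (simp add: t vecT_scl[OF rep K is_op_bclinear[OF V]] scaleR_scaleC)
        then show ?thesis by blast
      qed
    qed
  qed
qed


(* ---- part 10 ---- *)


locale offd =
  fixes S Hi Hk :: "'h::chilbert set" and \<phi>i \<phi>k \<Phi> \<theta> :: "'a::cstar_algebra \<Rightarrow> 'h \<Rightarrow> 'h"
    and Ki Kk :: "'k::chilbert set" and \<pi>i \<pi>k :: "'a \<Rightarrow> 'k \<Rightarrow> 'k" and Vi Vk :: "'h \<Rightarrow> 'k"
  assumes Hi: "csubspace Hi" and Hk: "csubspace Hk"
    and pi: "pure_cp Hi \<phi>i" and pk: "pure_cp Hk \<phi>k"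
    and msi: "min_stinespring Hi \<phi>i Ki \<pi>i Vi" and msk: "min_stinespring Hk \<phi>k Kk \<pi>k Vk"
    and neq: "\<not> unitarily_equiv Ki \<pi>i Kk \<pi>k"
    and cpt: "cp_map S \<theta>" and cpd: "cp_map S (\<lambda>a x. \<Phi> a x - \<theta> a x)"
    and Phii: "\<And>a x y. x \<in> Hi \<Longrightarrow> y \<in> Hi \<Longrightarrow> cinner x (\<Phi> a y) = cinner x (\<phi>i a y)"
    and Phik: "\<And>a x y. x \<in> Hk \<Longrightarrow> y \<in> Hk \<Longrightarrow> cinner x (\<Phi> a y) = cinner x (\<phi>k a y)"
begin

definition Bf where "Bf t u = BfT \<theta> (proj Hk) (proj Hi) t u"

lemma Ki: "csubspace Ki" using ms_K[OF msi] .
lemma Kk: "csubspace Kk" using ms_K[OF msk] .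
lemma repi: "star_rep Ki \<pi>i" using ms_rep[OF msi] .
lemma repk: "star_rep Kk \<pi>k" using ms_rep[OF msk] .
lemma Vi: "is_op Hi Ki Vi" using ms_V[OF msi] .
lemma Vk: "is_op Hk Kk Vk" using ms_V[OF msk] .

lemma sf_bound:
  assumes H: "csubspace H" and ms: "min_stinespring H \<phi> K \<pi> V"
    and Phi: "\<And>a x y. x \<in> H \<Longrightarrow> y \<in> H \<Longrightarrow> cinner x (\<Phi> a y) = cinner x (\<phi> a y)"
  shows "Re (sf \<theta> p b (\<lambda>r. proj H (g r)) p b (\<lambda>r. proj H (g r))) \<le> (norm (vecT \<pi> V (p, b, g)))\<^sup>2"
proof -
  have "sf \<Phi> p b (\<lambda>r. proj H (g r)) p b (\<lambda>r. proj H (g r)) = sf \<phi> p b (\<lambda>r. proj H (g r)) p b (\<lambda>r. proj H (g r))"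
    unfolding sf_def by (intro sum.cong refl) (simp add: Phi proj_in[OF H])
  also have "\<dots> = cinner (vecT \<pi> V (p, b, \<lambda>r. proj H (g r))) (vecT \<pi> V (p, b, \<lambda>r. proj H (g r)))"
    by (rule sf_phi[OF ms])
  also have "vecT \<pi> V (p, b, \<lambda>r. proj H (g r)) = vecT \<pi> V (p, b, g)" by (rule vecT_proj[OF ms_V[OF ms] H])
  finally have e: "sf \<Phi> p b (\<lambda>r. proj H (g r)) p b (\<lambda>r. proj H (g r)) = complex_of_real ((norm (vecT \<pi> V (p, b, g)))\<^sup>2)"
    by (simp add: cinner_self_norm)
  have "0 \<le> Re (sf (\<lambda>a x. \<Phi> a x - \<theta> a x) p b (\<lambda>r. proj H (g r)) p b (\<lambda>r. proj H (g r)))"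
    using cp_pos[OF cpd] by blast
  then show ?thesis using e by (simp add: sf_diff)
qed

lemma Bf_bound: "cmod (Bf t u) \<le> norm (vecT \<pi>k Vk t) * norm (vecT \<pi>i Vi u)"
proof -
  obtain p b g where t: "t = (p, b, g)" by (cases t) auto
  obtain q a f where u: "u = (q, a, f)" by (cases u) auto
  have cs: "(cmod (sf \<theta> p b (\<lambda>r. proj Hk (g r)) q a (\<lambda>s. proj Hi (f s))))\<^sup>2
      \<le> Re (sf \<theta> p b (\<lambda>r. proj Hk (g r)) p b (\<lambda>r. proj Hk (g r))) * Re (sf \<theta> q a (\<lambda>s. proj Hi (f s)) q a (\<lambda>s. proj Hi (f s)))"
    by (rule cp_CS[OF cpt])
  have "Re (sf \<theta> p b (\<lambda>r. proj Hk (g r)) p b (\<lambda>r. proj Hk (g r))) * Re (sf \<theta> q a (\<lambda>s. proj Hi (f s)) q a (\<lambda>s. proj Hi (f s)))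
      \<le> (norm (vecT \<pi>k Vk t))\<^sup>2 * (norm (vecT \<pi>i Vi u))\<^sup>2"
    unfolding t u
    by (rule mult_mono[OF sf_bound[OF Hk msk Phik] sf_bound[OF Hi msi Phii]]) (use cp_pos[OF cpt] in auto)
  with cs have "(cmod (Bf t u))\<^sup>2 \<le> (norm (vecT \<pi>k Vk t) * norm (vecT \<pi>i Vi u))\<^sup>2"
    unfolding Bf_def BfT_def t u by (simp add: power_mult_distrib)
  then show ?thesis by (rule power2_le_imp_le) simp
qed

lemma Bf_welldef:
  assumes tt: "vecT \<pi>k Vk t = vecT \<pi>k Vk t'" and uu: "vecT \<pi>i Vi u = vecT \<pi>i Vi u'"
  shows "Bf t u = Bf t' u'"
proof -
  have Pkb: "bclinear (proj Hk)" by (rule bclinear_proj[OF Hk])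
  have Pib: "bclinear (proj Hi)" by (rule bclinear_proj[OF Hi])
  have thb: "bclinear (\<theta> x)" for x by (rule cp_bcl[OF cpt])
  have Vkb: "bclinear Vk" using is_op_bclinear[OF Vk] .
  have Vib: "bclinear Vi" using is_op_bclinear[OF Vi] .
  have "Bf t u - Bf t' u = Bf (catT t (sclT (-1) t')) u"
    unfolding Bf_def by (simp add: BfT_cat1 BfT_scl1[OF Pkb])
  moreover have "vecT \<pi>k Vk (catT t (sclT (-1) t')) = 0"
    by (simp add: vecT_cat vecT_scl[OF repk Kk Vkb] tt scaleC_minus_left)
  ultimately have "cmod (Bf t u - Bf t' u) \<le> 0" using Bf_bound[of "catT t (sclT (-1) t')" u] by simp
  then have 1: "Bf t u = Bf t' u" by simp
  have "Bf t' u - Bf t' u' = Bf t' (catT u (sclT (-1) u'))"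
    unfolding Bf_def by (simp add: BfT_cat2 BfT_scl2[OF Pib thb])
  moreover have "vecT \<pi>i Vi (catT u (sclT (-1) u')) = 0"
    by (simp add: vecT_cat vecT_scl[OF repi Ki Vib] uu scaleC_minus_left)
  ultimately have "cmod (Bf t' u - Bf t' u') \<le> 0" using Bf_bound[of t' "catT u (sclT (-1) u')"] by simp
  then have 2: "Bf t' u = Bf t' u'" by simp
  show ?thesis using 1 2 by simp
qed

definition repk where "repk y = (SOME t. y = vecT \<pi>k Vk t)"
definition repi where "repi x = (SOME u. x = vecT \<pi>i Vi u)"
definition Bv where "Bv y x = Bf (repk y) (repi x)"

lemma Bv_vec: "Bv (vecT \<pi>k Vk t) (vecT \<pi>i Vi u) = Bf t u"
proof -
  have "vecT \<pi>k Vk t = vecT \<pi>k Vk (repk (vecT \<pi>k Vk t))"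
    unfolding repk_def by (rule someI_ex) blast
  moreover have "vecT \<pi>i Vi u = vecT \<pi>i Vi (repi (vecT \<pi>i Vi u))"
    unfolding repi_def by (rule someI_ex) blast
  ultimately show ?thesis unfolding Bv_def by (intro Bf_welldef[symmetric]) auto
qed

lemma W_ex: "\<exists>W. is_op Ki Kk W \<and> (\<forall>t u. cinner (vecT \<pi>k Vk t) (W (vecT \<pi>i Vi u)) = Bf t u)"
proof -
  have Pkb: "bclinear (proj Hk)" by (rule bclinear_proj[OF Hk])
  have Pib: "bclinear (proj Hi)" by (rule bclinear_proj[OF Hi])
  have thb: "bclinear (\<theta> x)" for x by (rule cp_bcl[OF cpt])
  have Vkb: "bclinear Vk" using is_op_bclinear[OF Vk] .
  have Vib: "bclinear Vi" using is_op_bclinear[OF Vi] .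
  have "\<exists>W. is_op Ki Kk W \<and> (\<forall>y\<in>range (vecT \<pi>k Vk). \<forall>x\<in>range (vecT \<pi>i Vi). cinner y (W x) = Bv y x)"
  proof (rule form_op)
    show "0 \<in> range (vecT \<pi>k Vk)" using vecT_zero by (metis rangeI)
    show "0 \<in> range (vecT \<pi>i Vi)" using vecT_zero by (metis rangeI)
    show "x + y \<in> range (vecT \<pi>k Vk)" if "x \<in> range (vecT \<pi>k Vk)" "y \<in> range (vecT \<pi>k Vk)" for x y
      using that by (auto simp: vecT_cat[symmetric])
    show "x + y \<in> range (vecT \<pi>i Vi)" if "x \<in> range (vecT \<pi>i Vi)" "y \<in> range (vecT \<pi>i Vi)" for x y
      using that by (auto simp: vecT_cat[symmetric])
    show "c *\<^sub>C x \<in> range (vecT \<pi>k Vk)" if "x \<in> range (vecT \<pi>k Vk)" for c x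
      using that by (auto simp: vecT_scl[OF repk Kk Vkb, symmetric])
    show "c *\<^sub>C x \<in> range (vecT \<pi>i Vi)" if "x \<in> range (vecT \<pi>i Vi)" for c x
      using that by (auto simp: vecT_scl[OF repi Ki Vib, symmetric])
    show "closure (range (vecT \<pi>k Vk)) = Kk" by (simp add: Dset_span[OF msk Hk] ms_dense[OF msk])
    show "closure (range (vecT \<pi>i Vi)) = Ki" by (simp add: Dset_span[OF msi Hi] ms_dense[OF msi])
    show "Bv (y + y') x = Bv y x + Bv y' x" if "y \<in> range (vecT \<pi>k Vk)" "y' \<in> range (vecT \<pi>k Vk)" "x \<in> range (vecT \<pi>i Vi)" for y y' x
      using that by (auto simp: vecT_cat[symmetric] Bv_vec Bf_def BfT_cat1)
    show "Bv (c *\<^sub>C y) x = cnj c * Bv y x" if "y \<in> range (vecT \<pi>k Vk)" "x \<in> range (vecT \<pi>i Vi)" for c y x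
      using that by (auto simp: vecT_scl[OF repk Kk Vkb, symmetric] Bv_vec Bf_def BfT_scl1[OF Pkb])
    show "Bv y (x + x') = Bv y x + Bv y x'" if "y \<in> range (vecT \<pi>k Vk)" "x \<in> range (vecT \<pi>i Vi)" "x' \<in> range (vecT \<pi>i Vi)" for y x x'
      using that by (auto simp: vecT_cat[symmetric] Bv_vec Bf_def BfT_cat2)
    show "Bv y (c *\<^sub>C x) = c * Bv y x" if "y \<in> range (vecT \<pi>k Vk)" "x \<in> range (vecT \<pi>i Vi)" for c y x
      using that by (auto simp: vecT_scl[OF repi Ki Vib, symmetric] Bv_vec Bf_def BfT_scl2[OF Pib thb])
    show "cmod (Bv y x) \<le> norm y * norm x" if "y \<in> range (vecT \<pi>k Vk)" "x \<in> range (vecT \<pi>i Vi)" for y x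
      using that by (auto simp: Bv_vec Bf_bound)
  qed
  then obtain W where W: "is_op Ki Kk W" "\<forall>y\<in>range (vecT \<pi>k Vk). \<forall>x\<in>range (vecT \<pi>i Vi). cinner y (W x) = Bv y x"
    by blast
  then have "\<forall>t u. cinner (vecT \<pi>k Vk t) (W (vecT \<pi>i Vi u)) = Bf t u" by (simp add: Bv_vec)
  then show ?thesis using W(1) by blast
qed

lemma offdiag: "cinner (proj Hk h') (\<theta> a (proj Hi h)) = 0"
proof -
  obtain W where W: "is_op Ki Kk W" and Wf: "\<And>t u. cinner (vecT \<pi>k Vk t) (W (vecT \<pi>i Vi u)) = Bf t u"
    using W_ex by blast
  have Wb: "bclinear W" using is_op_bclinear[OF W] .
  have pib: "bclinear (\<pi>i a)" for a using rep_bcl[OF repi Ki] .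
  have pkb: "bclinear (\<pi>k a)" for a using rep_bcl[OF repk Kk] .
  have DK: "closure (range (vecT \<pi>k Vk)) = Kk" by (simp add: Dset_span[OF msk Hk] ms_dense[OF msk])
  have EK: "closure (range (vecT \<pi>i Vi)) = Ki" by (simp add: Dset_span[OF msi Hi] ms_dense[OF msi])
  have commE: "W (\<pi>i a x) = \<pi>k a (W x)" if xr: "x \<in> range (vecT \<pi>i Vi)" for a x
  proof -
    obtain u where u: "x = vecT \<pi>i Vi u" using xr by blast
    define z where "z = W (\<pi>i a x) - \<pi>k a (W x)"
    have zK: "z \<in> closure (range (vecT \<pi>k Vk))" unfolding DK z_def
      by (rule csubspace_diff[OF Kk is_op_range[OF W Kk] rep_range[OF repk Kk]])
    have orthz: "cinner z y = 0" if yr: "y \<in> range (vecT \<pi>k Vk)" for y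
    proof -
      obtain t where t: "y = vecT \<pi>k Vk t" using yr by blast
      have "cinner y (W (\<pi>i a x)) = Bf t (mulT a u)"
        unfolding t u vecT_mul[OF repi Ki, symmetric] by (rule Wf)
      moreover have "cinner y (\<pi>k a (W x)) = Bf (mulT (invol a) t) u"
        unfolding t u rep_cinner'[OF repk Kk] vecT_mul[OF repk Kk, symmetric] by (rule Wf)
      moreover have "Bf t (mulT a u) = Bf (mulT (invol a) t) u" unfolding Bf_def by (rule BfT_mul)
      ultimately have "cinner y z = 0" unfolding z_def by (simp add: cinner_diff_right)
      then show ?thesis using cinner_cnj[of y z] by simp
    qed
    have "z = 0" by (rule dense_orth[OF orthz zK])
    then show ?thesis unfolding z_def by simp
  qed
  have commK: "W (\<pi>i a x) = \<pi>k a (W x)" if "x \<in> Ki" for a x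
  proof (rule dense_eq[where D = "range (vecT \<pi>i Vi)" and f = "\<lambda>x. W (\<pi>i a x)" and g = "\<lambda>x. \<pi>k a (W x)"])
    show "continuous_on UNIV (\<lambda>x. W (\<pi>i a x))" by (rule bclinear_continuous[OF bclinear_comp'[OF Wb pib]])
    show "continuous_on UNIV (\<lambda>x. \<pi>k a (W x))" by (rule bclinear_continuous[OF bclinear_comp'[OF pkb Wb]])
    show "W (\<pi>i a y) = \<pi>k a (W y)" if "y \<in> range (vecT \<pi>i Vi)" for y by (rule commE[OF that])
    show "x \<in> closure (range (vecT \<pi>i Vi))" using that EK by simp
  qed
  have comm: "W (\<pi>i a x) = \<pi>k a (W x)" for a x
  proof -
    have "W (\<pi>i a x) = W (\<pi>i a (proj Ki x))" by (simp add: rep_right[OF repi Ki])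
    also have "\<dots> = \<pi>k a (W (proj Ki x))" by (rule commK[OF proj_in[OF Ki]])
    also have "\<dots> = \<pi>k a (W x)" by (simp add: is_op_right[OF W Ki])
    finally show ?thesis .
  qed
  have W0: "W x = 0" for x
    apply (rule intertwiner_zero[OF Hi Hk pi pk msi msk neq W])
    apply (rule comm)
    done
  have "Bf (1, \<lambda>_. 1, \<lambda>_. h') (1, \<lambda>_. a, \<lambda>_. h) = 0" using Wf[of "(1, \<lambda>_. 1, \<lambda>_. h')" "(1, \<lambda>_. a, \<lambda>_. h)"] W0 by simp
  moreover have "Bf (1, \<lambda>_. 1, \<lambda>_. h') (1, \<lambda>_. a, \<lambda>_. h) = cinner (proj Hk h') (\<theta> a (proj Hi h))"
    unfolding Bf_def BfT_def sf_def by simp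
  ultimately show ?thesis by simp
qed

end


(* ---- part 11 ---- *)


lemma positive_block_sum:
  fixes T :: "'l \<Rightarrow> nat \<Rightarrow> nat \<Rightarrow> 'h::chilbert \<Rightarrow> 'h"
  assumes "\<And>l. l \<in> I \<Longrightarrow> positive_block n (T l)"
  shows "positive_block n (\<lambda>i j x. \<Sum>l\<in>I. T l i j x)"
  unfolding positive_block_def
proof
  fix \<xi> :: "nat \<Rightarrow> 'h"
  have eq: "(\<Sum>i<n. \<Sum>j<n. cinner (\<xi> i) (\<Sum>l\<in>I. T l i j (\<xi> j))) = (\<Sum>l\<in>I. \<Sum>i<n. \<Sum>j<n. cinner (\<xi> i) (T l i j (\<xi> j)))"
    unfolding cinner_sum_right by (rule sum_swap3)
  have pl: "Im (\<Sum>i<n. \<Sum>j<n. cinner (\<xi> i) (T l i j (\<xi> j))) = 0 \<and> 0 \<le> Re (\<Sum>i<n. \<Sum>j<n. cinner (\<xi> i) (T l i j (\<xi> j)))"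
    if "l \<in> I" for l
    using assms[OF that] unfolding positive_block_def by blast
  show "Im (\<Sum>i<n. \<Sum>j<n. cinner (\<xi> i) (\<Sum>l\<in>I. T l i j (\<xi> j))) = 0 \<and> 0 \<le> Re (\<Sum>i<n. \<Sum>j<n. cinner (\<xi> i) (\<Sum>l\<in>I. T l i j (\<xi> j)))"
    unfolding eq Im_sum Re_sum using pl by (auto intro: sum_nonneg)
qed

locale blocks =
  fixes n :: nat and H :: "nat \<Rightarrow> 'h::chilbert set" and \<phi> :: "nat \<Rightarrow> 'a::cstar_algebra \<Rightarrow> 'h \<Rightarrow> 'h"
  assumes Hs: "\<And>i. i < n \<Longrightarrow> csubspace (H i)"
    and orth: "\<And>i j x y. i < n \<Longrightarrow> j < n \<Longrightarrow> i \<noteq> j \<Longrightarrow> x \<in> H i \<Longrightarrow> y \<in> H j \<Longrightarrow> cinner x y = 0"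
    and op: "\<And>i a. i < n \<Longrightarrow> is_op (H i) (H i) (\<phi> i a)"
begin

definition S where "S = {(\<Sum>i<n. x i) | x. \<forall>i<n. x i \<in> H i}"
definition P where "P i = proj (H i)"
definition Phi where "Phi a y = (\<Sum>i<n. \<phi> i a y)"
definition Dg where "Dg \<alpha> x = (\<Sum>i<n. \<alpha> i *\<^sub>C P i x)"

lemma P_in: "i < n \<Longrightarrow> P i x \<in> H i" unfolding P_def using proj_in Hs by blast
lemma P_id: "i < n \<Longrightarrow> x \<in> H i \<Longrightarrow> P i x = x" unfolding P_def by (rule proj_id)
lemma P_bcl: "i < n \<Longrightarrow> bclinear (P i)" unfolding P_def using bclinear_proj Hs by blast

lemma P_zero: "i < n \<Longrightarrow> l < n \<Longrightarrow> l \<noteq> i \<Longrightarrow> y \<in> H i \<Longrightarrow> P l y = 0"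
  unfolding P_def by (rule proj_orth_zero) (auto simp: csubspace_0 Hs orth)

lemma PP: "i < n \<Longrightarrow> l < n \<Longrightarrow> P l (P i x) = (if l = i then P i x else 0)"
  using P_zero P_in P_id by auto

lemma phi_in: "i < n \<Longrightarrow> \<phi> i a y \<in> H i" using is_op_range op Hs by blast
lemma phi_right: "i < n \<Longrightarrow> \<phi> i a (P i y) = \<phi> i a y" unfolding P_def using is_op_right op Hs by blast
lemma phi_bcl: "i < n \<Longrightarrow> bclinear (\<phi> i a)" using is_op_bclinear op by blast

lemma phi_other: "i < n \<Longrightarrow> l < n \<Longrightarrow> l \<noteq> i \<Longrightarrow> y \<in> H i \<Longrightarrow> \<phi> l a y = 0"
proof -
  assume a: "i < n" "l < n" "l \<noteq> i" "y \<in> H i"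
  have "\<phi> l a y = \<phi> l a (P l y)" using phi_right[OF a(2)] by simp
  also have "\<dots> = 0" using P_zero[OF a] bclinear_zero[OF phi_bcl[OF a(2)]] by simp
  finally show ?thesis .
qed

lemma sum_delta_n: "i < n \<Longrightarrow> (\<And>l. l < n \<Longrightarrow> l \<noteq> i \<Longrightarrow> f l = 0) \<Longrightarrow> (\<Sum>l<n. f l) = (f i :: 'v::comm_monoid_add)"
  by (rule sum.mono_neutral_right[of "{..<n}" "{i}", simplified]) auto

lemma Phi_on: "i < n \<Longrightarrow> y \<in> H i \<Longrightarrow> Phi a y = \<phi> i a y"
  unfolding Phi_def by (rule sum_delta_n) (auto simp: phi_other)

lemma P_Phi: "i < n \<Longrightarrow> P i (Phi a y) = \<phi> i a y"
proof -
  assume i: "i < n"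
  have "P i (Phi a y) = (\<Sum>l<n. P i (\<phi> l a y))" unfolding Phi_def by (simp add: bclinear_sum[OF P_bcl[OF i]])
  also have "\<dots> = P i (\<phi> i a y)" by (rule sum_delta_n[OF i]) (auto simp: P_zero i phi_in)
  also have "\<dots> = \<phi> i a y" by (simp add: P_id i phi_in)
  finally show ?thesis .
qed

lemma Phi_P: "i < n \<Longrightarrow> Phi a (P i y) = \<phi> i a y"
  by (simp add: Phi_on P_in phi_right)

lemma projS: "proj S x = (\<Sum>i<n. P i x)"
proof (rule proj_eqI)
  show "(\<Sum>i<n. P i x) \<in> S" unfolding S_def using P_in by blast
  show "\<forall>z\<in>S. cinner z (x - (\<Sum>i<n. P i x)) = 0"
  proof
    fix z assume "z \<in> S"
    then obtain zz where z: "z = (\<Sum>i<n. zz i)" and zz: "\<forall>i<n. zz i \<in> H i" unfolding S_def by blast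
    have "cinner (zz i) (\<Sum>l<n. P l x) = cinner (zz i) x" if i: "i < n" for i
    proof -
      have "cinner (zz i) (\<Sum>l<n. P l x) = (\<Sum>l<n. cinner (zz i) (P l x))" by (rule cinner_sum_right)
      also have "\<dots> = cinner (zz i) (P i x)"
        by (rule sum_delta_n[OF i]) (use orth i zz P_in in auto)
      also have "\<dots> = cinner (zz i) x" unfolding P_def using proj_orth'[OF Hs[OF i], of "zz i" x] zz i by simp
      finally show ?thesis .
    qed
    then show "cinner z (x - (\<Sum>i<n. P i x)) = 0"
      unfolding z by (simp add: cinner_sum_left cinner_diff_right sum_subtractf)
  qed
qed

lemma S_char: "x \<in> S \<longleftrightarrow> (\<Sum>i<n. P i x) = x"
proof
  assume "x \<in> S"
  then show "(\<Sum>i<n. P i x) = x" using projS[of x] proj_id[of x S] by simp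
next
  assume h: "(\<Sum>i<n. P i x) = x"
  have "(\<Sum>i<n. P i x) \<in> S" unfolding S_def using P_in by blast
  then show "x \<in> S" using h by simp
qed

lemma cS: "csubspace S"
proof -
  have "0 \<in> S" unfolding S_def by (intro CollectI exI[of _ "\<lambda>_. 0"]) (auto simp: csubspace_0 Hs)
  moreover have "x + y \<in> S" if xy: "x \<in> S" "y \<in> S" for x y
  proof -
    have "(\<Sum>i<n. P i (x + y)) = (\<Sum>i<n. P i x + P i y)"
      by (rule sum.cong[OF refl]) (simp add: bclinear_add[OF P_bcl])
    also have "\<dots> = x + y" using xy unfolding S_char by (simp add: sum.distrib)
    finally show ?thesis unfolding S_char .
  qed
  moreover have "c *\<^sub>C x \<in> S" if xS: "x \<in> S" for c x
  proof -
    have "(\<Sum>i<n. P i (c *\<^sub>C x)) = (\<Sum>i<n. c *\<^sub>C P i x)"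
      by (rule sum.cong[OF refl]) (simp add: bclinear_scaleC[OF P_bcl])
    also have "\<dots> = c *\<^sub>C x" using xS unfolding S_char by (simp add: scaleC_sum_right[symmetric])
    finally show ?thesis unfolding S_char .
  qed
  moreover have "closed S"
  proof -
    have "S = {x. (\<Sum>i<n. P i x) = x}" using S_char by blast
    moreover have "continuous_on UNIV (\<lambda>x. \<Sum>i<n. P i x)" by (rule bclinear_continuous[OF bclinear_sum_fun[OF P_bcl]]) simp
    ultimately show ?thesis using closed_Collect_eq[of "\<lambda>x. \<Sum>i<n. P i x" "\<lambda>x. x"] continuous_on_id by auto
  qed
  ultimately show ?thesis unfolding csubspace_def by blast
qed

lemma Dg_bcl: "bclinear (Dg \<alpha>)"
  unfolding Dg_def[abs_def] by (intro bclinear_sum_fun bclinear_scaleC_fun P_bcl) simp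

lemma Dg_in: "Dg \<alpha> x \<in> S"
  unfolding Dg_def S_def using csubspace_scaleC Hs P_in by blast

lemma P_Dg: "l < n \<Longrightarrow> P l (Dg \<alpha> x) = \<alpha> l *\<^sub>C P l x"
proof -
  assume l: "l < n"
  have "P l (Dg \<alpha> x) = (\<Sum>i<n. \<alpha> i *\<^sub>C P l (P i x))" unfolding Dg_def
    by (simp add: bclinear_sum[OF P_bcl[OF l]] bclinear_scaleC[OF P_bcl[OF l]])
  also have "\<dots> = \<alpha> l *\<^sub>C P l (P l x)" by (rule sum_delta_n[OF l]) (simp add: PP l)
  also have "\<dots> = \<alpha> l *\<^sub>C P l x" by (simp add: PP l)
  finally show ?thesis .
qed

lemma Dg_Dg: "Dg \<alpha> (Dg \<beta> x) = Dg (\<lambda>i. \<alpha> i * \<beta> i) x"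
proof -
  have "Dg \<alpha> (Dg \<beta> x) = (\<Sum>i<n. \<alpha> i *\<^sub>C P i (Dg \<beta> x))" by (simp only: Dg_def[of \<alpha>])
  also have "\<dots> = (\<Sum>i<n. (\<alpha> i * \<beta> i) *\<^sub>C P i x)" by (rule sum.cong[OF refl]) (simp add: P_Dg)
  also have "\<dots> = Dg (\<lambda>i. \<alpha> i * \<beta> i) x" by (simp only: Dg_def)
  finally show ?thesis .
qed

lemma Dg_one: "Dg (\<lambda>_. 1) x = proj S x"
  unfolding Dg_def projS by simp

lemma Dg_proj: "Dg \<alpha> (proj S x) = Dg \<alpha> x"
  using Dg_Dg[of \<alpha> "\<lambda>_. 1" x] by (simp add: Dg_one)

lemma Dg_op: "is_op S S (Dg \<alpha>)"
  by (rule is_opI[OF Dg_bcl cS Dg_in Dg_proj])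

lemma adj_Dg: "adj (Dg \<alpha>) = Dg (\<lambda>i. cnj (\<alpha> i))"
proof (rule adj_eqI)
  fix y z
  have "cinner (Dg (\<lambda>i. cnj (\<alpha> i)) y) z = (\<Sum>i<n. \<alpha> i * cinner (P i y) z)"
    unfolding Dg_def by (simp add: cinner_sum_left cinner_scaleC_left)
  also have "\<dots> = (\<Sum>i<n. \<alpha> i * cinner y (P i z))"
    unfolding P_def by (intro sum.cong refl) (simp add: proj_selfadj Hs)
  also have "\<dots> = cinner y (Dg \<alpha> z)"
    unfolding Dg_def by (simp add: cinner_sum_right cinner_scaleC_right)
  finally show "cinner (Dg (\<lambda>i. cnj (\<alpha> i)) y) z = cinner y (Dg \<alpha> z)" .
qed

lemma Phi_Dg: "Phi a (Dg \<beta> y) = (\<Sum>i<n. \<beta> i *\<^sub>C \<phi> i a y)"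
proof -
  have "\<phi> i a (Dg \<beta> y) = \<beta> i *\<^sub>C \<phi> i a y" if i: "i < n" for i
  proof -
    have "\<phi> i a (Dg \<beta> y) = \<phi> i a (P i (Dg \<beta> y))" by (simp add: phi_right i)
    also have "\<dots> = \<beta> i *\<^sub>C \<phi> i a y" by (simp add: P_Dg i bclinear_scaleC[OF phi_bcl[OF i]] phi_right)
    finally show ?thesis .
  qed
  then show ?thesis unfolding Phi_def by simp
qed

lemma Dg_Phi: "Dg \<alpha> (Phi a y) = (\<Sum>i<n. \<alpha> i *\<^sub>C \<phi> i a y)"
  unfolding Dg_def by (rule sum.cong[OF refl]) (simp add: P_Phi)

lemma Dg_Phi_Dg: "Dg \<alpha> (Phi a (Dg \<beta> y)) = (\<Sum>i<n. (\<alpha> i * \<beta> i) *\<^sub>C \<phi> i a y)"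
proof -
  have "Dg \<alpha> (Phi a (Dg \<beta> y)) = (\<Sum>i<n. \<alpha> i *\<^sub>C P i (\<Sum>l<n. \<beta> l *\<^sub>C \<phi> l a y))"
    by (simp only: Phi_Dg Dg_def[of \<alpha>])
  also have "\<dots> = (\<Sum>i<n. (\<alpha> i * \<beta> i) *\<^sub>C \<phi> i a y)"
  proof (rule sum.cong[OF refl])
    fix i assume "i \<in> {..<n}"
    then have i: "i < n" by simp
    have "P i (\<Sum>l<n. \<beta> l *\<^sub>C \<phi> l a y) = (\<Sum>l<n. \<beta> l *\<^sub>C P i (\<phi> l a y))"
      by (simp add: bclinear_sum[OF P_bcl[OF i]] bclinear_scaleC[OF P_bcl[OF i]])
    also have "\<dots> = \<beta> i *\<^sub>C P i (\<phi> i a y)"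
      by (rule sum_delta_n[OF i]) (auto simp: P_zero i phi_in)
    also have "\<dots> = \<beta> i *\<^sub>C \<phi> i a y" by (simp add: P_id i phi_in)
    finally show "\<alpha> i *\<^sub>C P i (\<Sum>l<n. \<beta> l *\<^sub>C \<phi> l a y) = (\<alpha> i * \<beta> i) *\<^sub>C \<phi> i a y" by simp
  qed
  finally show ?thesis .
qed

lemma decomp:
  assumes th: "is_op S S \<theta>"
    and off: "\<And>i k h h'. i < n \<Longrightarrow> k < n \<Longrightarrow> i \<noteq> k \<Longrightarrow> cinner (P k h') (\<theta> (P i h)) = 0"
    and diag: "\<And>i x. i < n \<Longrightarrow> P i (\<theta> (P i x)) = c i *\<^sub>C \<phi> i a x"
  shows "\<theta> x = (\<Sum>i<n. c i *\<^sub>C \<phi> i a x)"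
proof -
  have thb: "bclinear \<theta>" using is_op_bclinear[OF th] .
  have offz: "P k (\<theta> (P i x)) = 0" if "i < n" "k < n" "i \<noteq> k" for i k
  proof (rule orth_eq_zero)
    fix w
    have "cinner w (P k (\<theta> (P i x))) = cinner (P k w) (\<theta> (P i x))"
      unfolding P_def using proj_selfadj[OF Hs[OF that(2)], of w] by simp
    also have "\<dots> = 0" by (rule off[OF that])
    finally show "cinner w (P k (\<theta> (P i x))) = 0" .
  qed
  have "\<theta> x = proj S (\<theta> (proj S x))" using th cS by (simp add: is_op_left is_op_right)
  also have "\<dots> = (\<Sum>k<n. \<Sum>i<n. P k (\<theta> (P i x)))"
    unfolding projS by (simp add: bclinear_sum[OF thb] bclinear_sum[OF P_bcl])
  also have "\<dots> = (\<Sum>k<n. P k (\<theta> (P k x)))"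
    by (intro sum.cong refl sum_delta_n) (auto simp: offz)
  also have "\<dots> = (\<Sum>i<n. c i *\<^sub>C \<phi> i a x)" by (simp add: diag)
  finally show ?thesis .
qed

end


(* ---- part 12 ---- *)


context blocks
begin

lemma H_sub_S: "i < n \<Longrightarrow> h \<in> H i \<Longrightarrow> h \<in> S"
proof -
  assume i: "i < n" and h: "h \<in> H i"
  have "(\<Sum>l<n. P l h) = P i h" by (rule sum_delta_n[OF i]) (rule P_zero[OF i _ _ h])
  also have "\<dots> = h" by (simp add: P_id i h)
  finally show ?thesis unfolding S_char .
qed

lemma unitary_part:
  fixes \<psi> :: "'a \<Rightarrow> 'h \<Rightarrow> 'h"
  assumes T: "is_op S S T" and R: "is_op S S R" and RT: "\<And>x. R (T x) = proj S x" and TR: "\<And>x. T (R x) = proj S x"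
    and psi_op: "\<And>a. is_op S S (\<psi> a)" and psi1: "\<psi> 1 = proj S"
    and thdec: "\<And>a x. adj T (\<psi> a (T x)) = (\<Sum>i<n. c i *\<^sub>C \<phi> i a x)"
    and phi1: "\<And>i. i < n \<Longrightarrow> \<phi> i 1 = P i"
  shows "\<exists>U. unitary_op S U \<and> (\<forall>a. \<psi> a = adj U \<circ> Phi a \<circ> U)"
proof -
  have Tb: "bclinear T" using is_op_bclinear[OF T] .
  have Rb: "bclinear R" using is_op_bclinear[OF R] .
  have adjT: "is_op S S (adj T)" by (rule is_op_adj[OF T cS cS])
  have adjR: "is_op S S (adj R)" by (rule is_op_adj[OF R cS cS])
  have adjRT: "adj R (adj T y) = proj S y" for y
  proof -
    have "adj (\<lambda>x. T (R x)) = (\<lambda>y. adj R (adj T y))" by (rule adj_comp'[OF Tb Rb])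
    moreover have "(\<lambda>x. T (R x)) = proj S" by (rule ext) (rule TR)
    ultimately show ?thesis using adj_proj[OF cS] by metis
  qed
  have adjTR: "adj T (adj R y) = proj S y" for y
  proof -
    have "adj (\<lambda>x. R (T x)) = (\<lambda>y. adj T (adj R y))" by (rule adj_comp'[OF Rb Tb])
    moreover have "(\<lambda>x. R (T x)) = proj S" by (rule ext) (rule RT)
    ultimately show ?thesis using adj_proj[OF cS] by metis
  qed
  have TT: "adj T (T x) = (\<Sum>i<n. c i *\<^sub>C P i x)" for x
  proof -
    have "adj T (T x) = adj T (\<psi> 1 (T x))" using is_op_range[OF T cS] by (simp add: psi1 proj_id)
    also have "\<dots> = (\<Sum>i<n. c i *\<^sub>C P i x)" by (simp add: thdec phi1)
    finally show ?thesis .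
  qed
  define r where "r i = (if \<exists>h\<in>H i. h \<noteq> 0 then Re (c i) else 1)" for i
  have rc: "c i *\<^sub>C P i x = complex_of_real (r i) *\<^sub>C P i x \<and> c i *\<^sub>C \<phi> i a x = complex_of_real (r i) *\<^sub>C \<phi> i a x \<and> r i > 0"
    if i: "i < n" for i x a
  proof (cases "\<exists>h\<in>H i. h \<noteq> 0")
    case True
    then obtain h where h: "h \<in> H i" "h \<noteq> 0" by blast
    have hS: "h \<in> S" by (rule H_sub_S[OF i h(1)])
    have Th: "T h \<noteq> 0"
    proof
      assume "T h = 0"
      then have "R (T h) = 0" using bclinear_zero[OF Rb] by simp
      then show False using RT[of h] hS h(2) by (simp add: proj_id)
    qed
    have "cinner h (adj T (T h)) = c i * cinner h h"
    proof -
      have "cinner h (adj T (T h)) = (\<Sum>l<n. c l * cinner h (P l h))" by (simp add: TT cinner_sum_right cinner_scaleC_right)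
      also have "\<dots> = c i * cinner h (P i h)" by (rule sum_delta_n[OF i]) (simp add: P_zero[OF i _ _ h(1)])
      also have "\<dots> = c i * cinner h h" by (simp add: P_id i h(1))
      finally show ?thesis .
    qed
    moreover have "cinner h (adj T (T h)) = cinner (T h) (T h)" by (rule adj_cinner_right[OF Tb])
    ultimately have ce: "complex_of_real ((norm (T h))\<^sup>2) = c i * complex_of_real ((norm h)\<^sup>2)" by (simp add: cinner_self_norm)
    have cre: "c i = complex_of_real ((norm (T h))\<^sup>2 / (norm h)\<^sup>2)" using ce h(2) by (simp add: field_simps)
    have "r i = (norm (T h))\<^sup>2 / (norm h)\<^sup>2" unfolding r_def using True cre by simp
    then have "c i = complex_of_real (r i)" and "r i > 0" using cre Th h(2) by auto
    then show ?thesis by simp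
  next
    case False
    then have H0: "\<forall>h\<in>H i. h = 0" by blast
    have "P i x = 0" "\<phi> i a x = 0" using H0 P_in[OF i] phi_in[OF i] by auto
    moreover have "r i > 0" unfolding r_def using False by simp
    ultimately show ?thesis by simp
  qed
  define \<alpha> where "\<alpha> i = complex_of_real (sqrt (r i))" for i
  define \<beta> where "\<beta> i = complex_of_real (1 / sqrt (r i))" for i
  have rpos: "i < n \<Longrightarrow> r i > 0" for i using rc by blast
  have aa: "\<alpha> i * \<alpha> i = complex_of_real (r i)" if "i < n" for i
  proof -
    have "sqrt (r i) * sqrt (r i) = r i" using rpos[OF that] by simp
    then show ?thesis unfolding \<alpha>_def by (metis of_real_mult)
  qed
  have ab: "\<alpha> i * \<beta> i = 1" if "i < n" for i
    unfolding \<alpha>_def \<beta>_def using rpos[OF that] by (simp add: of_real_mult[symmetric])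
  have dgsum: "(\<Sum>i<n. (\<alpha> i * \<alpha> i) *\<^sub>C \<phi> i a x) = adj T (\<psi> a (T x))" for a x
  proof -
    have "adj T (\<psi> a (T x)) = (\<Sum>i<n. complex_of_real (r i) *\<^sub>C \<phi> i a x)" unfolding thdec
      by (rule sum.cong[OF refl]) (use rc in blast)
    also have "\<dots> = (\<Sum>i<n. (\<alpha> i * \<alpha> i) *\<^sub>C \<phi> i a x)"
      by (rule sum.cong[OF refl]) (simp add: aa)
    finally show ?thesis by simp
  qed
  have TTD: "adj T (T x) = Dg (\<lambda>i. \<alpha> i * \<alpha> i) x" for x
  proof -
    have "adj T (T x) = (\<Sum>i<n. complex_of_real (r i) *\<^sub>C P i x)" unfolding TT
      by (rule sum.cong[OF refl]) (use rc in blast)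
    also have "\<dots> = Dg (\<lambda>i. \<alpha> i * \<alpha> i) x" unfolding Dg_def
      by (rule sum.cong[OF refl]) (simp add: aa)
    finally show ?thesis .
  qed
  have ab1: "Dg (\<lambda>i. \<alpha> i * \<beta> i) x = proj S x" "Dg (\<lambda>i. \<beta> i * \<alpha> i) x = proj S x" for x
  proof -
    have "Dg (\<lambda>i. \<alpha> i * \<beta> i) x = Dg (\<lambda>_. 1) x" unfolding Dg_def
      by (rule sum.cong[OF refl]) (simp add: ab)
    then show "Dg (\<lambda>i. \<alpha> i * \<beta> i) x = proj S x" by (simp add: Dg_one)
    then show "Dg (\<lambda>i. \<beta> i * \<alpha> i) x = proj S x" by (simp add: mult.commute)
  qed
  define U where "U x = Dg \<alpha> (R x)" for x
  have Uop: "is_op S S U" unfolding U_def[abs_def] by (rule is_op_comp'[OF Dg_op R cS cS])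
  have ca: "(\<lambda>i. cnj (\<alpha> i)) = \<alpha>" by (rule ext) (simp add: \<alpha>_def)
  have adj\<alpha>: "adj (Dg \<alpha>) = Dg \<alpha>" unfolding adj_Dg ca ..
  have adjU: "adj U = (\<lambda>y. adj R (Dg \<alpha> y))"
    unfolding U_def[abs_def] by (simp add: adj_comp'[OF Dg_bcl Rb] adj\<alpha>)
  have part1: "\<psi> a x = adj U (Phi a (U x))" for a x
  proof -
    have "adj U (Phi a (U x)) = adj R (Dg \<alpha> (Phi a (Dg \<alpha> (R x))))" unfolding adjU U_def ..
    also have "\<dots> = adj R (adj T (\<psi> a (T (R x))))" by (simp add: Dg_Phi_Dg dgsum)
    also have "\<dots> = proj S (\<psi> a (proj S x))" by (simp add: adjRT TR)
    also have "\<dots> = \<psi> a x" using is_op_left[OF psi_op cS] is_op_right[OF psi_op cS] by simp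
    finally show ?thesis by simp
  qed
  have part2: "adj U (U x) = proj S x" for x
  proof -
    have "adj U (U x) = adj R (Dg \<alpha> (Dg \<alpha> (R x)))" unfolding adjU U_def ..
    also have "\<dots> = adj R (adj T (T (R x)))" by (simp add: Dg_Dg TTD)
    also have "\<dots> = proj S (proj S x)" by (simp add: adjRT TR)
    finally show ?thesis by (simp add: proj_idem[OF cS])
  qed
  have RadjR: "R (adj R z) = Dg (\<lambda>i. \<beta> i * \<beta> i) z" for z
  proof -
    have key: "Dg (\<lambda>i. \<beta> i * \<beta> i) (adj T y) = R y" for y
    proof -
      have "adj T y = adj T (proj S y)" using is_op_right[OF adjT cS] by simp
      also have "\<dots> = adj T (T (R y))" by (simp add: TR)
      finally have "Dg (\<lambda>i. \<beta> i * \<beta> i) (adj T y) = Dg (\<lambda>i. \<beta> i * \<beta> i) (Dg (\<lambda>i. \<alpha> i * \<alpha> i) (R y))"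
        by (simp add: TTD)
      also have "\<dots> = Dg (\<lambda>i. \<beta> i * \<alpha> i) (Dg (\<lambda>i. \<beta> i * \<alpha> i) (R y))" by (simp add: Dg_Dg algebra_simps)
      also have "\<dots> = proj S (proj S (R y))" by (simp add: ab1)
      also have "\<dots> = R y" using is_op_range[OF R cS] by (simp add: proj_id)
      finally show ?thesis .
    qed
    have "R (adj R z) = Dg (\<lambda>i. \<beta> i * \<beta> i) (adj T (adj R z))" by (simp add: key)
    also have "\<dots> = Dg (\<lambda>i. \<beta> i * \<beta> i) (proj S z)" by (simp add: adjTR)
    also have "\<dots> = Dg (\<lambda>i. \<beta> i * \<beta> i) z" by (rule Dg_proj)
    finally show ?thesis .
  qed
  have part3: "U (adj U y) = proj S y" for y
  proof -
    have "U (adj U y) = Dg \<alpha> (R (adj R (Dg \<alpha> y)))" unfolding adjU U_def ..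
    also have "\<dots> = Dg \<alpha> (Dg (\<lambda>i. \<beta> i * \<beta> i) (Dg \<alpha> y))" by (simp add: RadjR)
    also have "\<dots> = Dg (\<lambda>i. \<alpha> i * \<beta> i) (Dg (\<lambda>i. \<beta> i * \<alpha> i) y)" by (simp add: Dg_Dg algebra_simps)
    also have "\<dots> = proj S (proj S y)" by (simp add: ab1)
    finally show ?thesis by (simp add: proj_idem[OF cS])
  qed
  have "unitary_op S U"
    unfolding unitary_op_def using Uop part2 part3 by (auto simp: fun_eq_iff)
  moreover have "\<forall>a. \<psi> a = adj U \<circ> Phi a \<circ> U" using part1 by (auto simp: fun_eq_iff)
  ultimately show ?thesis by blast
qed

end


(* ---- part 13 ---- *)


theorem proposition3p7:
  fixes G :: "('g, 'b) monoid_scheme"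
    and \<tau> :: "'g \<Rightarrow> 'a::cstar_algebra \<Rightarrow> 'a"
    and n :: nat
    and H :: "nat \<Rightarrow> 'h::chilbert set"
    and \<phi> :: "nat \<Rightarrow> 'a \<Rightarrow> 'h \<Rightarrow> 'h"
    and K :: "nat \<Rightarrow> 'k::chilbert set"
    and \<pi> :: "nat \<Rightarrow> 'a \<Rightarrow> 'k \<Rightarrow> 'k"
    and V :: "nat \<Rightarrow> 'h \<Rightarrow> 'k"
  assumes "group G"
    and "cstar_action G \<tau>"
    and "\<forall>i<n. csubspace (H i)"
    and "\<forall>i<n. \<forall>j<n. i \<noteq> j \<longrightarrow> (\<forall>x\<in>H i. \<forall>y\<in>H j. cinner x y = 0)"
    and "\<forall>i<n. ucp_inv G \<tau> (H i) (\<phi> i) \<and> pure_cp (H i) (\<phi> i)"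
    and "\<forall>i<n. min_stinespring (H i) (\<phi> i) (K i) (\<pi> i) (V i)"
    and "\<forall>i<n. \<forall>j<n. i \<noteq> j \<longrightarrow> \<not> unitarily_equiv (K i) (\<pi> i) (K j) (\<pi> j)"
  shows "cstar_extreme G \<tau> {(\<Sum>i<n. x i) | x. \<forall>i<n. x i \<in> H i} (\<lambda>a y. \<Sum>i<n. \<phi> i a y)"
proof -
  have Hs: "\<And>i. i < n \<Longrightarrow> csubspace (H i)" using assms(3) by blast
  have orth: "\<And>i j x y. i < n \<Longrightarrow> j < n \<Longrightarrow> i \<noteq> j \<Longrightarrow> x \<in> H i \<Longrightarrow> y \<in> H j \<Longrightarrow> cinner x y = 0"
    using assms(4) by blast
  have ucp: "\<And>i. i < n \<Longrightarrow> ucp_inv G \<tau> (H i) (\<phi> i)" using assms(5) by blast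
  have pure: "\<And>i. i < n \<Longrightarrow> pure_cp (H i) (\<phi> i)" using assms(5) by blast
  have ms: "\<And>i. i < n \<Longrightarrow> min_stinespring (H i) (\<phi> i) (K i) (\<pi> i) (V i)" using assms(6) by blast
  have neq: "\<And>i j. i < n \<Longrightarrow> j < n \<Longrightarrow> i \<noteq> j \<Longrightarrow> \<not> unitarily_equiv (K i) (\<pi> i) (K j) (\<pi> j)"
    using assms(7) by blast
  have cpi: "\<And>i. i < n \<Longrightarrow> cp_map (H i) (\<phi> i)" using ucp unfolding ucp_inv_def ucp_map_def by blast
  have one: "\<And>i. i < n \<Longrightarrow> \<phi> i 1 = proj (H i)" using ucp unfolding ucp_inv_def ucp_map_def by blast
  have invar: "\<And>i g a. i < n \<Longrightarrow> g \<in> carrier G \<Longrightarrow> \<phi> i (\<tau> g a) = \<phi> i a"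
    using ucp unfolding ucp_inv_def by blast
  interpret B: blocks n H \<phi>
  proof
    show "\<And>i. i < n \<Longrightarrow> csubspace (H i)" by (rule Hs)
    show "\<And>i j x y. i < n \<Longrightarrow> j < n \<Longrightarrow> i \<noteq> j \<Longrightarrow> x \<in> H i \<Longrightarrow> y \<in> H j \<Longrightarrow> cinner x y = 0" by (rule orth)
    show "\<And>i a. i < n \<Longrightarrow> is_op (H i) (H i) (\<phi> i a)" by (rule cp_op[OF cpi])
  qed
  have Seq: "{(\<Sum>i<n. x i) | x. \<forall>i<n. x i \<in> H i} = B.S" by (simp add: B.S_def)
  have Phieq: "(\<lambda>a y. \<Sum>i<n. \<phi> i a y) = B.Phi" by (intro ext) (simp add: B.Phi_def)
  have Phibcl: "bclinear (B.Phi a)" for a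
    unfolding B.Phi_def[abs_def] by (rule bclinear_sum_fun) (simp add: B.phi_bcl)
  have cpPhi: "cp_map B.S B.Phi"
  proof (rule cp_mapI)
    fix a
    show "is_op B.S B.S (B.Phi a)"
    proof (rule is_opI[OF Phibcl B.cS])
      show "B.Phi a y \<in> B.S" for y unfolding B.Phi_def B.S_def using B.phi_in by blast
      show "B.Phi a (proj B.S y) = B.Phi a y" for y
      proof -
        have "B.Phi a (proj B.S y) = (\<Sum>l<n. B.Phi a (B.P l y))" unfolding B.projS by (simp add: bclinear_sum[OF Phibcl])
        also have "\<dots> = (\<Sum>l<n. \<phi> l a y)" by (rule sum.cong[OF refl]) (simp add: B.Phi_P)
        also have "\<dots> = B.Phi a y" by (simp add: B.Phi_def)
        finally show ?thesis .
      qed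
    qed
  next
    fix a b x
    have "B.Phi (a + b) x = (\<Sum>i<n. \<phi> i a x + \<phi> i b x)" unfolding B.Phi_def
      by (rule sum.cong[OF refl]) (simp add: cp_add[OF cpi])
    then show "B.Phi (a + b) x = B.Phi a x + B.Phi b x" by (simp add: B.Phi_def sum.distrib)
  next
    fix c a x
    have "B.Phi (c *\<^sub>C a) x = (\<Sum>i<n. c *\<^sub>C \<phi> i a x)" unfolding B.Phi_def
      by (rule sum.cong[OF refl]) (simp add: cp_scaleC[OF cpi])
    then show "B.Phi (c *\<^sub>C a) x = c *\<^sub>C B.Phi a x" by (simp add: B.Phi_def scaleC_sum_right)
  next
    fix m and M :: "nat \<Rightarrow> nat \<Rightarrow> 'a" assume M: "positive_mat m M"
    have "positive_block m (\<lambda>i j x. \<Sum>l\<in>{..<n}. (\<lambda>l i j. \<phi> l (M i j)) l i j x)"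
      by (rule positive_block_sum) (simp add: cp_block[OF cpi M])
    then show "positive_block m (\<lambda>i j. B.Phi (M i j))" unfolding B.Phi_def[abs_def] by simp
  qed
  have Phi1: "B.Phi 1 = proj B.S"
    by (rule ext) (simp add: B.Phi_def B.projS one B.P_def)
  have Phiinv: "\<forall>g\<in>carrier G. \<forall>a. B.Phi (\<tau> g a) = B.Phi a"
    by (auto simp: B.Phi_def[abs_def] invar)
  have ucpPhi: "ucp_inv G \<tau> B.S B.Phi"
    unfolding ucp_inv_def ucp_map_def using cpPhi Phi1 Phiinv by blast
  show ?thesis unfolding Seq Phieq cstar_extreme_def
  proof (intro conjI allI impI)
    show "ucp_inv G \<tau> B.S B.Phi" by (rule ucpPhi)
    fix m :: nat and T :: "nat \<Rightarrow> 'h \<Rightarrow> 'h" and \<psi> :: "nat \<Rightarrow> 'a \<Rightarrow> 'h \<Rightarrow> 'h"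
    assume h: "(\<forall>j<m. ucp_inv G \<tau> B.S (\<psi> j) \<and> invertible_op B.S (T j)) \<and>
        (\<lambda>x. \<Sum>j<m. adj (T j) (T j x)) = proj B.S \<and> (\<forall>a. B.Phi a = (\<lambda>x. \<Sum>j<m. adj (T j) (\<psi> j a (T j x))))"
    have cp\<psi>: "\<And>l. l < m \<Longrightarrow> cp_map B.S (\<psi> l)" using h unfolding ucp_inv_def ucp_map_def by blast
    have \<psi>1: "\<And>l. l < m \<Longrightarrow> \<psi> l 1 = proj B.S" using h unfolding ucp_inv_def ucp_map_def by blast
    have Tinv: "\<And>l. l < m \<Longrightarrow> invertible_op B.S (T l)" using h by blast
    have Top: "\<And>l. l < m \<Longrightarrow> is_op B.S B.S (T l)" using Tinv unfolding invertible_op_def by blast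
    have hdec: "\<And>a x. B.Phi a x = (\<Sum>j<m. adj (T j) (\<psi> j a (T j x)))" using h by metis
    define \<theta> where "\<theta> l a x = adj (T l) (\<psi> l a (T l x))" for l a x
    have cp\<theta>: "\<And>l. l < m \<Longrightarrow> cp_map B.S (\<theta> l)" unfolding \<theta>_def[abs_def] by (rule cp_conj[OF B.cS cp\<psi> Top])
    have "\<forall>j. j < m \<longrightarrow> (\<exists>Uj. unitary_op B.S Uj \<and> (\<forall>a. \<psi> j a = adj Uj \<circ> B.Phi a \<circ> Uj))"
    proof (intro allI impI)
      fix j assume j: "j < m"
      have cpd: "cp_map B.S (\<lambda>a x. B.Phi a x - \<theta> j a x)"
      proof -
        have "(\<lambda>a x. B.Phi a x - \<theta> j a x) = (\<lambda>a x. \<Sum>l\<in>{..<m}-{j}. \<theta> l a x)"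
        proof (intro ext)
          fix a x
          have "B.Phi a x = (\<Sum>l<m. \<theta> l a x)" unfolding hdec \<theta>_def ..
          also have "\<dots> = \<theta> j a x + (\<Sum>l\<in>{..<m}-{j}. \<theta> l a x)" using j by (simp add: sum.remove)
          finally show "B.Phi a x - \<theta> j a x = (\<Sum>l\<in>{..<m}-{j}. \<theta> l a x)" by simp
        qed
        moreover have "cp_map B.S (\<lambda>a x. \<Sum>l\<in>{..<m}-{j}. \<theta> l a x)"
          by (rule cp_sum_maps[OF B.cS]) (simp add: cp\<theta>)
        ultimately show ?thesis by simp
      qed
      have off: "cinner (B.P k h') (\<theta> j a (B.P i h)) = 0" if ik: "i < n" "k < n" "i \<noteq> k" for i k h h' a
      proof -
        interpret O: offd B.S "H i" "H k" "\<phi> i" "\<phi> k" B.Phi "\<theta> j" "K i" "K k" "\<pi> i" "\<pi> k" "V i" "V k"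
        proof
          show "csubspace (H i)" "csubspace (H k)" using Hs ik by auto
          show "pure_cp (H i) (\<phi> i)" "pure_cp (H k) (\<phi> k)" using pure ik by auto
          show "min_stinespring (H i) (\<phi> i) (K i) (\<pi> i) (V i)" "min_stinespring (H k) (\<phi> k) (K k) (\<pi> k) (V k)"
            using ms ik by auto
          show "\<not> unitarily_equiv (K i) (\<pi> i) (K k) (\<pi> k)" using neq ik by auto
          show "cp_map B.S (\<theta> j)" using cp\<theta> j by auto
          show "cp_map B.S (\<lambda>a x. B.Phi a x - \<theta> j a x)" by (rule cpd)
          show "\<And>a x y. x \<in> H i \<Longrightarrow> y \<in> H i \<Longrightarrow> cinner x (B.Phi a y) = cinner x (\<phi> i a y)"
            using B.Phi_on ik by auto
          show "\<And>a x y. x \<in> H k \<Longrightarrow> y \<in> H k \<Longrightarrow> cinner x (B.Phi a y) = cinner x (\<phi> k a y)"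
            using B.Phi_on ik by auto
        qed
        show ?thesis unfolding B.P_def by (rule O.offdiag)
      qed
      have "\<forall>i. i < n \<longrightarrow> (\<exists>c. \<forall>a. (\<lambda>x. B.P i (\<theta> j a (B.P i x))) = (\<lambda>x. c *\<^sub>C \<phi> i a x))"
      proof (intro allI impI)
        fix i assume i: "i < n"
        have c1: "cp_map (H i) (\<lambda>a x. B.P i (\<theta> j a (B.P i x)))"
          unfolding B.P_def by (rule cp_compress[OF cp\<theta>[OF j] Hs[OF i]])
        have c2': "cp_map (H i) (\<lambda>a x. proj (H i) (B.Phi a (proj (H i) x) - \<theta> j a (proj (H i) x)))"
          by (rule cp_compress[OF cpd Hs[OF i]])
        have eq: "(\<lambda>a x. proj (H i) (B.Phi a (proj (H i) x) - \<theta> j a (proj (H i) x))) = (\<lambda>a x. \<phi> i a x - B.P i (\<theta> j a (B.P i x)))"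
        proof (intro ext)
          fix a x
          have "proj (H i) (B.Phi a (proj (H i) x) - \<theta> j a (proj (H i) x)) = B.P i (B.Phi a (B.P i x)) - B.P i (\<theta> j a (B.P i x))"
            unfolding B.P_def[symmetric] by (rule bclinear_diff[OF B.P_bcl[OF i]])
          also have "B.P i (B.Phi a (B.P i x)) = \<phi> i a x" by (simp add: B.Phi_P i B.P_id B.phi_in)
          finally show "proj (H i) (B.Phi a (proj (H i) x) - \<theta> j a (proj (H i) x)) = \<phi> i a x - B.P i (\<theta> j a (B.P i x))" .
        qed
        have c2: "cp_map (H i) (\<lambda>a x. \<phi> i a x - B.P i (\<theta> j a (B.P i x)))" using c2' eq by simp
        show "\<exists>c. \<forall>a. (\<lambda>x. B.P i (\<theta> j a (B.P i x))) = (\<lambda>x. c *\<^sub>C \<phi> i a x)"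
          using pure[OF i] c1 c2 unfolding pure_cp_def by blast
      qed
      then have "\<exists>c. \<forall>i. i < n \<longrightarrow> (\<forall>a. (\<lambda>x. B.P i (\<theta> j a (B.P i x))) = (\<lambda>x. c i *\<^sub>C \<phi> i a x))"
        by (intro choice) blast
      then obtain c where c: "\<And>i a x. i < n \<Longrightarrow> B.P i (\<theta> j a (B.P i x)) = c i *\<^sub>C \<phi> i a x"
        by (metis (no_types))
      have thdec: "adj (T j) (\<psi> j a (T j x)) = (\<Sum>i<n. c i *\<^sub>C \<phi> i a x)" for a x
      proof -
        have "\<theta> j a x = (\<Sum>i<n. c i *\<^sub>C \<phi> i a x)"
        proof (rule B.decomp[where \<theta> = "\<theta> j a"])
          show "is_op B.S B.S (\<theta> j a)" by (rule cp_op[OF cp\<theta>[OF j]])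
          show "\<And>i k h h'. i < n \<Longrightarrow> k < n \<Longrightarrow> i \<noteq> k \<Longrightarrow> cinner (B.P k h') (\<theta> j a (B.P i h)) = 0"
            by (rule off)
          show "\<And>i x. i < n \<Longrightarrow> B.P i (\<theta> j a (B.P i x)) = c i *\<^sub>C \<phi> i a x" by (rule c)
        qed
        then show ?thesis unfolding \<theta>_def .
      qed
      obtain R where R: "is_op B.S B.S R" "R \<circ> T j = proj B.S" "T j \<circ> R = proj B.S"
        using Tinv[OF j] unfolding invertible_op_def by blast
      have RT: "R (T j x) = proj B.S x" for x using R(2) by (metis comp_apply)
      have TR: "T j (R x) = proj B.S x" for x using R(3) by (metis comp_apply)
      have one': "\<And>i. i < n \<Longrightarrow> \<phi> i 1 = B.P i" by (simp add: one B.P_def)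
      show "\<exists>Uj. unitary_op B.S Uj \<and> (\<forall>a. \<psi> j a = adj Uj \<circ> B.Phi a \<circ> Uj)"
        by (rule B.unitary_part[OF Top[OF j] R(1) RT TR cp_op[OF cp\<psi>[OF j]] \<psi>1[OF j] thdec one'])
    qed
    then have "\<exists>U. \<forall>j. j < m \<longrightarrow> (unitary_op B.S (U j) \<and> (\<forall>a. \<psi> j a = adj (U j) \<circ> B.Phi a \<circ> U j))"
      by (intro choice) blast
    then show "\<exists>U. \<forall>j<m. unitary_op B.S (U j) \<and> (\<forall>a. \<psi> j a = adj (U j) \<circ> B.Phi a \<circ> U j)"
      by blast
  qed
qed


end
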